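(* Let $G_*$ be an operadic crossed simplicial group and let $\Gamma_n=G_n/\!\!/P_n$ be its action groupoids. For $n,m\ge0$ and $0\le i\le n$ define $\circ_i\colon\Gamma_n\times\Gamma_m\to\Gamma_{n+m}$ by $$[\sigma,f]\circ_i[\tau,g]=[\sigma\circ_i\tau,\,(f^{-1}\circ_{\sigma^{-1}(i)}g^{-1})^{-1}],$$ where $\sigma\circ_i\tau$ is the set-operad composition on $S_*$ and $f^{-1}\circ_{\sigma^{-1}(i)}g^{-1}$ is the set-operad composition on $G_*$ (both described in the context). Then each $\circ_i$ is a functor of groupoids, and the sequence of groupoids $\{\Gamma_n\}_{n\ge0}$ with the operations $\circ_i$ and the simplicial face maps $d_j$ of $\Gamma_*$ forms a shifted operad in $\textsf{Gpd}$.
   Context: A crossed simplicial group $G_*$: groups $G_n$ ($n\ge0$) with a left action of $G_n$ on $[n]=\{0,\dots,n\}$ and maps $d_i,s_i$ forming a simplicial set with $d_i(gh)=d_i(g)d_{g^{-1}(i)}(h)$, $s_i(gh)=s_i(g)s_{g^{-1}(i)}(h)$. By the Fiedorowicz–Loday structure theorem there is a canonical short exact sequence $1\to P_*\to G_*\xrightarrow{\pi}N_*\to1$ with $P_*$ a simplicial group acting trivially on each $[n]$. $G_*$ is symmetric if $N_*=S_*$, the symmetric crossed simplicial group with $S_n=\mathrm{Bij}([n])$. On $S_*$ let $s_L(\sigma)=(0,\sigma(0)+1,\dots,\sigma(n)+1)$ and $s_R(\sigma)=(\sigma(0),\dots,\sigma(n),n+1)$ (adding a fixed point on the left, resp. right).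 A symmetric crossed simplicial group is ambi contractible if equipped with a left contraction (extra degeneracy) $s_L=s_{-1}\colon G_n\to G_{n+1}$ and right contraction $s_R=s_{n+1}\colon G_n\to G_{n+1}$, both group homomorphisms compatible with $s_L,s_R$ on $S_*$ via $\pi$. It is monoidal if $(\alpha,\beta)\mapsto s_R^{m+1}(\alpha)\cdot s_L^{n+1}(\beta)$, $G_n\times G_m\to G_{n+m+1}$, is a group homomorphism. Notation: for $\beta\in G_m$ and $a,b\ge0$, $1_a\boxplus\beta\boxplus1_b:=s_L^a(s_R^b(\beta))\in G_{m+a+b}$. A monoidal crossed simplicial group is operadic if for all $\alpha\in G_n$, $\beta\in G_m$, $0\le i\le n$: $(1_i\boxplus\beta\boxplus1_{n-i})\cdot s_i^m(\alpha)=s_i^m(\alpha)\cdot(1_{\alpha^{-1}(i)}\boxplus\beta\boxplus1_{n-\alpha^{-1}(i)})$, where $s_i^m$ is the $m$-fold iterate of $s_i$. The set-operad composition on $G_*$ (and likewise on $S_*$, which is itself operadic) is $\alpha\circ_i\beta=(1_i\boxplus\beta\boxplus1_{n-i})\cdot s_i^m(\alpha)\in G_{n+m}$ for $\alpha\in G_n,\beta\in G_m$, $0\le i\le n$. The action groupoid $\Gamma_n=G_n/\!\!/P_n$ has objects $\sigma\in G_n/P_n\cong S_n$ and morphisms $[\sigma,f]\colon\sigma\to\sigma\pi(f)^{-1}$ for $f\in G_n$, composed by $[\sigma\pi(f)^{-1},g]\cdot[\sigma,f]=[\sigma,gf]$; its face maps are $d_j[\sigma,f]=[d_j\sigma,d_{\sigma^{-1}(j)}(f^{-1})^{-1}]$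 (with $d_j\sigma$ in $S_*$, $\sigma^{-1}(j)$ the inverse permutation applied to $j$, and the outer $d$ that of $G_*$). A shifted operad in $\textsf{Gpd}$ (with cartesian product) is a semi-simplicial groupoid $\mathcal{U}( * )$ (faces $d_i\colon\mathcal{U}(n)\to\mathcal{U}(n-1)$) with functors $\circ_i\colon\mathcal{U}(n)\times\mathcal{U}(m)\to\mathcal{U}(n+m)$, $0\le i\le n$, such that: there is $\mathrm{id}\in\mathcal{U}(0)$ with $\mathrm{id}\circ_0\nu=\nu$, $\mu\circ_i\mathrm{id}=\mu$; $(\lambda\circ_i\mu)\circ_{i+j}\nu=\lambda\circ_i(\mu\circ_j\nu)$ ($\lambda\in\mathcal{U}(l),\mu\in\mathcal{U}(m),\nu\in\mathcal{U}(n)$, $0\le i\le l$, $0\le j\le m$); $(\lambda\circ_i\mu)\circ_{k+m}\nu=(\lambda\circ_k\nu)\circ_i\mu$ for $0\le i<k\le l$; $d_{i+j}(\lambda\circ_i\mu)=\lambda\circ_id_j(\mu)$; and for $0\le i<k\le l$, $d_i(\lambda\circ_k\nu)=d_i(\lambda)\circ_{k-1}\nu$ and $d_{k+m}(\lambda\circ_i\mu)=d_k(\lambda)\circ_i\mu$. *)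

theory Defs
  imports "HOL-Algebra.Bij"
begin

section \<open>Crossed simplicial groups (graded data)\<close>

text \<open>A crossed simplicial group is given by: the groups G_n (carrier, multiplication,
unit), the left action of G_n on [n] = {..n} (as a group homomorphism into the
group of extensional bijections of {..n}), face maps cd n i : G_n -> G_(n-1),
degeneracies cs n i : G_n -> G_(n+1), and (for ambi contractible ones) the left and
right contractions csL n, csR n : G_n -> G_(n+1).\<close>

record 'g csg =
  cG   :: "nat \<Rightarrow> 'g set"
  cmul :: "nat \<Rightarrow> 'g \<Rightarrow> 'g \<Rightarrow> 'g"
  cone :: "nat \<Rightarrow> 'g"
  cact :: "nat \<Rightarrow> 'g \<Rightarrow> (nat \<Rightarrow> nat)"
  cd   :: "nat \<Rightarrow> nat \<Rightarrow> 'g \<Rightarrow> 'g"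
  cs   :: "nat \<Rightarrow> nat \<Rightarrow> 'g \<Rightarrow> 'g"
  csL  :: "nat \<Rightarrow> 'g \<Rightarrow> 'g"
  csR  :: "nat \<Rightarrow> 'g \<Rightarrow> 'g"

definition grp :: "'g csg \<Rightarrow> nat \<Rightarrow> 'g monoid" where
  "grp C n = \<lparr>carrier = cG C n, mult = cmul C n, one = cone C n\<rparr>"

definition cinv :: "'g csg \<Rightarrow> nat \<Rightarrow> 'g \<Rightarrow> 'g" where
  "cinv C n g = inv\<^bsub>grp C n\<^esub> g"

definition pinv :: "nat \<Rightarrow> (nat \<Rightarrow> nat) \<Rightarrow> (nat \<Rightarrow> nat)" where
  "pinv n \<sigma> = inv\<^bsub>BijGroup {..n}\<^esub> \<sigma>"

definition delta :: "nat \<Rightarrow> nat \<Rightarrow> nat" where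
  "delta i k = (if k < i then k else Suc k)"

definition delta_inv :: "nat \<Rightarrow> nat \<Rightarrow> nat" where
  "delta_inv i k = (if k < i then k else k - 1)"

definition codeg :: "nat \<Rightarrow> nat \<Rightarrow> nat" where
  "codeg j k = (if k \<le> j then k else k - 1)"

text \<open>d_i(sigma): delete sigma^-1(i) from the source and i from the target.\<close>
definition sym_face :: "nat \<Rightarrow> nat \<Rightarrow> (nat \<Rightarrow> nat) \<Rightarrow> (nat \<Rightarrow> nat)" where
  "sym_face n i \<sigma> = (\<lambda>k\<in>{..n-1}. delta_inv i (\<sigma> (delta (pinv n \<sigma> i) k)))"

text \<open>s_i(sigma): double sigma^-1(i) in the source and i in the target,
order preservingly on the doubled pair.\<close>
definition sym_degen :: "nat \<Rightarrow> nat \<Rightarrow> (nat \<Rightarrow> nat) \<Rightarrow> (nat \<Rightarrow> nat)" where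
  "sym_degen n i \<sigma> = (\<lambda>k\<in>{..Suc n}.
     (let j = pinv n \<sigma> i in
      if k = j then i else if k = Suc j then Suc i
      else (let v = \<sigma> (codeg j k) in if v < i then v else Suc v)))"

definition sym_sL :: "nat \<Rightarrow> (nat \<Rightarrow> nat) \<Rightarrow> (nat \<Rightarrow> nat)" where
  "sym_sL n \<sigma> = (\<lambda>k\<in>{..Suc n}. if k = 0 then 0 else Suc (\<sigma> (k - 1)))"

definition sym_sR :: "nat \<Rightarrow> (nat \<Rightarrow> nat) \<Rightarrow> (nat \<Rightarrow> nat)" where
  "sym_sR n \<sigma> = (\<lambda>k\<in>{..Suc n}. if k = Suc n then Suc n else \<sigma> k)"

definition Sym :: "(nat \<Rightarrow> nat) csg" where
  "Sym = \<lparr>cG = (\<lambda>n. Bij {..n}),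
          cmul = (\<lambda>n. mult (BijGroup {..n})),
          cone = (\<lambda>n. one (BijGroup {..n})),
          cact = (\<lambda>n \<sigma>. \<sigma>),
          cd = sym_face, cs = sym_degen, csL = sym_sL, csR = sym_sR\<rparr>"

definition crossed_simplicial_group :: "'g csg \<Rightarrow> bool" where
  "crossed_simplicial_group C \<longleftrightarrow>
    (\<forall>n. group (grp C n)) \<and>
    (\<forall>n. cact C n \<in> hom (grp C n) (BijGroup {..n})) \<and>
    (\<forall>n i g. 1 \<le> n \<longrightarrow> i \<le> n \<longrightarrow> g \<in> cG C n \<longrightarrow> cd C n i g \<in> cG C (n - 1)) \<and>
    (\<forall>n i g. i \<le> n \<longrightarrow> g \<in> cG C n \<longrightarrow> cs C n i g \<in> cG C (Suc n)) \<and>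
    \<comment> \<open>simplicial identities\<close>
    (\<forall>n i j g. 2 \<le> n \<longrightarrow> i < j \<longrightarrow> j \<le> n \<longrightarrow> g \<in> cG C n \<longrightarrow>
        cd C (n - 1) i (cd C n j g) = cd C (n - 1) (j - 1) (cd C n i g)) \<and>
    (\<forall>n i j g. i \<le> j \<longrightarrow> j \<le> n \<longrightarrow> g \<in> cG C n \<longrightarrow>
        cs C (Suc n) i (cs C n j g) = cs C (Suc n) (Suc j) (cs C n i g)) \<and>
    (\<forall>n i j g. i < j \<longrightarrow> j \<le> n \<longrightarrow> g \<in> cG C n \<longrightarrow>
        cd C (Suc n) i (cs C n j g) = cs C (n - 1) (j - 1) (cd C n i g)) \<and>
    (\<forall>n j g. j \<le> n \<longrightarrow> g \<in> cG C n \<longrightarrow>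
        cd C (Suc n) j (cs C n j g) = g \<and> cd C (Suc n) (Suc j) (cs C n j g) = g) \<and>
    (\<forall>n i j g. Suc j < i \<longrightarrow> i \<le> Suc n \<longrightarrow> g \<in> cG C n \<longrightarrow>
        cd C (Suc n) i (cs C n j g) = cs C (n - 1) j (cd C n (i - 1) g)) \<and>
    \<comment> \<open>crossed identities\<close>
    (\<forall>n i g h. 1 \<le> n \<longrightarrow> i \<le> n \<longrightarrow> g \<in> cG C n \<longrightarrow> h \<in> cG C n \<longrightarrow>
        cd C n i (cmul C n g h) =
        cmul C (n - 1) (cd C n i g) (cd C n (cact C n (cinv C n g) i) h)) \<and>
    (\<forall>n i g h. i \<le> n \<longrightarrow> g \<in> cG C n \<longrightarrow> h \<in> cG C n \<longrightarrow>
        cs C n i (cmul C n g h) =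
        cmul C (Suc n) (cs C n i g) (cs C n (cact C n (cinv C n g) i) h)) \<and>
    \<comment> \<open>the action is compatible with the simplicial structure (G_* -> S_*)\<close>
    (\<forall>n i g. 1 \<le> n \<longrightarrow> i \<le> n \<longrightarrow> g \<in> cG C n \<longrightarrow>
        cact C (n - 1) (cd C n i g) = sym_face n i (cact C n g)) \<and>
    (\<forall>n i g. i \<le> n \<longrightarrow> g \<in> cG C n \<longrightarrow>
        cact C (Suc n) (cs C n i g) = sym_degen n i (cact C n g))"

definition symmetric_csg :: "'g csg \<Rightarrow> bool" where
  "symmetric_csg C \<longleftrightarrow> crossed_simplicial_group C \<and>
     (\<forall>n. cact C n ` cG C n = Bij {..n})"

text \<open>Left contraction s_L = s_(-1) and right contraction s_R = s_(n+1): group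
homomorphisms lying over s_L, s_R of S_*, satisfying the simplicial identities
with the extended indices -1 and n+1.\<close>
definition ambi_contractible :: "'g csg \<Rightarrow> bool" where
  "ambi_contractible C \<longleftrightarrow> symmetric_csg C \<and>
    (\<forall>n g. g \<in> cG C n \<longrightarrow> csL C n g \<in> cG C (Suc n) \<and> csR C n g \<in> cG C (Suc n)) \<and>
    (\<forall>n g h. g \<in> cG C n \<longrightarrow> h \<in> cG C n \<longrightarrow>
        csL C n (cmul C n g h) = cmul C (Suc n) (csL C n g) (csL C n h) \<and>
        csR C n (cmul C n g h) = cmul C (Suc n) (csR C n g) (csR C n h)) \<and>
    (\<forall>n g. g \<in> cG C n \<longrightarrow>
        cact C (Suc n) (csL C n g) = sym_sL n (cact C n g) \<and>
        cact C (Suc n) (csR C n g) = sym_sR n (cact C n g)) \<and>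
    \<comment> \<open>identities for s_L = s_(-1)\<close>
    (\<forall>n g. g \<in> cG C n \<longrightarrow> cd C (Suc n) 0 (csL C n g) = g) \<and>
    (\<forall>n i g. 1 \<le> n \<longrightarrow> 1 \<le> i \<longrightarrow> i \<le> Suc n \<longrightarrow> g \<in> cG C n \<longrightarrow>
        cd C (Suc n) i (csL C n g) = csL C (n - 1) (cd C n (i - 1) g)) \<and>
    (\<forall>n j g. j \<le> n \<longrightarrow> g \<in> cG C n \<longrightarrow>
        csL C (Suc n) (cs C n j g) = cs C (Suc n) (Suc j) (csL C n g)) \<and>
    (\<forall>n g. g \<in> cG C n \<longrightarrow> csL C (Suc n) (csL C n g) = cs C (Suc n) 0 (csL C n g)) \<and>
    \<comment> \<open>identities for s_R = s_(n+1)\<close>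
    (\<forall>n g. g \<in> cG C n \<longrightarrow> cd C (Suc n) (Suc n) (csR C n g) = g) \<and>
    (\<forall>n i g. 1 \<le> n \<longrightarrow> i \<le> n \<longrightarrow> g \<in> cG C n \<longrightarrow>
        cd C (Suc n) i (csR C n g) = csR C (n - 1) (cd C n i g)) \<and>
    (\<forall>n i g. i \<le> n \<longrightarrow> g \<in> cG C n \<longrightarrow>
        cs C (Suc n) i (csR C n g) = csR C (Suc n) (cs C n i g)) \<and>
    (\<forall>n g. g \<in> cG C n \<longrightarrow> cs C (Suc n) (Suc n) (csR C n g) = csR C (Suc n) (csR C n g)) \<and>
    \<comment> \<open>s_(-1) s_(n+1) = s_(n+2) s_(-1)\<close>
    (\<forall>n g. g \<in> cG C n \<longrightarrow> csL C (Suc n) (csR C n g) = csR C (Suc n) (csL C n g))"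

primrec sL_pow :: "'g csg \<Rightarrow> nat \<Rightarrow> nat \<Rightarrow> 'g \<Rightarrow> 'g" where
  "sL_pow C 0 m x = x"
| "sL_pow C (Suc a) m x = csL C (m + a) (sL_pow C a m x)"

primrec sR_pow :: "'g csg \<Rightarrow> nat \<Rightarrow> nat \<Rightarrow> 'g \<Rightarrow> 'g" where
  "sR_pow C 0 m x = x"
| "sR_pow C (Suc b) m x = csR C (m + b) (sR_pow C b m x)"

primrec s_pow :: "'g csg \<Rightarrow> nat \<Rightarrow> nat \<Rightarrow> nat \<Rightarrow> 'g \<Rightarrow> 'g" where
  "s_pow C 0 n i x = x"
| "s_pow C (Suc k) n i x = cs C (n + k) i (s_pow C k n i x)"

text \<open>1_a [+] beta [+] 1_b = s_L^a (s_R^b beta), for beta in G_m.\<close>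
definition boxp :: "'g csg \<Rightarrow> nat \<Rightarrow> nat \<Rightarrow> nat \<Rightarrow> 'g \<Rightarrow> 'g" where
  "boxp C a m b \<beta> = sL_pow C a (m + b) (sR_pow C b m \<beta>)"

text \<open>alpha o_i beta = (1_i [+] beta [+] 1_(n-i)) . s_i^m(alpha), alpha in G_n, beta in G_m.\<close>
definition opc :: "'g csg \<Rightarrow> nat \<Rightarrow> nat \<Rightarrow> nat \<Rightarrow> 'g \<Rightarrow> 'g \<Rightarrow> 'g" where
  "opc C n m i \<alpha> \<beta> = cmul C (n + m) (boxp C i m (n - i) \<beta>) (s_pow C m n i \<alpha>)"

definition monoidal_csg :: "'g csg \<Rightarrow> bool" where
  "monoidal_csg C \<longleftrightarrow> ambi_contractible C \<and>
    (\<forall>n m \<alpha> \<alpha>' \<beta> \<beta>'. \<alpha> \<in> cG C n \<longrightarrow> \<alpha>' \<in> cG C n \<longrightarrow> \<beta> \<in> cG C m \<longrightarrow> \<beta>' \<in> cG C m \<longrightarrow>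
       cmul C (n + m + 1) (sR_pow C (m + 1) n (cmul C n \<alpha> \<alpha>'))
                          (sL_pow C (n + 1) m (cmul C m \<beta> \<beta>')) =
       cmul C (n + m + 1)
         (cmul C (n + m + 1) (sR_pow C (m + 1) n \<alpha>) (sL_pow C (n + 1) m \<beta>))
         (cmul C (n + m + 1) (sR_pow C (m + 1) n \<alpha>') (sL_pow C (n + 1) m \<beta>')))"

definition operadic_csg :: "'g csg \<Rightarrow> bool" where
  "operadic_csg C \<longleftrightarrow> monoidal_csg C \<and>
    (\<forall>n m i \<alpha> \<beta>. \<alpha> \<in> cG C n \<longrightarrow> \<beta> \<in> cG C m \<longrightarrow> i \<le> n \<longrightarrow>
       cmul C (n + m) (boxp C i m (n - i) \<beta>) (s_pow C m n i \<alpha>) =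
       cmul C (n + m) (s_pow C m n i \<alpha>)
         (boxp C (cact C n (cinv C n \<alpha>) i) m (n - cact C n (cinv C n \<alpha>) i) \<beta>))"

section \<open>Graded groupoids with faces and partial compositions\<close>

record ('o, 'm) gpd_op =
  oObj   :: "nat \<Rightarrow> 'o set"
  oMor   :: "nat \<Rightarrow> 'm set"
  osrc   :: "nat \<Rightarrow> 'm \<Rightarrow> 'o"
  otgt   :: "nat \<Rightarrow> 'm \<Rightarrow> 'o"
  ocmp   :: "nat \<Rightarrow> 'm \<Rightarrow> 'm \<Rightarrow> 'm"   \<comment> \<open>ocmp n g f = g . f  (f first)\<close>
  oid    :: "nat \<Rightarrow> 'o \<Rightarrow> 'm"
  ofaceO :: "nat \<Rightarrow> nat \<Rightarrow> 'o \<Rightarrow> 'o"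
  ofaceM :: "nat \<Rightarrow> nat \<Rightarrow> 'm \<Rightarrow> 'm"
  ocircO :: "nat \<Rightarrow> nat \<Rightarrow> nat \<Rightarrow> 'o \<Rightarrow> 'o \<Rightarrow> 'o"
  ocircM :: "nat \<Rightarrow> nat \<Rightarrow> nat \<Rightarrow> 'm \<Rightarrow> 'm \<Rightarrow> 'm"

definition is_groupoid :: "('o, 'm) gpd_op \<Rightarrow> nat \<Rightarrow> bool" where
  "is_groupoid U n \<longleftrightarrow>
    (\<forall>f \<in> oMor U n. osrc U n f \<in> oObj U n \<and> otgt U n f \<in> oObj U n) \<and>
    (\<forall>x \<in> oObj U n. oid U n x \<in> oMor U n \<and> osrc U n (oid U n x) = x \<and> otgt U n (oid U n x) = x) \<and>
    (\<forall>f \<in> oMor U n. \<forall>g \<in> oMor U n. otgt U n f = osrc U n g \<longrightarrow>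
        ocmp U n g f \<in> oMor U n \<and> osrc U n (ocmp U n g f) = osrc U n f \<and>
        otgt U n (ocmp U n g f) = otgt U n g) \<and>
    (\<forall>f \<in> oMor U n. \<forall>g \<in> oMor U n. \<forall>h \<in> oMor U n.
        otgt U n f = osrc U n g \<longrightarrow> otgt U n g = osrc U n h \<longrightarrow>
        ocmp U n h (ocmp U n g f) = ocmp U n (ocmp U n h g) f) \<and>
    (\<forall>f \<in> oMor U n. ocmp U n f (oid U n (osrc U n f)) = f \<and>
                     ocmp U n (oid U n (otgt U n f)) f = f) \<and>
    (\<forall>f \<in> oMor U n. \<exists>g \<in> oMor U n. osrc U n g = otgt U n f \<and> otgt U n g = osrc U n f \<and>
        ocmp U n g f = oid U n (osrc U n f) \<and> ocmp U n f g = oid U n (otgt U n f))"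

definition face_functor :: "('o, 'm) gpd_op \<Rightarrow> nat \<Rightarrow> nat \<Rightarrow> bool" where
  "face_functor U n j \<longleftrightarrow>
    (\<forall>x \<in> oObj U n. ofaceO U n j x \<in> oObj U (n - 1)) \<and>
    (\<forall>f \<in> oMor U n. ofaceM U n j f \<in> oMor U (n - 1) \<and>
        osrc U (n - 1) (ofaceM U n j f) = ofaceO U n j (osrc U n f) \<and>
        otgt U (n - 1) (ofaceM U n j f) = ofaceO U n j (otgt U n f)) \<and>
    (\<forall>f \<in> oMor U n. \<forall>g \<in> oMor U n. otgt U n f = osrc U n g \<longrightarrow>
        ofaceM U n j (ocmp U n g f) = ocmp U (n - 1) (ofaceM U n j g) (ofaceM U n j f)) \<and>
    (\<forall>x \<in> oObj U n. ofaceM U n j (oid U n x) = oid U (n - 1) (ofaceO U n j x))"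

definition circ_functor :: "('o, 'm) gpd_op \<Rightarrow> nat \<Rightarrow> nat \<Rightarrow> nat \<Rightarrow> bool" where
  "circ_functor U n m i \<longleftrightarrow>
    (\<forall>x \<in> oObj U n. \<forall>y \<in> oObj U m. ocircO U n m i x y \<in> oObj U (n + m)) \<and>
    (\<forall>f \<in> oMor U n. \<forall>g \<in> oMor U m. ocircM U n m i f g \<in> oMor U (n + m) \<and>
        osrc U (n + m) (ocircM U n m i f g) = ocircO U n m i (osrc U n f) (osrc U m g) \<and>
        otgt U (n + m) (ocircM U n m i f g) = ocircO U n m i (otgt U n f) (otgt U m g)) \<and>
    (\<forall>f \<in> oMor U n. \<forall>f' \<in> oMor U n. \<forall>g \<in> oMor U m. \<forall>g' \<in> oMor U m.
        otgt U n f = osrc U n f' \<longrightarrow> otgt U m g = osrc U m g' \<longrightarrow>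
        ocircM U n m i (ocmp U n f' f) (ocmp U m g' g) =
        ocmp U (n + m) (ocircM U n m i f' g') (ocircM U n m i f g)) \<and>
    (\<forall>x \<in> oObj U n. \<forall>y \<in> oObj U m.
        ocircM U n m i (oid U n x) (oid U m y) = oid U (n + m) (ocircO U n m i x y))"

text \<open>Shifted operad in Gpd (cartesian product): a semi-simplicial groupoid with
functors o_i satisfying unit, associativity, commutativity and face axioms;
the axioms (equalities of functors) are stated on objects and on morphisms.\<close>
definition shifted_operad_gpd :: "('o, 'm) gpd_op \<Rightarrow> bool" where
  "shifted_operad_gpd U \<longleftrightarrow>
    (\<forall>n. is_groupoid U n) \<and>
    (\<forall>n j. 1 \<le> n \<longrightarrow> j \<le> n \<longrightarrow> face_functor U n j) \<and>
    (\<forall>n i j x. 2 \<le> n \<longrightarrow> i < j \<longrightarrow> j \<le> n \<longrightarrow> x \<in> oObj U n \<longrightarrow>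
        ofaceO U (n - 1) i (ofaceO U n j x) = ofaceO U (n - 1) (j - 1) (ofaceO U n i x)) \<and>
    (\<forall>n i j f. 2 \<le> n \<longrightarrow> i < j \<longrightarrow> j \<le> n \<longrightarrow> f \<in> oMor U n \<longrightarrow>
        ofaceM U (n - 1) i (ofaceM U n j f) = ofaceM U (n - 1) (j - 1) (ofaceM U n i f)) \<and>
    (\<forall>n m i. i \<le> n \<longrightarrow> circ_functor U n m i) \<and>
    \<comment> \<open>unit\<close>
    (\<exists>e \<in> oObj U 0.
       (\<forall>m. \<forall>y \<in> oObj U m. ocircO U 0 m 0 e y = y) \<and>
       (\<forall>m. \<forall>g \<in> oMor U m. ocircM U 0 m 0 (oid U 0 e) g = g) \<and>
       (\<forall>n i. \<forall>x \<in> oObj U n. i \<le> n \<longrightarrow> ocircO U n 0 i x e = x) \<and>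
       (\<forall>n i. \<forall>f \<in> oMor U n. i \<le> n \<longrightarrow> ocircM U n 0 i f (oid U 0 e) = f)) \<and>
    \<comment> \<open>associativity\<close>
    (\<forall>l m n i j. \<forall>x \<in> oObj U l. \<forall>y \<in> oObj U m. \<forall>z \<in> oObj U n. i \<le> l \<longrightarrow> j \<le> m \<longrightarrow>
        ocircO U (l + m) n (i + j) (ocircO U l m i x y) z =
        ocircO U l (m + n) i x (ocircO U m n j y z)) \<and>
    (\<forall>l m n i j. \<forall>x \<in> oMor U l. \<forall>y \<in> oMor U m. \<forall>z \<in> oMor U n. i \<le> l \<longrightarrow> j \<le> m \<longrightarrow>
        ocircM U (l + m) n (i + j) (ocircM U l m i x y) z =
        ocircM U l (m + n) i x (ocircM U m n j y z)) \<and>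
    \<comment> \<open>commutativity\<close>
    (\<forall>l m n i k. \<forall>x \<in> oObj U l. \<forall>y \<in> oObj U m. \<forall>z \<in> oObj U n. i < k \<longrightarrow> k \<le> l \<longrightarrow>
        ocircO U (l + m) n (k + m) (ocircO U l m i x y) z =
        ocircO U (l + n) m i (ocircO U l n k x z) y) \<and>
    (\<forall>l m n i k. \<forall>x \<in> oMor U l. \<forall>y \<in> oMor U m. \<forall>z \<in> oMor U n. i < k \<longrightarrow> k \<le> l \<longrightarrow>
        ocircM U (l + m) n (k + m) (ocircM U l m i x y) z =
        ocircM U (l + n) m i (ocircM U l n k x z) y) \<and>
    \<comment> \<open>faces: d_(i+j)(x o_i y) = x o_i d_j(y)\<close>
    (\<forall>l m i j. \<forall>x \<in> oObj U l. \<forall>y \<in> oObj U m. 1 \<le> m \<longrightarrow> i \<le> l \<longrightarrow> j \<le> m \<longrightarrow>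
        ofaceO U (l + m) (i + j) (ocircO U l m i x y) = ocircO U l (m - 1) i x (ofaceO U m j y)) \<and>
    (\<forall>l m i j. \<forall>x \<in> oMor U l. \<forall>y \<in> oMor U m. 1 \<le> m \<longrightarrow> i \<le> l \<longrightarrow> j \<le> m \<longrightarrow>
        ofaceM U (l + m) (i + j) (ocircM U l m i x y) = ocircM U l (m - 1) i x (ofaceM U m j y)) \<and>
    \<comment> \<open>faces: d_i(x o_k z) = d_i(x) o_(k-1) z for i < k\<close>
    (\<forall>l n i k. \<forall>x \<in> oObj U l. \<forall>z \<in> oObj U n. i < k \<longrightarrow> k \<le> l \<longrightarrow>
        ofaceO U (l + n) i (ocircO U l n k x z) = ocircO U (l - 1) n (k - 1) (ofaceO U l i x) z) \<and>
    (\<forall>l n i k. \<forall>x \<in> oMor U l. \<forall>z \<in> oMor U n. i < k \<longrightarrow> k \<le> l \<longrightarrow>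
        ofaceM U (l + n) i (ocircM U l n k x z) = ocircM U (l - 1) n (k - 1) (ofaceM U l i x) z) \<and>
    \<comment> \<open>faces: d_(k+m)(x o_i y) = d_k(x) o_i y for i < k\<close>
    (\<forall>l m i k. \<forall>x \<in> oObj U l. \<forall>y \<in> oObj U m. i < k \<longrightarrow> k \<le> l \<longrightarrow>
        ofaceO U (l + m) (k + m) (ocircO U l m i x y) = ocircO U (l - 1) m i (ofaceO U l k x) y) \<and>
    (\<forall>l m i k. \<forall>x \<in> oMor U l. \<forall>y \<in> oMor U m. i < k \<longrightarrow> k \<le> l \<longrightarrow>
        ofaceM U (l + m) (k + m) (ocircM U l m i x y) = ocircM U (l - 1) m i (ofaceM U l k x) y)"

section \<open>The action groupoids Gamma_n = G_n // P_n\<close>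

text \<open>Objects: sigma in S_n (= G_n/P_n). Morphisms [sigma,f] : sigma -> sigma pi(f)^-1,
with pi(f) = cact C n f.\<close>
definition Gamma :: "'g csg \<Rightarrow> (nat \<Rightarrow> nat, (nat \<Rightarrow> nat) \<times> 'g) gpd_op" where
  "Gamma C = \<lparr>
     oObj = (\<lambda>n. Bij {..n}),
     oMor = (\<lambda>n. Bij {..n} \<times> cG C n),
     osrc = (\<lambda>n p. fst p),
     otgt = (\<lambda>n p. mult (BijGroup {..n}) (fst p) (pinv n (cact C n (snd p)))),
     ocmp = (\<lambda>n q p. (fst p, cmul C n (snd q) (snd p))),
     oid = (\<lambda>n \<sigma>. (\<sigma>, cone C n)),
     ofaceO = (\<lambda>n j \<sigma>. sym_face n j \<sigma>),
     ofaceM = (\<lambda>n j p. (sym_face n j (fst p),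
                  cinv C (n - 1) (cd C n (pinv n (fst p) j) (cinv C n (snd p))))),
     ocircO = (\<lambda>n m i \<sigma> \<tau>. opc Sym n m i \<sigma> \<tau>),
     ocircM = (\<lambda>n m i p q. (opc Sym n m i (fst p) (fst q),
                  cinv C (n + m) (opc C n m (pinv n (fst p) i) (cinv C n (snd p)) (cinv C m (snd q)))))
   \<rparr>"

end

theory Submission
  imports Defs
begin

section \<open>Bijections of {..n}\<close>

lemma Bij_le: "\<sigma> \<in> Bij {..n} \<Longrightarrow> x \<le> n \<Longrightarrow> \<sigma> x \<le> n"
  using Bij_imp_funcset by fastforce

lemma bmul_app: "\<sigma> \<in> Bij {..n} \<Longrightarrow> \<tau> \<in> Bij {..n} \<Longrightarrow> x \<le> n \<Longrightarrow>
   mult (BijGroup {..n}) \<sigma> \<tau> x = \<sigma> (\<tau> x)"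
  by (simp add: BijGroup_def compose_def)

lemma bmul_Bij: "\<sigma> \<in> Bij {..n} \<Longrightarrow> \<tau> \<in> Bij {..n} \<Longrightarrow> mult (BijGroup {..n}) \<sigma> \<tau> \<in> Bij {..n}"
  by (simp add: BijGroup_def compose_Bij)

lemma pinv_eq: "\<sigma> \<in> Bij {..n} \<Longrightarrow> pinv n \<sigma> = (\<lambda>x\<in>{..n}. inv_into {..n} \<sigma> x)"
  by (simp add: pinv_def inv_BijGroup)

lemma pinv_Bij: "\<sigma> \<in> Bij {..n} \<Longrightarrow> pinv n \<sigma> \<in> Bij {..n}"
  by (simp add: pinv_eq restrict_inv_into_Bij)

lemma Bij_inj_on: "\<sigma> \<in> Bij {..n} \<Longrightarrow> inj_on \<sigma> {..n}"
  unfolding Bij_def bij_betw_def by simp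

lemma Bij_surj: "\<sigma> \<in> Bij {..n} \<Longrightarrow> \<sigma> ` {..n} = {..n}"
  unfolding Bij_def bij_betw_def by simp

lemma pinv_app: "\<sigma> \<in> Bij {..n} \<Longrightarrow> x \<le> n \<Longrightarrow> pinv n \<sigma> (\<sigma> x) = x"
proof -
  assume a: "\<sigma> \<in> Bij {..n}" "x \<le> n"
  have "\<sigma> x \<le> n" using Bij_le a by blast
  then have "pinv n \<sigma> (\<sigma> x) = inv_into {..n} \<sigma> (\<sigma> x)" using a(1) by (simp add: pinv_eq)
  also have "\<dots> = x" using inv_into_f_f[OF Bij_inj_on[OF a(1)]] a(2) by simp
  finally show ?thesis .
qed

lemma app_pinv: "\<sigma> \<in> Bij {..n} \<Longrightarrow> y \<le> n \<Longrightarrow> \<sigma> (pinv n \<sigma> y) = y"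
proof -
  assume a: "\<sigma> \<in> Bij {..n}" "y \<le> n"
  have "pinv n \<sigma> y = inv_into {..n} \<sigma> y" using a by (simp add: pinv_eq)
  moreover have "y \<in> \<sigma> ` {..n}" using Bij_surj[OF a(1)] a(2) by simp
  ultimately show ?thesis using f_inv_into_f by metis
qed

lemma pinv_le: "\<sigma> \<in> Bij {..n} \<Longrightarrow> y \<le> n \<Longrightarrow> pinv n \<sigma> y \<le> n"
  by (rule Bij_le[OF pinv_Bij])

lemma pinv_eqI: "\<sigma> \<in> Bij {..n} \<Longrightarrow> x \<le> n \<Longrightarrow> \<sigma> x = y \<Longrightarrow> pinv n \<sigma> y = x"
  using pinv_app[of \<sigma> n x] by simp

lemma Bij_ext: "(\<sigma>::nat\<Rightarrow>nat) \<in> Bij {..n} \<Longrightarrow> \<tau> \<in> Bij {..n} \<Longrightarrow> (\<And>x. x \<le> n \<Longrightarrow> \<sigma> x = \<tau> x) \<Longrightarrow> \<sigma> = \<tau>"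
proof -
  assume a: "\<sigma> \<in> Bij {..n}" "\<tau> \<in> Bij {..n}" "\<And>x. x \<le> n \<Longrightarrow> \<sigma> x = \<tau> x"
  show ?thesis
  proof (rule extensionalityI[OF Bij_imp_extensional[OF a(1)] Bij_imp_extensional[OF a(2)]])
    fix x assume "x \<in> {..n}" then have "x \<le> n" by simp
    then show "\<sigma> x = \<tau> x" by (rule a(3))
  qed
qed

lemma Bij_inj: "(\<sigma>::nat\<Rightarrow>nat) \<in> Bij {..n} \<Longrightarrow> x \<le> n \<Longrightarrow> y \<le> n \<Longrightarrow> \<sigma> x = \<sigma> y \<Longrightarrow> x = y"
proof -
  assume a: "\<sigma> \<in> Bij {..n}" "x \<le> n" "y \<le> n" "\<sigma> x = \<sigma> y"
  have "x = pinv n \<sigma> (\<sigma> x)" using pinv_app[OF a(1) a(2)] by simp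
  also have "\<dots> = pinv n \<sigma> (\<sigma> y)" by (simp only: a(4))
  also have "\<dots> = y" using pinv_app[OF a(1) a(3)] by simp
  finally show ?thesis .
qed

lemma bone_app: "x \<le> n \<Longrightarrow> one (BijGroup {..n}) x = x"
  by (simp add: BijGroup_def)

lemma sdeg_pinv: "\<rho> \<in> Bij {..N} \<Longrightarrow> sym_degen N i \<rho> \<in> Bij {..Suc N} \<Longrightarrow> i \<le> N \<Longrightarrow>
   pinv (Suc N) (sym_degen N i \<rho>) i = pinv N \<rho> i"
proof -
  assume a: "\<rho> \<in> Bij {..N}" "sym_degen N i \<rho> \<in> Bij {..Suc N}" "i \<le> N"
  have le: "pinv N \<rho> i \<le> N" using pinv_le a by blast
  show ?thesis
    by (rule pinv_eqI[OF a(2)]) (use le in \<open>simp_all add: sym_degen_def Let_def\<close>)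
qed

lemma LpowS_app: "y \<le> M + a \<Longrightarrow> sL_pow Sym a M z y = (if y < a then y else a + z (y - a))"
proof (induction a arbitrary: y)
  case 0 then show ?case by simp
next
  case (Suc a)
  show ?case
  proof (cases "y = 0")
    case True then show ?thesis by (simp add: Sym_def sym_sL_def)
  next
    case False
    have "sL_pow Sym (Suc a) M z y = Suc (sL_pow Sym a M z (y - 1))"
      using Suc.prems False by (simp add: Sym_def sym_sL_def)
    also have "\<dots> = Suc (if y - 1 < a then y - 1 else a + z (y - 1 - a))"
      using Suc.prems by (subst Suc.IH) auto
    finally show ?thesis using False by auto
  qed
qed

lemma RpowS_app: "y \<le> M + b \<Longrightarrow> sR_pow Sym b M z y = (if y \<le> M then z y else y)"
proof (induction b arbitrary: y)
  case 0 then show ?case by simp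
next
  case (Suc b)
  show ?case
  proof (cases "y = Suc (M + b)")
    case True then show ?thesis by (simp add: Sym_def sym_sR_def)
  next
    case False
    have "sR_pow Sym (Suc b) M z y = sR_pow Sym b M z y"
      using Suc.prems False by (simp add: Sym_def sym_sR_def)
    also have "\<dots> = (if y \<le> M then z y else y)"
      using Suc.prems False by (subst Suc.IH) auto
    finally show ?thesis .
  qed
qed

lemma boxpS_app: "y \<le> m + b + a \<Longrightarrow>
  boxp Sym a m b \<tau> y = (if y < a then y else if y \<le> a + m then a + \<tau> (y - a) else y)"
  unfolding boxp_def
  by (subst LpowS_app) (auto simp: RpowS_app)

lemma bmul_assoc: "\<sigma> \<in> Bij S \<Longrightarrow> \<tau> \<in> Bij S \<Longrightarrow> \<rho> \<in> Bij S \<Longrightarrow>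
  mult (BijGroup S) (mult (BijGroup S) \<sigma> \<tau>) \<rho> = mult (BijGroup S) \<sigma> (mult (BijGroup S) \<tau> \<rho>)"
  using group.axioms(1)[OF group_BijGroup[of S]] monoid.m_assoc by (metis BijGroup_def partial_object.select_convs(1))

lemma bone_Bij: "one (BijGroup S) \<in> Bij S"
  by (simp add: BijGroup_def id_Bij)

lemma bmul_one_r: "\<sigma> \<in> Bij S \<Longrightarrow> mult (BijGroup S) \<sigma> (one (BijGroup S)) = \<sigma>"
  using group.axioms(1)[OF group_BijGroup[of S]] monoid.r_one by (metis BijGroup_def partial_object.select_convs(1))

lemma bmul_one_l: "\<sigma> \<in> Bij S \<Longrightarrow> mult (BijGroup S) (one (BijGroup S)) \<sigma> = \<sigma>"
  using group.axioms(1)[OF group_BijGroup[of S]] monoid.l_one by (metis BijGroup_def partial_object.select_convs(1))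

lemma bcarrier: "carrier (BijGroup S) = Bij S" by (simp add: BijGroup_def)

lemma pinv_mul: "\<sigma> \<in> Bij {..n} \<Longrightarrow> \<tau> \<in> Bij {..n} \<Longrightarrow>
  pinv n (mult (BijGroup {..n}) \<sigma> \<tau>) = mult (BijGroup {..n}) (pinv n \<tau>) (pinv n \<sigma>)"
  unfolding pinv_def using group.inv_mult_group[OF group_BijGroup[of "{..n}"]] by (simp add: bcarrier)

lemma pinv_pinv: "\<sigma> \<in> Bij {..n} \<Longrightarrow> pinv n (pinv n \<sigma>) = \<sigma>"
  unfolding pinv_def using group.inv_inv[OF group_BijGroup[of "{..n}"]] by (simp add: bcarrier)

lemma pinv_one: "pinv n (one (BijGroup {..n})) = one (BijGroup {..n})"
  unfolding pinv_def using monoid.inv_one[OF group.axioms(1)[OF group_BijGroup[of "{..n}"]]] by simp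

lemma bmul_pinv_r: "\<sigma> \<in> Bij {..n} \<Longrightarrow> mult (BijGroup {..n}) \<sigma> (pinv n \<sigma>) = one (BijGroup {..n})"
  unfolding pinv_def using group.r_inv[OF group_BijGroup[of "{..n}"]] by (simp add: bcarrier)

lemma bmul_pinv_l: "\<sigma> \<in> Bij {..n} \<Longrightarrow> mult (BijGroup {..n}) (pinv n \<sigma>) \<sigma> = one (BijGroup {..n})"
  unfolding pinv_def using group.l_inv[OF group_BijGroup[of "{..n}"]] by (simp add: bcarrier)

locale ocsg =
  fixes C :: "'g csg"
  assumes opc_ax: "operadic_csg C"
begin

lemma ax_mon0: "monoidal_csg C" using opc_ax by (simp add: operadic_csg_def)
lemma ax_amb: "ambi_contractible C" using ax_mon0 by (simp add: monoidal_csg_def)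
lemma ax_sym: "symmetric_csg C" using ax_amb by (simp add: ambi_contractible_def)
lemma ax_csg: "crossed_simplicial_group C" using ax_sym by (simp add: symmetric_csg_def)

lemmas csgP = ax_csg[unfolded crossed_simplicial_group_def]
lemmas ambP = ax_amb[unfolded ambi_contractible_def]

lemma ax_surj: "cact C n ` cG C n = Bij {..n}" using ax_sym by (simp add: symmetric_csg_def)

lemma grp_ax: "group (grp C n)" using csgP[THEN conjunct1] by blast
lemma hom_ax: "cact C n \<in> hom (grp C n) (BijGroup {..n})"
  using csgP[THEN conjunct2, THEN conjunct1] by blast

lemma d_cl: "i \<le> Suc n \<Longrightarrow> g \<in> cG C (Suc n) \<Longrightarrow> cd C (Suc n) i g \<in> cG C n"
proof -
  have "\<forall>n i g. 1 \<le> n \<longrightarrow> i \<le> n \<longrightarrow> g \<in> cG C n \<longrightarrow> cd C n i g \<in> cG C (n - 1)"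
    using csgP[THEN conjunct2, THEN conjunct2, THEN conjunct1] by blast
  then show "i \<le> Suc n \<Longrightarrow> g \<in> cG C (Suc n) \<Longrightarrow> ?thesis" by (metis diff_Suc_1 le_add1 plus_1_eq_Suc)
qed

lemma s_cl: "i \<le> n \<Longrightarrow> g \<in> cG C n \<Longrightarrow> cs C n i g \<in> cG C (Suc n)"
  using csgP[THEN conjunct2, THEN conjunct2, THEN conjunct2, THEN conjunct1] by blast

lemma dd: "i < j \<Longrightarrow> j \<le> Suc (Suc n) \<Longrightarrow> g \<in> cG C (Suc (Suc n)) \<Longrightarrow>
  cd C (Suc n) i (cd C (Suc (Suc n)) j g) = cd C (Suc n) (j - 1) (cd C (Suc (Suc n)) i g)"
proof -
  have "\<forall>n i j g. 2 \<le> n \<longrightarrow> i < j \<longrightarrow> j \<le> n \<longrightarrow> g \<in> cG C n \<longrightarrow>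
        cd C (n - 1) i (cd C n j g) = cd C (n - 1) (j - 1) (cd C n i g)"
    using csgP[THEN conjunct2, THEN conjunct2, THEN conjunct2, THEN conjunct2, THEN conjunct1] by blast
  then show "i < j \<Longrightarrow> j \<le> Suc (Suc n) \<Longrightarrow> g \<in> cG C (Suc (Suc n)) \<Longrightarrow> ?thesis"
    by (metis Suc_1 Suc_le_mono diff_Suc_1 le_add1 plus_1_eq_Suc)
qed

lemma ss: "i \<le> j \<Longrightarrow> j \<le> n \<Longrightarrow> g \<in> cG C n \<Longrightarrow>
        cs C (Suc n) i (cs C n j g) = cs C (Suc n) (Suc j) (cs C n i g)"
  using csgP[THEN conjunct2, THEN conjunct2, THEN conjunct2, THEN conjunct2, THEN conjunct2, THEN conjunct1] by blast

lemma ds_lt: "i < j \<Longrightarrow> j \<le> Suc n \<Longrightarrow> g \<in> cG C (Suc n) \<Longrightarrow>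
        cd C (Suc (Suc n)) i (cs C (Suc n) j g) = cs C n (j - 1) (cd C (Suc n) i g)"
proof -
  have "\<forall>n i j g. i < j \<longrightarrow> j \<le> n \<longrightarrow> g \<in> cG C n \<longrightarrow>
        cd C (Suc n) i (cs C n j g) = cs C (n - 1) (j - 1) (cd C n i g)"
    using csgP[THEN conjunct2, THEN conjunct2, THEN conjunct2, THEN conjunct2, THEN conjunct2, THEN conjunct2, THEN conjunct1] by blast
  then show "i < j \<Longrightarrow> j \<le> Suc n \<Longrightarrow> g \<in> cG C (Suc n) \<Longrightarrow> ?thesis"
    by (metis diff_Suc_1)
qed

lemma ds_eq1: "j \<le> n \<Longrightarrow> g \<in> cG C n \<Longrightarrow> cd C (Suc n) j (cs C n j g) = g"
  using csgP[THEN conjunct2, THEN conjunct2, THEN conjunct2, THEN conjunct2, THEN conjunct2, THEN conjunct2, THEN conjunct2, THEN conjunct1] by blast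
lemma ds_eq2: "j \<le> n \<Longrightarrow> g \<in> cG C n \<Longrightarrow> cd C (Suc n) (Suc j) (cs C n j g) = g"
  using csgP[THEN conjunct2, THEN conjunct2, THEN conjunct2, THEN conjunct2, THEN conjunct2, THEN conjunct2, THEN conjunct2, THEN conjunct1] by blast

lemma ds_gt: "Suc j < i \<Longrightarrow> i \<le> Suc (Suc n) \<Longrightarrow> g \<in> cG C (Suc n) \<Longrightarrow>
        cd C (Suc (Suc n)) i (cs C (Suc n) j g) = cs C n j (cd C (Suc n) (i - 1) g)"
proof -
  have "\<forall>n i j g. Suc j < i \<longrightarrow> i \<le> Suc n \<longrightarrow> g \<in> cG C n \<longrightarrow>
        cd C (Suc n) i (cs C n j g) = cs C (n - 1) j (cd C n (i - 1) g)"
    using csgP[THEN conjunct2, THEN conjunct2, THEN conjunct2, THEN conjunct2, THEN conjunct2, THEN conjunct2, THEN conjunct2, THEN conjunct2, THEN conjunct1] by blast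
  then show "Suc j < i \<Longrightarrow> i \<le> Suc (Suc n) \<Longrightarrow> g \<in> cG C (Suc n) \<Longrightarrow> ?thesis"
    by (metis diff_Suc_1)
qed

lemma d_mul: "i \<le> Suc n \<Longrightarrow> g \<in> cG C (Suc n) \<Longrightarrow> h \<in> cG C (Suc n) \<Longrightarrow>
        cd C (Suc n) i (cmul C (Suc n) g h) =
        cmul C n (cd C (Suc n) i g) (cd C (Suc n) (cact C (Suc n) (cinv C (Suc n) g) i) h)"
proof -
  have "\<forall>n i g h. 1 \<le> n \<longrightarrow> i \<le> n \<longrightarrow> g \<in> cG C n \<longrightarrow> h \<in> cG C n \<longrightarrow>
        cd C n i (cmul C n g h) =
        cmul C (n - 1) (cd C n i g) (cd C n (cact C n (cinv C n g) i) h)"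
    using csgP[THEN conjunct2, THEN conjunct2, THEN conjunct2, THEN conjunct2, THEN conjunct2, THEN conjunct2, THEN conjunct2, THEN conjunct2, THEN conjunct2, THEN conjunct1] by blast
  then show "i \<le> Suc n \<Longrightarrow> g \<in> cG C (Suc n) \<Longrightarrow> h \<in> cG C (Suc n) \<Longrightarrow> ?thesis"
    by (metis diff_Suc_1 le_add1 plus_1_eq_Suc)
qed

lemma s_mul: "i \<le> n \<Longrightarrow> g \<in> cG C n \<Longrightarrow> h \<in> cG C n \<Longrightarrow>
        cs C n i (cmul C n g h) =
        cmul C (Suc n) (cs C n i g) (cs C n (cact C n (cinv C n g) i) h)"
  using csgP[THEN conjunct2, THEN conjunct2, THEN conjunct2, THEN conjunct2, THEN conjunct2, THEN conjunct2, THEN conjunct2, THEN conjunct2, THEN conjunct2, THEN conjunct2, THEN conjunct1] by blast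

lemma pi_d: "i \<le> Suc n \<Longrightarrow> g \<in> cG C (Suc n) \<Longrightarrow>
        cact C n (cd C (Suc n) i g) = sym_face (Suc n) i (cact C (Suc n) g)"
proof -
  have "\<forall>n i g. 1 \<le> n \<longrightarrow> i \<le> n \<longrightarrow> g \<in> cG C n \<longrightarrow>
        cact C (n - 1) (cd C n i g) = sym_face n i (cact C n g)"
    using csgP[THEN conjunct2, THEN conjunct2, THEN conjunct2, THEN conjunct2, THEN conjunct2, THEN conjunct2, THEN conjunct2, THEN conjunct2, THEN conjunct2, THEN conjunct2, THEN conjunct2, THEN conjunct1] by blast
  then show "i \<le> Suc n \<Longrightarrow> g \<in> cG C (Suc n) \<Longrightarrow> ?thesis"
    by (metis diff_Suc_1 le_add1 plus_1_eq_Suc)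
qed

lemma pi_s: "i \<le> n \<Longrightarrow> g \<in> cG C n \<Longrightarrow>
        cact C (Suc n) (cs C n i g) = sym_degen n i (cact C n g)"
  using csgP[THEN conjunct2, THEN conjunct2, THEN conjunct2, THEN conjunct2, THEN conjunct2, THEN conjunct2, THEN conjunct2, THEN conjunct2, THEN conjunct2, THEN conjunct2, THEN conjunct2, THEN conjunct2] by blast

lemma L_cl: "g \<in> cG C n \<Longrightarrow> csL C n g \<in> cG C (Suc n)"
  using ambP[THEN conjunct2, THEN conjunct1] by blast
lemma R_cl: "g \<in> cG C n \<Longrightarrow> csR C n g \<in> cG C (Suc n)"
  using ambP[THEN conjunct2, THEN conjunct1] by blast
lemma L_mul: "g \<in> cG C n \<Longrightarrow> h \<in> cG C n \<Longrightarrow>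
        csL C n (cmul C n g h) = cmul C (Suc n) (csL C n g) (csL C n h)"
  using ambP[THEN conjunct2, THEN conjunct2, THEN conjunct1] by blast
lemma R_mul: "g \<in> cG C n \<Longrightarrow> h \<in> cG C n \<Longrightarrow>
        csR C n (cmul C n g h) = cmul C (Suc n) (csR C n g) (csR C n h)"
  using ambP[THEN conjunct2, THEN conjunct2, THEN conjunct1] by blast
lemma pi_L: "g \<in> cG C n \<Longrightarrow> cact C (Suc n) (csL C n g) = sym_sL n (cact C n g)"
  using ambP[THEN conjunct2, THEN conjunct2, THEN conjunct2, THEN conjunct1] by blast
lemma pi_R: "g \<in> cG C n \<Longrightarrow> cact C (Suc n) (csR C n g) = sym_sR n (cact C n g)"
  using ambP[THEN conjunct2, THEN conjunct2, THEN conjunct2, THEN conjunct1] by blast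
lemma dL0: "g \<in> cG C n \<Longrightarrow> cd C (Suc n) 0 (csL C n g) = g"
  using ambP[THEN conjunct2, THEN conjunct2, THEN conjunct2, THEN conjunct2, THEN conjunct1] by blast
lemma dL: "i \<le> Suc n \<Longrightarrow> g \<in> cG C (Suc n) \<Longrightarrow>
   cd C (Suc (Suc n)) (Suc i) (csL C (Suc n) g) = csL C n (cd C (Suc n) i g)"
proof -
  have "\<forall>n i g. 1 \<le> n \<longrightarrow> 1 \<le> i \<longrightarrow> i \<le> Suc n \<longrightarrow> g \<in> cG C n \<longrightarrow>
        cd C (Suc n) i (csL C n g) = csL C (n - 1) (cd C n (i - 1) g)"
    using ambP[THEN conjunct2, THEN conjunct2, THEN conjunct2, THEN conjunct2, THEN conjunct2, THEN conjunct1] by blast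
  then show "i \<le> Suc n \<Longrightarrow> g \<in> cG C (Suc n) \<Longrightarrow> ?thesis"
    by (metis Suc_le_mono diff_Suc_1 le_add1 plus_1_eq_Suc)
qed
lemma Ls: "j \<le> n \<Longrightarrow> g \<in> cG C n \<Longrightarrow>
        csL C (Suc n) (cs C n j g) = cs C (Suc n) (Suc j) (csL C n g)"
  using ambP[THEN conjunct2, THEN conjunct2, THEN conjunct2, THEN conjunct2, THEN conjunct2, THEN conjunct2, THEN conjunct1] by blast
lemma LL: "g \<in> cG C n \<Longrightarrow> csL C (Suc n) (csL C n g) = cs C (Suc n) 0 (csL C n g)"
  using ambP[THEN conjunct2, THEN conjunct2, THEN conjunct2, THEN conjunct2, THEN conjunct2, THEN conjunct2, THEN conjunct2, THEN conjunct1] by blast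
lemma dRtop: "g \<in> cG C n \<Longrightarrow> cd C (Suc n) (Suc n) (csR C n g) = g"
  using ambP[THEN conjunct2, THEN conjunct2, THEN conjunct2, THEN conjunct2, THEN conjunct2, THEN conjunct2, THEN conjunct2, THEN conjunct2, THEN conjunct1] by blast
lemma dR: "i \<le> Suc n \<Longrightarrow> g \<in> cG C (Suc n) \<Longrightarrow>
        cd C (Suc (Suc n)) i (csR C (Suc n) g) = csR C n (cd C (Suc n) i g)"
proof -
  have "\<forall>n i g. 1 \<le> n \<longrightarrow> i \<le> n \<longrightarrow> g \<in> cG C n \<longrightarrow>
        cd C (Suc n) i (csR C n g) = csR C (n - 1) (cd C n i g)"
    using ambP[THEN conjunct2, THEN conjunct2, THEN conjunct2, THEN conjunct2, THEN conjunct2, THEN conjunct2, THEN conjunct2, THEN conjunct2, THEN conjunct2, THEN conjunct1] by blast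
  then show "i \<le> Suc n \<Longrightarrow> g \<in> cG C (Suc n) \<Longrightarrow> ?thesis"
    by (metis diff_Suc_1 le_add1 plus_1_eq_Suc)
qed
lemma sR: "i \<le> n \<Longrightarrow> g \<in> cG C n \<Longrightarrow>
        cs C (Suc n) i (csR C n g) = csR C (Suc n) (cs C n i g)"
  using ambP[THEN conjunct2, THEN conjunct2, THEN conjunct2, THEN conjunct2, THEN conjunct2, THEN conjunct2, THEN conjunct2, THEN conjunct2, THEN conjunct2, THEN conjunct2, THEN conjunct1] by blast
lemma sRtop: "g \<in> cG C n \<Longrightarrow> cs C (Suc n) (Suc n) (csR C n g) = csR C (Suc n) (csR C n g)"
  using ambP[THEN conjunct2, THEN conjunct2, THEN conjunct2, THEN conjunct2, THEN conjunct2, THEN conjunct2, THEN conjunct2, THEN conjunct2, THEN conjunct2, THEN conjunct2, THEN conjunct2, THEN conjunct1] by blast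
lemma LR: "g \<in> cG C n \<Longrightarrow> csL C (Suc n) (csR C n g) = csR C (Suc n) (csL C n g)"
  using ambP[THEN conjunct2, THEN conjunct2, THEN conjunct2, THEN conjunct2, THEN conjunct2, THEN conjunct2, THEN conjunct2, THEN conjunct2, THEN conjunct2, THEN conjunct2, THEN conjunct2, THEN conjunct2] by blast

lemma ax_mon: "\<alpha> \<in> cG C n \<Longrightarrow> \<alpha>' \<in> cG C n \<Longrightarrow> \<beta> \<in> cG C m \<Longrightarrow> \<beta>' \<in> cG C m \<Longrightarrow>
       cmul C (n + m + 1) (sR_pow C (m + 1) n (cmul C n \<alpha> \<alpha>'))
                          (sL_pow C (n + 1) m (cmul C m \<beta> \<beta>')) =
       cmul C (n + m + 1)
         (cmul C (n + m + 1) (sR_pow C (m + 1) n \<alpha>) (sL_pow C (n + 1) m \<beta>))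
         (cmul C (n + m + 1) (sR_pow C (m + 1) n \<alpha>') (sL_pow C (n + 1) m \<beta>'))"
  using ax_mon0 unfolding monoidal_csg_def by blast

lemma ax_op: "\<alpha> \<in> cG C n \<Longrightarrow> \<beta> \<in> cG C m \<Longrightarrow> i \<le> n \<Longrightarrow>
       cmul C (n + m) (boxp C i m (n - i) \<beta>) (s_pow C m n i \<alpha>) =
       cmul C (n + m) (s_pow C m n i \<alpha>)
         (boxp C (cact C n (cinv C n \<alpha>) i) m (n - cact C n (cinv C n \<alpha>) i) \<beta>)"
  using opc_ax unfolding operadic_csg_def by blast

lemma G_simps: "carrier (grp C n) = cG C n" "mult (grp C n) = cmul C n" "one (grp C n) = cone C n"
  by (simp_all add: grp_def)

lemma inv_def': "cinv C n x = inv\<^bsub>grp C n\<^esub> x" by (simp add: cinv_def)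

lemma mul_cl: "x \<in> cG C n \<Longrightarrow> y \<in> cG C n \<Longrightarrow> cmul C n x y \<in> cG C n"
proof -
  interpret group "grp C n" by (rule grp_ax)
  show "x \<in> cG C n \<Longrightarrow> y \<in> cG C n \<Longrightarrow> cmul C n x y \<in> cG C n" using m_closed by (simp add: G_simps)
qed

lemma one_cl: "cone C n \<in> cG C n"
proof -
  interpret group "grp C n" by (rule grp_ax)
  show ?thesis using one_closed by (simp add: G_simps)
qed

lemma mul_assoc: "x \<in> cG C n \<Longrightarrow> y \<in> cG C n \<Longrightarrow> z \<in> cG C n \<Longrightarrow>
  cmul C n (cmul C n x y) z = cmul C n x (cmul C n y z)"
proof -
  interpret group "grp C n" by (rule grp_ax)
  show "x \<in> cG C n \<Longrightarrow> y \<in> cG C n \<Longrightarrow> z \<in> cG C n \<Longrightarrow> ?thesis" using m_assoc by (simp add: G_simps)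
qed

lemma l_one': "x \<in> cG C n \<Longrightarrow> cmul C n (cone C n) x = x"
proof -
  interpret group "grp C n" by (rule grp_ax)
  show "x \<in> cG C n \<Longrightarrow> ?thesis" using l_one by (simp add: G_simps)
qed

lemma r_one': "x \<in> cG C n \<Longrightarrow> cmul C n x (cone C n) = x"
proof -
  interpret group "grp C n" by (rule grp_ax)
  show "x \<in> cG C n \<Longrightarrow> ?thesis" using r_one by (simp add: G_simps)
qed

lemma inv_cl: "x \<in> cG C n \<Longrightarrow> cinv C n x \<in> cG C n"
proof -
  interpret group "grp C n" by (rule grp_ax)
  show "x \<in> cG C n \<Longrightarrow> ?thesis" using inv_closed by (simp add: G_simps cinv_def)
qed

lemma l_inv': "x \<in> cG C n \<Longrightarrow> cmul C n (cinv C n x) x = cone C n"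
proof -
  interpret group "grp C n" by (rule grp_ax)
  show "x \<in> cG C n \<Longrightarrow> ?thesis" using l_inv by (simp add: G_simps cinv_def)
qed

lemma r_inv': "x \<in> cG C n \<Longrightarrow> cmul C n x (cinv C n x) = cone C n"
proof -
  interpret group "grp C n" by (rule grp_ax)
  show "x \<in> cG C n \<Longrightarrow> ?thesis" using r_inv by (simp add: G_simps cinv_def)
qed

lemma inv_mul: "x \<in> cG C n \<Longrightarrow> y \<in> cG C n \<Longrightarrow>
   cinv C n (cmul C n x y) = cmul C n (cinv C n y) (cinv C n x)"
proof -
  interpret group "grp C n" by (rule grp_ax)
  show "x \<in> cG C n \<Longrightarrow> y \<in> cG C n \<Longrightarrow> ?thesis" using inv_mult_group by (simp add: G_simps cinv_def)
qed

lemma inv_inv: "x \<in> cG C n \<Longrightarrow> cinv C n (cinv C n x) = x"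
proof -
  interpret group "grp C n" by (rule grp_ax)
  show "x \<in> cG C n \<Longrightarrow> ?thesis" using inv_inv by (simp add: G_simps cinv_def)
qed

lemma inv_one: "cinv C n (cone C n) = cone C n"
proof -
  interpret group "grp C n" by (rule grp_ax)
  show ?thesis using inv_one by (simp add: G_simps cinv_def)
qed

lemma idem_one: "x \<in> cG C n \<Longrightarrow> cmul C n x x = x \<Longrightarrow> x = cone C n"
proof -
  assume a: "x \<in> cG C n" "cmul C n x x = x"
  have "x = cmul C n (cinv C n x) (cmul C n x x)"
    using a(1) by (simp add: mul_assoc[symmetric] inv_cl l_inv' l_one')
  also have "\<dots> = cone C n" using a by (simp add: l_inv')
  finally show ?thesis .
qed

lemma mul_cancel_l: "x \<in> cG C n \<Longrightarrow> y \<in> cG C n \<Longrightarrow> z \<in> cG C n \<Longrightarrow>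
   cmul C n x y = cmul C n x z \<Longrightarrow> y = z"
proof -
  assume a: "x \<in> cG C n" "y \<in> cG C n" "z \<in> cG C n" "cmul C n x y = cmul C n x z"
  have "y = cmul C n (cinv C n x) (cmul C n x y)"
    using a(1,2) by (simp add: mul_assoc[symmetric] inv_cl l_inv' l_one')
  also have "\<dots> = cmul C n (cinv C n x) (cmul C n x z)" by (simp only: a(4))
  also have "\<dots> = z" using a(1,3) by (simp add: mul_assoc[symmetric] inv_cl l_inv' l_one')
  finally show ?thesis .
qed

lemma ghom: "group_hom (grp C n) (BijGroup {..n}) (cact C n)"
  by (intro group_hom.intro group_hom_axioms.intro grp_ax group_BijGroup hom_ax)

lemma pi_Bij: "g \<in> cG C n \<Longrightarrow> cact C n g \<in> Bij {..n}"
  using hom_ax[of n] by (auto simp: hom_def G_simps BijGroup_def)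

lemma pi_mul: "g \<in> cG C n \<Longrightarrow> h \<in> cG C n \<Longrightarrow>
   cact C n (cmul C n g h) = mult (BijGroup {..n}) (cact C n g) (cact C n h)"
  using hom_ax[of n] by (auto simp: hom_def G_simps)

lemma pi_mul_app: "g \<in> cG C n \<Longrightarrow> h \<in> cG C n \<Longrightarrow> x \<le> n \<Longrightarrow>
   cact C n (cmul C n g h) x = cact C n g (cact C n h x)"
  by (simp add: pi_mul bmul_app pi_Bij)

lemma pi_one: "cact C n (cone C n) = one (BijGroup {..n})"
  using group_hom.hom_one[OF ghom[of n]] by (simp add: G_simps)

lemma pi_one_app: "x \<le> n \<Longrightarrow> cact C n (cone C n) x = x"
  by (simp add: pi_one bone_app)

lemma pi_inv: "g \<in> cG C n \<Longrightarrow> cact C n (cinv C n g) = pinv n (cact C n g)"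
  using group_hom.hom_inv[OF ghom[of n], of g] by (simp add: G_simps cinv_def pinv_def)

lemma surj: "\<sigma> \<in> Bij {..n} \<Longrightarrow> \<exists>g\<in>cG C n. cact C n g = \<sigma>"
  using ax_surj[of n] by (metis imageE)

lemma s_one: "i \<le> n \<Longrightarrow> cs C n i (cone C n) = cone C (Suc n)"
proof -
  assume i: "i \<le> n"
  have "cs C n i (cone C n) = cs C n i (cmul C n (cone C n) (cone C n))" by (simp add: l_one' one_cl)
  also have "\<dots> = cmul C (Suc n) (cs C n i (cone C n)) (cs C n i (cone C n))"
    using s_mul[OF i one_cl one_cl] i by (simp add: inv_one pi_one_app)
  finally show ?thesis using idem_one s_cl[OF i one_cl] by metis
qed

lemma d_one: "i \<le> Suc n \<Longrightarrow> cd C (Suc n) i (cone C (Suc n)) = cone C n"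
proof -
  assume i: "i \<le> Suc n"
  have "cd C (Suc n) i (cone C (Suc n)) = cd C (Suc n) i (cmul C (Suc n) (cone C (Suc n)) (cone C (Suc n)))" by (simp add: l_one' one_cl)
  also have "\<dots> = cmul C n (cd C (Suc n) i (cone C (Suc n))) (cd C (Suc n) i (cone C (Suc n)))"
    using d_mul[OF i one_cl one_cl] i by (simp add: inv_one pi_one_app)
  finally show ?thesis using idem_one d_cl[OF i one_cl] by metis
qed

lemma L_one: "csL C n (cone C n) = cone C (Suc n)"
proof -
  have "csL C n (cone C n) = csL C n (cmul C n (cone C n) (cone C n))" by (simp add: l_one' one_cl)
  also have "\<dots> = cmul C (Suc n) (csL C n (cone C n)) (csL C n (cone C n))"
    using L_mul[OF one_cl one_cl] by simp
  finally show ?thesis using idem_one L_cl[OF one_cl] by metis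
qed

lemma R_one: "csR C n (cone C n) = cone C (Suc n)"
proof -
  have "csR C n (cone C n) = csR C n (cmul C n (cone C n) (cone C n))" by (simp add: l_one' one_cl)
  also have "\<dots> = cmul C (Suc n) (csR C n (cone C n)) (csR C n (cone C n))"
    using R_mul[OF one_cl one_cl] by simp
  finally show ?thesis using idem_one R_cl[OF one_cl] by metis
qed

lemma spow_cl: "i \<le> n \<Longrightarrow> g \<in> cG C n \<Longrightarrow> s_pow C m n i g \<in> cG C (n + m)"
  by (induction m) (simp_all add: s_cl)

lemma Lpow_cl: "x \<in> cG C m \<Longrightarrow> sL_pow C a m x \<in> cG C (m + a)"
  by (induction a) (simp_all add: L_cl)

lemma Rpow_cl: "x \<in> cG C m \<Longrightarrow> sR_pow C b m x \<in> cG C (m + b)"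
  by (induction b) (simp_all add: R_cl)

lemma boxp_cl: "\<beta> \<in> cG C m \<Longrightarrow> N = m + b + a \<Longrightarrow> boxp C a m b \<beta> \<in> cG C N"
  by (simp add: boxp_def Lpow_cl Rpow_cl)

lemma opc_cl: "i \<le> n \<Longrightarrow> \<alpha> \<in> cG C n \<Longrightarrow> \<beta> \<in> cG C m \<Longrightarrow> opc C n m i \<alpha> \<beta> \<in> cG C (n + m)"
  unfolding opc_def by (rule mul_cl[OF boxp_cl spow_cl]) auto

lemma Lpow_mul: "x \<in> cG C m \<Longrightarrow> y \<in> cG C m \<Longrightarrow>
  sL_pow C a m (cmul C m x y) = cmul C (m + a) (sL_pow C a m x) (sL_pow C a m y)"
  by (induction a) (simp_all add: L_mul Lpow_cl)

lemma Rpow_mul: "x \<in> cG C m \<Longrightarrow> y \<in> cG C m \<Longrightarrow>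
  sR_pow C a m (cmul C m x y) = cmul C (m + a) (sR_pow C a m x) (sR_pow C a m y)"
  by (induction a) (simp_all add: R_mul Rpow_cl)

lemma boxp_mul: "x \<in> cG C m \<Longrightarrow> y \<in> cG C m \<Longrightarrow> N = m + b + a \<Longrightarrow>
  boxp C a m b (cmul C m x y) = cmul C N (boxp C a m b x) (boxp C a m b y)"
  by (simp add: boxp_def Rpow_mul Lpow_mul Rpow_cl)

lemma Lpow_one: "sL_pow C a m (cone C m) = cone C (m + a)"
  by (induction a) (simp_all add: L_one)

lemma Rpow_one: "sR_pow C a m (cone C m) = cone C (m + a)"
  by (induction a) (simp_all add: R_one)

lemma boxp_one: "N = m + b + a \<Longrightarrow> boxp C a m b (cone C m) = cone C N"
  by (simp add: boxp_def Rpow_one Lpow_one)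

lemma spow_one: "i \<le> n \<Longrightarrow> s_pow C m n i (cone C n) = cone C (n + m)"
  by (induction m) (simp_all add: s_one)

lemma pi_spow: "i \<le> n \<Longrightarrow> g \<in> cG C n \<Longrightarrow>
  cact C (n + m) (s_pow C m n i g) = s_pow Sym m n i (cact C n g)"
  by (induction m) (simp_all add: pi_s spow_cl Sym_def)

lemma pi_Lpow: "x \<in> cG C m \<Longrightarrow> cact C (m + a) (sL_pow C a m x) = sL_pow Sym a m (cact C m x)"
  by (induction a) (simp_all add: pi_L Lpow_cl Sym_def)

lemma pi_Rpow: "x \<in> cG C m \<Longrightarrow> cact C (m + a) (sR_pow C a m x) = sR_pow Sym a m (cact C m x)"
  by (induction a) (simp_all add: pi_R Rpow_cl Sym_def)

lemma pi_boxp: "\<beta> \<in> cG C m \<Longrightarrow> N = m + b + a \<Longrightarrow>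
  cact C N (boxp C a m b \<beta>) = boxp Sym a m b (cact C m \<beta>)"
  by (simp add: boxp_def pi_Lpow pi_Rpow Rpow_cl)

lemma pi_opc: "i \<le> n \<Longrightarrow> \<alpha> \<in> cG C n \<Longrightarrow> \<beta> \<in> cG C m \<Longrightarrow>
  cact C (n + m) (opc C n m i \<alpha> \<beta>) = opc Sym n m i (cact C n \<alpha>) (cact C m \<beta>)"
proof -
  assume a: "i \<le> n" "\<alpha> \<in> cG C n" "\<beta> \<in> cG C m"
  have b: "boxp C i m (n - i) \<beta> \<in> cG C (n + m)" by (rule boxp_cl) (use a in auto)
  have pb: "cact C (n + m) (boxp C i m (n - i) \<beta>) = boxp Sym i m (n - i) (cact C m \<beta>)"
    by (rule pi_boxp) (use a in auto)
  show ?thesis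
    unfolding opc_def using a b pb
    by (simp add: pi_mul spow_cl pi_spow Sym_def)
qed

lemma spow_pinv: "i \<le> n \<Longrightarrow> g \<in> cG C n \<Longrightarrow>
  pinv (n + k) (cact C (n + k) (s_pow C k n i g)) i = pinv n (cact C n g) i"
proof (induction k)
  case 0 then show ?case by simp
next
  case (Suc k)
  have X: "s_pow C k n i g \<in> cG C (n + k)" using Suc spow_cl by blast
  have "cact C (n + Suc k) (s_pow C (Suc k) n i g) = sym_degen (n + k) i (cact C (n + k) (s_pow C k n i g))"
    using Suc X by (simp add: pi_s)
  moreover have "pinv (Suc (n + k)) (sym_degen (n + k) i (cact C (n + k) (s_pow C k n i g))) i
     = pinv (n + k) (cact C (n + k) (s_pow C k n i g)) i"
    apply (rule sdeg_pinv)
    using Suc X pi_Bij pi_s s_cl by (metis add_Suc_right trans_le_add1)+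
  ultimately show ?case using Suc by simp
qed

lemma spow_mul: "i \<le> n \<Longrightarrow> x \<in> cG C n \<Longrightarrow> y \<in> cG C n \<Longrightarrow>
  s_pow C m n i (cmul C n x y) =
  cmul C (n + m) (s_pow C m n i x) (s_pow C m n (cact C n (cinv C n x) i) y)"
proof (induction m)
  case 0 then show ?case by simp
next
  case (Suc k)
  define c where "c = cact C n (cinv C n x) i"
  have c: "c \<le> n" unfolding c_def using Suc by (simp add: pi_inv pinv_le pi_Bij)
  have X: "s_pow C k n i x \<in> cG C (n + k)" using Suc spow_cl by blast
  have Y: "s_pow C k n c y \<in> cG C (n + k)" using Suc spow_cl c by blast
  have ci: "cact C (n + k) (cinv C (n + k) (s_pow C k n i x)) i = c"
    unfolding c_def using Suc X by (simp add: pi_inv spow_pinv)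
  have "s_pow C (Suc k) n i (cmul C n x y) = cs C (n + k) i (cmul C (n + k) (s_pow C k n i x) (s_pow C k n c y))"
    using Suc by (simp add: c_def)
  also have "\<dots> = cmul C (Suc (n + k)) (cs C (n + k) i (s_pow C k n i x)) (cs C (n + k) c (s_pow C k n c y))"
    using s_mul[OF _ X Y, of i] Suc ci by simp
  finally show ?case by (simp add: c_def)
qed

subsection \<open>Transfer of bijectivity to Sym\<close>

lemma sdegS_Bij: "\<sigma> \<in> Bij {..n} \<Longrightarrow> i \<le> n \<Longrightarrow> sym_degen n i \<sigma> \<in> Bij {..Suc n}"
  using surj[of \<sigma> n] by (metis pi_s pi_Bij s_cl)

lemma faceS_Bij: "\<sigma> \<in> Bij {..Suc n} \<Longrightarrow> i \<le> Suc n \<Longrightarrow> sym_face (Suc n) i \<sigma> \<in> Bij {..n}"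
  using surj[of \<sigma> "Suc n"] by (metis pi_d pi_Bij d_cl)

lemma spowS_Bij: "\<sigma> \<in> Bij {..n} \<Longrightarrow> i \<le> n \<Longrightarrow> s_pow Sym m n i \<sigma> \<in> Bij {..n + m}"
  using surj[of \<sigma> n] by (metis pi_spow pi_Bij spow_cl)

lemma boxpS_Bij: "\<tau> \<in> Bij {..m} \<Longrightarrow> N = m + b + a \<Longrightarrow> boxp Sym a m b \<tau> \<in> Bij {..N}"
  using surj[of \<tau> m] by (metis pi_boxp pi_Bij boxp_cl)

lemma opcS_Bij: "\<sigma> \<in> Bij {..n} \<Longrightarrow> \<tau> \<in> Bij {..m} \<Longrightarrow> i \<le> n \<Longrightarrow> opc Sym n m i \<sigma> \<tau> \<in> Bij {..n + m}"
  using surj[of \<sigma> n] surj[of \<tau> m] by (metis pi_opc pi_Bij opc_cl)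

lemma spowS_app: "\<sigma> \<in> Bij {..n} \<Longrightarrow> i \<le> n \<Longrightarrow> y \<le> n + k \<Longrightarrow>
  s_pow Sym k n i \<sigma> y =
   (if y < pinv n \<sigma> i then (if \<sigma> y < i then \<sigma> y else \<sigma> y + k)
    else if y \<le> pinv n \<sigma> i + k then i + (y - pinv n \<sigma> i)
    else (if \<sigma> (y - k) < i then \<sigma> (y - k) else \<sigma> (y - k) + k))"
proof (induction k arbitrary: y)
  case 0
  have "\<sigma> (pinv n \<sigma> i) = i" using 0 app_pinv by blast
  then show ?case using 0 by (cases "y = pinv n \<sigma> i") auto
next
  case (Suc k)
  define a where "a = pinv n \<sigma> i"
  have a: "a \<le> n" "\<sigma> a = i" unfolding a_def using Suc.prems pinv_le app_pinv by blast+
  define \<rho> where "\<rho> = s_pow Sym k n i \<sigma>"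
  have \<rho>B: "\<rho> \<in> Bij {..n + k}" unfolding \<rho>_def using Suc.prems spowS_Bij by blast
  have \<rho>a: "\<rho> a = i" unfolding \<rho>_def using Suc.IH[of a] a Suc.prems by (simp add: a_def)
  have pa: "pinv (n + k) \<rho> i = a" by (rule pinv_eqI[OF \<rho>B]) (use a \<rho>a in auto)
  have st: "s_pow Sym (Suc k) n i \<sigma> y = (if y = a then i else if y = Suc a then Suc i else
      (if \<rho> (codeg a y) < i then \<rho> (codeg a y) else Suc (\<rho> (codeg a y))))"
  proof -
    have "s_pow Sym (Suc k) n i \<sigma> = sym_degen (n + k) i \<rho>" unfolding \<rho>_def by (simp add: Sym_def)
    then show ?thesis using Suc.prems by (simp add: sym_degen_def Let_def pa)
  qed
  have cd: "codeg a y \<le> n + k" using Suc.prems a by (auto simp: codeg_def)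
  have IH: "\<rho> (codeg a y) = (if codeg a y < a then (if \<sigma> (codeg a y) < i then \<sigma> (codeg a y) else \<sigma> (codeg a y) + k)
    else if codeg a y \<le> a + k then i + (codeg a y - a)
    else (if \<sigma> (codeg a y - k) < i then \<sigma> (codeg a y - k) else \<sigma> (codeg a y - k) + k))"
    unfolding \<rho>_def a_def using Suc.IH[OF Suc.prems(1,2) cd] by (simp add: a_def)
  consider "y < a" | "y = a" | "y = Suc a" | "Suc a < y" "y \<le> a + Suc k" | "a + Suc k < y" by linarith
  then show ?case
  proof cases
    case 1
    then have c: "codeg a y = y" by (simp add: codeg_def)
    have h: "y < a" using 1 by auto
    have r: "\<rho> y = (if \<sigma> y < i then \<sigma> y else \<sigma> y + k)" using IH[unfolded c] h by simp
    have eq: "s_pow Sym (Suc k) n i \<sigma> y = (if \<rho> y < i then \<rho> y else Suc (\<rho> y))"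
      using st 1 c by simp
    have "s_pow Sym (Suc k) n i \<sigma> y = (if \<sigma> y < i then \<sigma> y else \<sigma> y + Suc k)"
      using eq r by auto
    then show ?thesis using 1 by (simp add: a_def[symmetric])
  next
    case 2 then show ?thesis using st a by (simp add: a_def[symmetric])
  next
    case 3 then show ?thesis using st by (simp add: a_def[symmetric])
  next
    case 4
    then have c: "codeg a y = y - 1" by (simp add: codeg_def)
    have h: "\<not> y - 1 < a" "y - 1 \<le> a + k" using 4 by auto
    have r: "\<rho> (y - 1) = i + (y - 1 - a)" using IH[unfolded c] h by simp
    have eq: "s_pow Sym (Suc k) n i \<sigma> y = (if \<rho> (y - 1) < i then \<rho> (y - 1) else Suc (\<rho> (y - 1)))"
      using st 4 c by simp
    have "s_pow Sym (Suc k) n i \<sigma> y = Suc (i + (y - 1 - a))" using eq r by simp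
    also have "\<dots> = i + (y - a)" using 4 by simp
    finally have "s_pow Sym (Suc k) n i \<sigma> y = i + (y - a)" .
    then show ?thesis using 4 by (simp add: a_def[symmetric])
  next
    case 5
    then have c: "codeg a y = y - 1" by (simp add: codeg_def)
    have e: "y - 1 - k = y - Suc k" by simp
    have h: "\<not> y - 1 < a" "\<not> y - 1 \<le> a + k" using 5 by auto
    have r: "\<rho> (y - 1) = (if \<sigma> (y - Suc k) < i then \<sigma> (y - Suc k) else \<sigma> (y - Suc k) + k)"
      using IH[unfolded c e] h by simp
    have eq: "s_pow Sym (Suc k) n i \<sigma> y = (if \<rho> (y - 1) < i then \<rho> (y - 1) else Suc (\<rho> (y - 1)))"
      using st 5 c by simp
    have "s_pow Sym (Suc k) n i \<sigma> y = (if \<sigma> (y - Suc k) < i then \<sigma> (y - Suc k) else \<sigma> (y - Suc k) + Suc k)"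
      using eq r by auto
    then show ?thesis using 5 by (simp add: a_def[symmetric])
  qed
qed

lemma opcS_unf: "\<sigma> \<in> Bij {..n} \<Longrightarrow> \<tau> \<in> Bij {..m} \<Longrightarrow> i \<le> n \<Longrightarrow> y \<le> n + m \<Longrightarrow>
  opc Sym n m i \<sigma> \<tau> y = boxp Sym i m (n - i) \<tau> (s_pow Sym m n i \<sigma> y)"
proof -
  assume a: "\<sigma> \<in> Bij {..n}" "\<tau> \<in> Bij {..m}" "i \<le> n" "y \<le> n + m"
  have cm: "cmul Sym (n + m) = mult (BijGroup {..n + m})" by (simp add: Sym_def)
  have b1: "boxp Sym i m (n - i) \<tau> \<in> Bij {..n + m}" using a by (intro boxpS_Bij) auto
  have b2: "s_pow Sym m n i \<sigma> \<in> Bij {..n + m}" using a by (intro spowS_Bij) auto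
  show ?thesis unfolding opc_def cm using bmul_app[OF b1 b2 a(4)] .
qed

lemma opcS_in: "\<sigma> \<in> Bij {..n} \<Longrightarrow> \<tau> \<in> Bij {..m} \<Longrightarrow> i \<le> n \<Longrightarrow> t \<le> m \<Longrightarrow>
  opc Sym n m i \<sigma> \<tau> (pinv n \<sigma> i + t) = i + \<tau> t"
proof -
  assume a: "\<sigma> \<in> Bij {..n}" "\<tau> \<in> Bij {..m}" "i \<le> n" "t \<le> m"
  have p: "pinv n \<sigma> i \<le> n" using a pinv_le by blast
  have "opc Sym n m i \<sigma> \<tau> (pinv n \<sigma> i + t) = boxp Sym i m (n - i) \<tau> (i + t)"
    using a p by (simp add: opcS_unf spowS_app)
  also have "\<dots> = i + \<tau> t" using a by (simp add: boxpS_app)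
  finally show ?thesis .
qed

lemma opcS_lo: "\<sigma> \<in> Bij {..n} \<Longrightarrow> \<tau> \<in> Bij {..m} \<Longrightarrow> i \<le> n \<Longrightarrow> y < pinv n \<sigma> i \<Longrightarrow>
  opc Sym n m i \<sigma> \<tau> y = (if \<sigma> y < i then \<sigma> y else \<sigma> y + m)"
proof -
  assume a: "\<sigma> \<in> Bij {..n}" "\<tau> \<in> Bij {..m}" "i \<le> n" "y < pinv n \<sigma> i"
  have p: "pinv n \<sigma> i \<le> n" using a pinv_le by blast
  have ne: "\<sigma> y \<noteq> i" using a p pinv_eqI[OF a(1), of y i] by auto
  have le: "\<sigma> y \<le> n" using a p by (intro Bij_le[OF a(1)]) auto
  have "opc Sym n m i \<sigma> \<tau> y = boxp Sym i m (n - i) \<tau> (if \<sigma> y < i then \<sigma> y else \<sigma> y + m)"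
    using a p by (simp add: opcS_unf spowS_app)
  also have "\<dots> = (if \<sigma> y < i then \<sigma> y else \<sigma> y + m)" using a ne le by (simp add: boxpS_app)
  finally show ?thesis .
qed

lemma opcS_hi: "\<sigma> \<in> Bij {..n} \<Longrightarrow> \<tau> \<in> Bij {..m} \<Longrightarrow> i \<le> n \<Longrightarrow> pinv n \<sigma> i < y \<Longrightarrow> y \<le> n \<Longrightarrow>
  opc Sym n m i \<sigma> \<tau> (y + m) = (if \<sigma> y < i then \<sigma> y else \<sigma> y + m)"
proof -
  assume a: "\<sigma> \<in> Bij {..n}" "\<tau> \<in> Bij {..m}" "i \<le> n" "pinv n \<sigma> i < y" "y \<le> n"
  have ne: "\<sigma> y \<noteq> i" using a pinv_eqI[OF a(1), of y i] by auto
  have le: "\<sigma> y \<le> n" using a by (intro Bij_le[OF a(1)]) auto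
  have "opc Sym n m i \<sigma> \<tau> (y + m) = boxp Sym i m (n - i) \<tau> (if \<sigma> y < i then \<sigma> y else \<sigma> y + m)"
    using a by (simp add: opcS_unf spowS_app)
  also have "\<dots> = (if \<sigma> y < i then \<sigma> y else \<sigma> y + m)" using a ne le by (simp add: boxpS_app)
  finally show ?thesis .
qed

lemma E1: "\<sigma> \<in> Bij {..n} \<Longrightarrow> \<tau> \<in> Bij {..m} \<Longrightarrow> i \<le> n \<Longrightarrow> j \<le> m \<Longrightarrow>
  pinv (n + m) (opc Sym n m i \<sigma> \<tau>) (i + j) = pinv n \<sigma> i + pinv m \<tau> j"
proof -
  assume a: "\<sigma> \<in> Bij {..n}" "\<tau> \<in> Bij {..m}" "i \<le> n" "j \<le> m"
  have p: "pinv n \<sigma> i \<le> n" "pinv m \<tau> j \<le> m" using a pinv_le by blast+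
  show ?thesis
    by (rule pinv_eqI[OF opcS_Bij[OF a(1-3)]]) (use a p in \<open>simp_all add: opcS_in app_pinv\<close>)
qed

lemma E2: "\<sigma> \<in> Bij {..n} \<Longrightarrow> \<tau> \<in> Bij {..m} \<Longrightarrow> i < k \<Longrightarrow> k \<le> n \<Longrightarrow>
  pinv (n + m) (opc Sym n m i \<sigma> \<tau>) (k + m) =
   (if pinv n \<sigma> k < pinv n \<sigma> i then pinv n \<sigma> k else pinv n \<sigma> k + m)"
proof -
  assume a: "\<sigma> \<in> Bij {..n}" "\<tau> \<in> Bij {..m}" "i < k" "k \<le> n"
  define p where "p = pinv n \<sigma> i"
  define q where "q = pinv n \<sigma> k"
  have p: "p \<le> n" "q \<le> n" unfolding p_def q_def using a pinv_le by auto
  have si: "\<sigma> p = i" unfolding p_def using a app_pinv by auto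
  have sk: "\<sigma> q = k" unfolding q_def using a app_pinv by auto
  have ne: "q \<noteq> p" using a si sk by auto
  have B: "opc Sym n m i \<sigma> \<tau> \<in> Bij {..n + m}" using a opcS_Bij by auto
  show ?thesis
  proof (cases "q < p")
    case True
    have "opc Sym n m i \<sigma> \<tau> q = k + m" using opcS_lo[OF a(1,2), of i q] True a sk p_def by simp
    then have "pinv (n + m) (opc Sym n m i \<sigma> \<tau>) (k + m) = q" using p by (intro pinv_eqI[OF B]) auto
    then show ?thesis using True by (simp add: p_def q_def)
  next
    case False
    then have lt: "p < q" using ne by simp
    have "opc Sym n m i \<sigma> \<tau> (q + m) = k + m" using opcS_hi[OF a(1,2), of i q] lt a sk p p_def by simp
    then have "pinv (n + m) (opc Sym n m i \<sigma> \<tau>) (k + m) = q + m" using p by (intro pinv_eqI[OF B]) auto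
    then show ?thesis using False by (simp add: p_def q_def)
  qed
qed

lemma E3: "\<sigma> \<in> Bij {..n} \<Longrightarrow> \<tau> \<in> Bij {..m} \<Longrightarrow> i < k \<Longrightarrow> k \<le> n \<Longrightarrow>
  pinv (n + m) (opc Sym n m k \<sigma> \<tau>) i =
   (if pinv n \<sigma> i < pinv n \<sigma> k then pinv n \<sigma> i else pinv n \<sigma> i + m)"
proof -
  assume a: "\<sigma> \<in> Bij {..n}" "\<tau> \<in> Bij {..m}" "i < k" "k \<le> n"
  define p where "p = pinv n \<sigma> i"
  define q where "q = pinv n \<sigma> k"
  have p: "p \<le> n" "q \<le> n" unfolding p_def q_def using a pinv_le by auto
  have si: "\<sigma> p = i" unfolding p_def using a app_pinv by auto
  have sk: "\<sigma> q = k" unfolding q_def using a app_pinv by auto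
  have ne: "q \<noteq> p" using a si sk by auto
  have B: "opc Sym n m k \<sigma> \<tau> \<in> Bij {..n + m}" using a opcS_Bij by auto
  show ?thesis
  proof (cases "p < q")
    case True
    have "opc Sym n m k \<sigma> \<tau> p = i" using opcS_lo[OF a(1,2), of k p] True a si q_def by simp
    then have "pinv (n + m) (opc Sym n m k \<sigma> \<tau>) i = p" using p by (intro pinv_eqI[OF B]) auto
    then show ?thesis using True by (simp add: p_def q_def)
  next
    case False
    then have lt: "q < p" using ne by simp
    have "opc Sym n m k \<sigma> \<tau> (p + m) = i" using opcS_hi[OF a(1,2), of k p] lt a si p q_def by simp
    then have "pinv (n + m) (opc Sym n m k \<sigma> \<tau>) i = p + m" using p by (intro pinv_eqI[OF B]) auto
    then show ?thesis using False by (simp add: p_def q_def)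
  qed
qed

lemma E4: "\<sigma> \<in> Bij {..Suc n} \<Longrightarrow> i \<le> Suc n \<Longrightarrow> j \<le> Suc n \<Longrightarrow> i \<noteq> j \<Longrightarrow>
  pinv n (sym_face (Suc n) j \<sigma>) (if i < j then i else i - 1) =
  (if pinv (Suc n) \<sigma> i < pinv (Suc n) \<sigma> j then pinv (Suc n) \<sigma> i else pinv (Suc n) \<sigma> i - 1)"
proof -
  assume a: "\<sigma> \<in> Bij {..Suc n}" "i \<le> Suc n" "j \<le> Suc n" "i \<noteq> j"
  define p where "p = pinv (Suc n) \<sigma> i"
  define q where "q = pinv (Suc n) \<sigma> j"
  have pq: "p \<le> Suc n" "q \<le> Suc n" "\<sigma> p = i" "\<sigma> q = j" unfolding p_def q_def using a pinv_le app_pinv by auto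
  have ne: "p \<noteq> q" using pq a by auto
  have B: "sym_face (Suc n) j \<sigma> \<in> Bij {..n}" using a faceS_Bij by auto
  have y: "(if p < q then p else p - 1) \<le> n" using pq ne by auto
  have val: "sym_face (Suc n) j \<sigma> (if p < q then p else p - 1) = (if i < j then i else i - 1)"
    using y pq ne by (auto simp: sym_face_def delta_def delta_inv_def q_def[symmetric])
  show ?thesis unfolding p_def[symmetric] q_def[symmetric]
    by (rule pinv_eqI[OF B y val])
qed

lemma Lpow_add: "sL_pow C (a + a') m x = sL_pow C a' (m + a) (sL_pow C a m x)"
  by (induction a') (simp_all add: add.assoc)

lemma Rpow_add: "sR_pow C (a + a') m x = sR_pow C a' (m + a) (sR_pow C a m x)"
  by (induction a') (simp_all add: add.assoc)

lemma spow_add: "s_pow C (m + m') n i x = s_pow C m' (n + m) i (s_pow C m n i x)"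
  by (induction m') (simp_all add: add.assoc)

lemma RL1: "z \<in> cG C M \<Longrightarrow> N = M + a \<Longrightarrow> csR C N (sL_pow C a M z) = sL_pow C a (Suc M) (csR C M z)"
proof (induction a arbitrary: N)
  case 0 then show ?case by simp
next
  case (Suc a)
  have Y: "sL_pow C a M z \<in> cG C (M + a)" using Suc Lpow_cl by blast
  have "csR C N (sL_pow C (Suc a) M z) = csR C (Suc (M + a)) (csL C (M + a) (sL_pow C a M z))"
    using Suc by simp
  also have "\<dots> = csL C (Suc (M + a)) (csR C (M + a) (sL_pow C a M z))" using LR[OF Y] by simp
  also have "\<dots> = sL_pow C (Suc a) (Suc M) (csR C M z)" using Suc by simp
  finally show ?case .
qed

lemma RL: "z \<in> cG C M \<Longrightarrow> sR_pow C r (M + a) (sL_pow C a M z) = sL_pow C a (M + r) (sR_pow C r M z)"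
proof (induction r)
  case 0 then show ?case by simp
next
  case (Suc r)
  have Y: "sR_pow C r M z \<in> cG C (M + r)" using Suc Rpow_cl by blast
  have "sR_pow C (Suc r) (M + a) (sL_pow C a M z) = csR C (M + a + r) (sL_pow C a (M + r) (sR_pow C r M z))"
    using Suc by simp
  also have "\<dots> = sL_pow C a (Suc (M + r)) (csR C (M + r) (sR_pow C r M z))"
    by (rule RL1[OF Y]) simp
  finally show ?case by simp
qed

lemma sL1: "z \<in> cG C m \<Longrightarrow> p \<le> m \<Longrightarrow> N = m + a \<Longrightarrow>
  cs C N (a + p) (sL_pow C a m z) = sL_pow C a (Suc m) (cs C m p z)"
proof (induction a arbitrary: N)
  case 0 then show ?case by simp
next
  case (Suc a)
  have Y: "sL_pow C a m z \<in> cG C (m + a)" using Suc Lpow_cl by blast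
  have "cs C N (Suc a + p) (sL_pow C (Suc a) m z) = cs C (Suc (m + a)) (Suc (a + p)) (csL C (m + a) (sL_pow C a m z))"
    using Suc by simp
  also have "\<dots> = csL C (Suc (m + a)) (cs C (m + a) (a + p) (sL_pow C a m z))"
    using Ls[OF _ Y, of "a + p"] Suc by simp
  also have "\<dots> = sL_pow C (Suc a) (Suc m) (cs C m p z)" using Suc by simp
  finally show ?case .
qed

lemma sLn: "z \<in> cG C m \<Longrightarrow> p \<le> m \<Longrightarrow>
  s_pow C n (m + a) (a + p) (sL_pow C a m z) = sL_pow C a (m + n) (s_pow C n m p z)"
proof (induction n)
  case 0 then show ?case by simp
next
  case (Suc n)
  have Y: "s_pow C n m p z \<in> cG C (m + n)" using Suc spow_cl by blast
  have "s_pow C (Suc n) (m + a) (a + p) (sL_pow C a m z) = cs C (m + a + n) (a + p) (sL_pow C a (m + n) (s_pow C n m p z))"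
    using Suc by simp
  also have "\<dots> = sL_pow C a (Suc (m + n)) (cs C (m + n) p (s_pow C n m p z))"
    by (rule sL1[OF Y]) (use Suc in auto)
  finally show ?case by simp
qed

lemma sR1: "z \<in> cG C m \<Longrightarrow> p \<le> m \<Longrightarrow> N = m + r \<Longrightarrow>
  cs C N p (sR_pow C r m z) = sR_pow C r (Suc m) (cs C m p z)"
proof (induction r arbitrary: N)
  case 0 then show ?case by simp
next
  case (Suc r)
  have Y: "sR_pow C r m z \<in> cG C (m + r)" using Suc Rpow_cl by blast
  have "cs C N p (sR_pow C (Suc r) m z) = cs C (Suc (m + r)) p (csR C (m + r) (sR_pow C r m z))"
    using Suc by simp
  also have "\<dots> = csR C (Suc (m + r)) (cs C (m + r) p (sR_pow C r m z))"
    using sR[OF _ Y, of p] Suc by simp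
  also have "\<dots> = sR_pow C (Suc r) (Suc m) (cs C m p z)" using Suc by simp
  finally show ?case .
qed

lemma sRn: "z \<in> cG C m \<Longrightarrow> p \<le> m \<Longrightarrow>
  s_pow C n (m + r) p (sR_pow C r m z) = sR_pow C r (m + n) (s_pow C n m p z)"
proof (induction n)
  case 0 then show ?case by simp
next
  case (Suc n)
  have Y: "s_pow C n m p z \<in> cG C (m + n)" using Suc spow_cl by blast
  have "s_pow C (Suc n) (m + r) p (sR_pow C r m z) = cs C (m + r + n) p (sR_pow C r (m + n) (s_pow C n m p z))"
    using Suc by simp
  also have "\<dots> = sR_pow C r (Suc (m + n)) (cs C (m + n) p (s_pow C n m p z))"
    by (rule sR1[OF Y]) (use Suc in auto)
  finally show ?case by simp
qed

lemma s_box: "\<beta> \<in> cG C m \<Longrightarrow> b \<le> m \<Longrightarrow>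
  s_pow C n (m + r + a) (a + b) (boxp C a m r \<beta>) = boxp C a (m + n) r (s_pow C n m b \<beta>)"
proof -
  assume a: "\<beta> \<in> cG C m" "b \<le> m"
  have Z: "sR_pow C r m \<beta> \<in> cG C (m + r)" using a Rpow_cl by blast
  have "s_pow C n (m + r + a) (a + b) (boxp C a m r \<beta>) = sL_pow C a (m + r + n) (s_pow C n (m + r) b (sR_pow C r m \<beta>))"
    unfolding boxp_def using sLn[OF Z, of b n a] a by simp
  also have "\<dots> = sL_pow C a (m + r + n) (sR_pow C r (m + n) (s_pow C n m b \<beta>))"
    using sRn[OF a] by simp
  also have "m + r + n = m + n + r" by simp
  finally show ?thesis unfolding boxp_def .
qed

lemma sRtop1: "z \<in> cG C m \<Longrightarrow> m < p \<Longrightarrow> p \<le> m + r \<Longrightarrow>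
  cs C (m + r) p (sR_pow C r m z) = sR_pow C (Suc r) m z"
proof (induction r)
  case 0 then show ?case by simp
next
  case (Suc r)
  have Y: "sR_pow C r m z \<in> cG C (m + r)" using Suc Rpow_cl by blast
  show ?case
  proof (cases "p = Suc (m + r)")
    case True
    then show ?thesis using sRtop[OF Y] by simp
  next
    case False
    then have "p \<le> m + r" using Suc by simp
    then show ?thesis using sR[OF _ Y, of p] Suc by simp
  qed
qed

lemma sRtopn: "z \<in> cG C m \<Longrightarrow> m < p \<Longrightarrow> p \<le> m + r \<Longrightarrow>
  s_pow C n (m + r) p (sR_pow C r m z) = sR_pow C (r + n) m z"
proof (induction n)
  case 0 then show ?case by simp
next
  case (Suc n)
  have "s_pow C (Suc n) (m + r) p (sR_pow C r m z) = cs C (m + (r + n)) p (sR_pow C (r + n) m z)"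
    using Suc by (simp add: add.assoc)
  also have "\<dots> = sR_pow C (Suc (r + n)) m z" by (rule sRtop1) (use Suc in auto)
  finally show ?case by simp
qed

lemma sLlo1: "z \<in> cG C M \<Longrightarrow> p < a \<Longrightarrow>
  cs C (M + a) p (sL_pow C a M z) = sL_pow C (Suc a) M z"
proof (induction a arbitrary: p)
  case 0 then show ?case by simp
next
  case (Suc a)
  have Y: "sL_pow C a M z \<in> cG C (M + a)" using Suc Lpow_cl by blast
  show ?case
  proof (cases p)
    case 0
    then show ?thesis using LL[OF Y] by simp
  next
    case (Suc p')
    then have "p' < a" using Suc.prems by simp
    have "cs C (M + Suc a) p (sL_pow C (Suc a) M z) = cs C (Suc (M + a)) (Suc p') (csL C (M + a) (sL_pow C a M z))"
      using Suc by simp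
    also have "\<dots> = csL C (Suc (M + a)) (cs C (M + a) p' (sL_pow C a M z))"
      using Ls[OF _ Y, of p'] \<open>p' < a\<close> by simp
    also have "\<dots> = csL C (Suc (M + a)) (sL_pow C (Suc a) M z)"
      using Suc.IH[OF Suc.prems(1) \<open>p' < a\<close>] by simp
    finally show ?thesis by simp
  qed
qed

lemma sLlon: "z \<in> cG C M \<Longrightarrow> p < a \<Longrightarrow>
  s_pow C n (M + a) p (sL_pow C a M z) = sL_pow C (a + n) M z"
proof (induction n)
  case 0 then show ?case by simp
next
  case (Suc n)
  have "s_pow C (Suc n) (M + a) p (sL_pow C a M z) = cs C (M + (a + n)) p (sL_pow C (a + n) M z)"
    using Suc by (simp add: add.assoc)
  also have "\<dots> = sL_pow C (Suc (a + n)) M z" by (rule sLlo1) (use Suc in auto)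
  finally show ?case by simp
qed

lemma ss_same1: "\<alpha> \<in> cG C l \<Longrightarrow> a \<le> l \<Longrightarrow> c \<le> m \<Longrightarrow>
  cs C (l + m) (a + c) (s_pow C m l a \<alpha>) = s_pow C (Suc m) l a \<alpha>"
proof (induction m arbitrary: c)
  case 0 then show ?case by simp
next
  case (Suc m)
  have Y: "s_pow C m l a \<alpha> \<in> cG C (l + m)" using Suc spow_cl by blast
  show ?case
  proof (cases c)
    case 0 then show ?thesis by simp
  next
    case (Suc c')
    then have c': "c' \<le> m" using Suc.prems by simp
    have "cs C (l + Suc m) (a + c) (s_pow C (Suc m) l a \<alpha>) = cs C (Suc (l + m)) (Suc (a + c')) (cs C (l + m) a (s_pow C m l a \<alpha>))"
      using Suc by simp
    also have "\<dots> = cs C (Suc (l + m)) a (cs C (l + m) (a + c') (s_pow C m l a \<alpha>))"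
      using ss[OF _ _ Y, of a "a + c'"] Suc.prems c' by simp
    also have "\<dots> = cs C (Suc (l + m)) a (s_pow C (Suc m) l a \<alpha>)"
      using Suc.IH[OF Suc.prems(1,2) c'] by simp
    finally show ?thesis by simp
  qed
qed

lemma ss_same: "\<alpha> \<in> cG C l \<Longrightarrow> a \<le> l \<Longrightarrow> c \<le> m \<Longrightarrow>
  s_pow C n (l + m) (a + c) (s_pow C m l a \<alpha>) = s_pow C (m + n) l a \<alpha>"
proof (induction n)
  case 0 then show ?case by simp
next
  case (Suc n)
  have "s_pow C (Suc n) (l + m) (a + c) (s_pow C m l a \<alpha>) = cs C (l + (m + n)) (a + c) (s_pow C (m + n) l a \<alpha>)"
    using Suc by (simp add: add.assoc)
  also have "\<dots> = s_pow C (Suc (m + n)) l a \<alpha>" by (rule ss_same1) (use Suc in auto)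
  finally show ?case by simp
qed

lemma ss_comm1: "y \<in> cG C l \<Longrightarrow> a \<le> p \<Longrightarrow> p \<le> l \<Longrightarrow> N = l + m \<Longrightarrow>
  cs C N (p + m) (s_pow C m l a y) = s_pow C m (Suc l) a (cs C l p y)"
proof (induction m arbitrary: N)
  case 0 then show ?case by simp
next
  case (Suc m)
  have Y: "s_pow C m l a y \<in> cG C (l + m)" using Suc spow_cl by (meson order_trans)
  have "cs C N (p + Suc m) (s_pow C (Suc m) l a y) = cs C (Suc (l + m)) (Suc (p + m)) (cs C (l + m) a (s_pow C m l a y))"
    using Suc by simp
  also have "\<dots> = cs C (Suc (l + m)) a (cs C (l + m) (p + m) (s_pow C m l a y))"
    using ss[OF _ _ Y, of a "p + m"] Suc.prems by simp
  also have "\<dots> = cs C (Suc (l + m)) a (s_pow C m (Suc l) a (cs C l p y))"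
    using Suc.IH[OF Suc.prems(1-3)] by simp
  finally show ?case by simp
qed

lemma ss_comm: "\<alpha> \<in> cG C l \<Longrightarrow> a \<le> b \<Longrightarrow> b \<le> l \<Longrightarrow>
  s_pow C n (l + m) (b + m) (s_pow C m l a \<alpha>) = s_pow C m (l + n) a (s_pow C n l b \<alpha>)"
proof (induction n)
  case 0 then show ?case by simp
next
  case (Suc n)
  have Y: "s_pow C n l b \<alpha> \<in> cG C (l + n)" using Suc spow_cl by blast
  have "s_pow C (Suc n) (l + m) (b + m) (s_pow C m l a \<alpha>) = cs C (l + m + n) (b + m) (s_pow C m (l + n) a (s_pow C n l b \<alpha>))"
    using Suc by simp
  also have "\<dots> = s_pow C m (Suc (l + n)) a (cs C (l + n) b (s_pow C n l b \<alpha>))"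
    by (rule ss_comm1[OF Y]) (use Suc in auto)
  finally show ?case by simp
qed

lemma d_spow_in: "\<alpha> \<in> cG C l \<Longrightarrow> a \<le> l \<Longrightarrow> c \<le> Suc m \<Longrightarrow>
  cd C (l + Suc m) (a + c) (s_pow C (Suc m) l a \<alpha>) = s_pow C m l a \<alpha>"
proof (induction m arbitrary: c)
  case 0
  then consider "c = 0" | "c = 1" by linarith
  then show ?case using 0 ds_eq1[of a l \<alpha>] ds_eq2[of a l \<alpha>] by cases simp_all
next
  case (Suc m)
  have Y: "s_pow C (Suc m) l a \<alpha> \<in> cG C (Suc (l + m))" using Suc spow_cl[of a l \<alpha> "Suc m"] by simp
  have e: "cd C (l + Suc (Suc m)) (a + c) (s_pow C (Suc (Suc m)) l a \<alpha>) =
     cd C (Suc (Suc (l + m))) (a + c) (cs C (Suc (l + m)) a (s_pow C (Suc m) l a \<alpha>))" by simp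
  consider "c = 0" | "c = 1" | "2 \<le> c" by linarith
  then show ?case
  proof cases
    case 1 then show ?thesis using e ds_eq1[OF _ Y, of a] Suc by simp
  next
    case 2 then show ?thesis using e ds_eq2[OF _ Y, of a] Suc by simp
  next
    case 3
    have "cd C (Suc (Suc (l + m))) (a + c) (cs C (Suc (l + m)) a (s_pow C (Suc m) l a \<alpha>))
       = cs C (l + m) a (cd C (Suc (l + m)) (a + c - 1) (s_pow C (Suc m) l a \<alpha>))"
      using ds_gt[OF _ _ Y, of a "a + c"] 3 Suc.prems by simp
    also have "a + c - 1 = a + (c - 1)" using 3 by simp
    also have "cd C (Suc (l + m)) (a + (c - 1)) (s_pow C (Suc m) l a \<alpha>) = s_pow C m l a \<alpha>"
      using Suc.IH[OF Suc.prems(1,2), of "c - 1"] Suc.prems by simp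
    finally show ?thesis using e by simp
  qed
qed

lemma d_spow_lo: "\<alpha> \<in> cG C (Suc l) \<Longrightarrow> c < b \<Longrightarrow> b \<le> Suc l \<Longrightarrow>
  cd C (Suc l + n) c (s_pow C n (Suc l) b \<alpha>) = s_pow C n l (b - 1) (cd C (Suc l) c \<alpha>)"
proof (induction n)
  case 0 then show ?case by simp
next
  case (Suc n)
  have Y: "s_pow C n (Suc l) b \<alpha> \<in> cG C (Suc (l + n))" using Suc spow_cl[of b "Suc l" \<alpha> n] by simp
  have "cd C (Suc l + Suc n) c (s_pow C (Suc n) (Suc l) b \<alpha>) = cd C (Suc (Suc (l + n))) c (cs C (Suc (l + n)) b (s_pow C n (Suc l) b \<alpha>))"
    by simp
  also have "\<dots> = cs C (l + n) (b - 1) (cd C (Suc (l + n)) c (s_pow C n (Suc l) b \<alpha>))"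
    using ds_lt[OF _ _ Y, of c b] Suc.prems by simp
  also have "\<dots> = cs C (l + n) (b - 1) (s_pow C n l (b - 1) (cd C (Suc l) c \<alpha>))"
    using Suc.IH Suc.prems by simp
  finally show ?case by simp
qed

lemma d_spow_hi: "\<alpha> \<in> cG C (Suc l) \<Longrightarrow> b < c \<Longrightarrow> c \<le> Suc l \<Longrightarrow>
  cd C (Suc l + n) (c + n) (s_pow C n (Suc l) b \<alpha>) = s_pow C n l b (cd C (Suc l) c \<alpha>)"
proof (induction n)
  case 0 then show ?case by simp
next
  case (Suc n)
  have Y: "s_pow C n (Suc l) b \<alpha> \<in> cG C (Suc (l + n))" using Suc spow_cl[of b "Suc l" \<alpha> n] by simp
  have "cd C (Suc l + Suc n) (c + Suc n) (s_pow C (Suc n) (Suc l) b \<alpha>) = cd C (Suc (Suc (l + n))) (c + Suc n) (cs C (Suc (l + n)) b (s_pow C n (Suc l) b \<alpha>))"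
    by simp
  also have "\<dots> = cs C (l + n) b (cd C (Suc (l + n)) (c + n) (s_pow C n (Suc l) b \<alpha>))"
    using ds_gt[OF _ _ Y, of b "c + Suc n"] Suc.prems by simp
  also have "\<dots> = cs C (l + n) b (s_pow C n l b (cd C (Suc l) c \<alpha>))"
    using Suc.IH Suc.prems by simp
  finally show ?case by simp
qed

lemma dL_lo: "z \<in> cG C M \<Longrightarrow> c < a \<Longrightarrow> cd C (M + a) c (sL_pow C a M z) = sL_pow C (a - 1) M z"
proof (induction a arbitrary: c)
  case 0 then show ?case by simp
next
  case (Suc a)
  have Y: "sL_pow C a M z \<in> cG C (M + a)" using Suc Lpow_cl by blast
  show ?case
  proof (cases c)
    case 0 then show ?thesis using dL0[OF Y] by simp
  next
    case (Suc c')
    then have c': "c' < a" using Suc.prems by simp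
    then obtain a' where a': "a = Suc a'" by (cases a) auto
    have Y': "sL_pow C a M z \<in> cG C (Suc (M + a'))" using Y a' by simp
    have "cd C (M + Suc a) c (sL_pow C (Suc a) M z) = cd C (Suc (Suc (M + a'))) (Suc c') (csL C (Suc (M + a')) (sL_pow C a M z))"
      using Suc a' by simp
    also have "\<dots> = csL C (M + a') (cd C (Suc (M + a')) c' (sL_pow C a M z))"
      using dL[OF _ Y', of c'] c' a' by simp
    also have "cd C (Suc (M + a')) c' (sL_pow C a M z) = sL_pow C a' M z"
      using Suc.IH[OF Suc.prems(1) c'] a' by simp
    finally show ?thesis using a' by simp
  qed
qed

lemma dL_hi: "z \<in> cG C (Suc M) \<Longrightarrow> p \<le> Suc M \<Longrightarrow>
  cd C (Suc M + a) (a + p) (sL_pow C a (Suc M) z) = sL_pow C a M (cd C (Suc M) p z)"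
proof (induction a)
  case 0 then show ?case by simp
next
  case (Suc a)
  have Y: "sL_pow C a (Suc M) z \<in> cG C (Suc (M + a))" using Suc Lpow_cl[of z "Suc M" a] by simp
  have "cd C (Suc M + Suc a) (Suc a + p) (sL_pow C (Suc a) (Suc M) z) = cd C (Suc (Suc (M + a))) (Suc (a + p)) (csL C (Suc (M + a)) (sL_pow C a (Suc M) z))"
    by simp
  also have "\<dots> = csL C (M + a) (cd C (Suc (M + a)) (a + p) (sL_pow C a (Suc M) z))"
    using dL[OF _ Y, of "a + p"] Suc.prems by simp
  also have "\<dots> = csL C (M + a) (sL_pow C a M (cd C (Suc M) p z))" using Suc by simp
  finally show ?case by simp
qed

lemma dR_lo: "z \<in> cG C (Suc M) \<Longrightarrow> p \<le> Suc M \<Longrightarrow>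
  cd C (Suc M + r) p (sR_pow C r (Suc M) z) = sR_pow C r M (cd C (Suc M) p z)"
proof (induction r)
  case 0 then show ?case by simp
next
  case (Suc r)
  have Y: "sR_pow C r (Suc M) z \<in> cG C (Suc (M + r))" using Suc Rpow_cl[of z "Suc M" r] by simp
  have "cd C (Suc M + Suc r) p (sR_pow C (Suc r) (Suc M) z) = cd C (Suc (Suc (M + r))) p (csR C (Suc (M + r)) (sR_pow C r (Suc M) z))"
    by simp
  also have "\<dots> = csR C (M + r) (cd C (Suc (M + r)) p (sR_pow C r (Suc M) z))"
    using dR[OF _ Y, of p] Suc.prems by simp
  also have "\<dots> = csR C (M + r) (sR_pow C r M (cd C (Suc M) p z))" using Suc by simp
  finally show ?case by simp
qed

lemma dR_hi: "z \<in> cG C M \<Longrightarrow> M < p \<Longrightarrow> p \<le> M + Suc r \<Longrightarrow>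
  cd C (M + Suc r) p (sR_pow C (Suc r) M z) = sR_pow C r M z"
proof (induction r)
  case 0
  then have "p = Suc M" by simp
  then show ?case using dRtop[OF 0(1)] by simp
next
  case (Suc r)
  have Y: "sR_pow C (Suc r) M z \<in> cG C (Suc (M + r))" using Suc Rpow_cl[of z M "Suc r"] by simp
  show ?case
  proof (cases "p = M + Suc (Suc r)")
    case True then show ?thesis using dRtop[OF Y] by simp
  next
    case False
    then have p: "p \<le> Suc (M + r)" using Suc.prems by simp
    have "cd C (M + Suc (Suc r)) p (sR_pow C (Suc (Suc r)) M z) = cd C (Suc (Suc (M + r))) p (csR C (Suc (M + r)) (sR_pow C (Suc r) M z))"
      by simp
    also have "\<dots> = csR C (M + r) (cd C (Suc (M + r)) p (sR_pow C (Suc r) M z))"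
      using dR[OF p Y] by simp
    also have "\<dots> = csR C (M + r) (sR_pow C r M z)" using Suc.IH Suc.prems p by simp
    finally show ?thesis by simp
  qed
qed

lemma dbox_in: "\<beta> \<in> cG C (Suc m) \<Longrightarrow> b \<le> Suc m \<Longrightarrow>
  cd C (Suc m + r + a) (a + b) (boxp C a (Suc m) r \<beta>) = boxp C a m r (cd C (Suc m) b \<beta>)"
proof -
  assume h: "\<beta> \<in> cG C (Suc m)" "b \<le> Suc m"
  have Z: "sR_pow C r (Suc m) \<beta> \<in> cG C (Suc (m + r))" using h Rpow_cl[of \<beta> "Suc m" r] by simp
  have "cd C (Suc m + r + a) (a + b) (boxp C a (Suc m) r \<beta>) =
     cd C (Suc (m + r) + a) (a + b) (sL_pow C a (Suc (m + r)) (sR_pow C r (Suc m) \<beta>))"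
    by (simp add: boxp_def)
  also have "\<dots> = sL_pow C a (m + r) (cd C (Suc (m + r)) b (sR_pow C r (Suc m) \<beta>))"
    using dL_hi[OF Z, of b a] h by simp
  also have "cd C (Suc (m + r)) b (sR_pow C r (Suc m) \<beta>) = sR_pow C r m (cd C (Suc m) b \<beta>)"
    using dR_lo[OF h] by simp
  finally show ?thesis by (simp add: boxp_def)
qed

lemma dbox_lo: "\<beta> \<in> cG C m \<Longrightarrow> c < a \<Longrightarrow>
  cd C (m + r + a) c (boxp C a m r \<beta>) = boxp C (a - 1) m r \<beta>"
  unfolding boxp_def by (rule dL_lo[OF Rpow_cl])

lemma dbox_hi: "\<beta> \<in> cG C m \<Longrightarrow> a + m < c \<Longrightarrow> c \<le> a + m + Suc r \<Longrightarrow>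
  cd C (m + Suc r + a) c (boxp C a m (Suc r) \<beta>) = boxp C a m r \<beta>"
proof -
  assume h: "\<beta> \<in> cG C m" "a + m < c" "c \<le> a + m + Suc r"
  define p where "p = c - a"
  have cp: "c = a + p" "m < p" "p \<le> Suc (m + r)" using h unfolding p_def by auto
  have Z: "sR_pow C (Suc r) m \<beta> \<in> cG C (Suc (m + r))" using h Rpow_cl[of \<beta> m "Suc r"] by simp
  have "cd C (m + Suc r + a) c (boxp C a m (Suc r) \<beta>) =
     cd C (Suc (m + r) + a) (a + p) (sL_pow C a (Suc (m + r)) (sR_pow C (Suc r) m \<beta>))"
    by (simp add: boxp_def cp)
  also have "\<dots> = sL_pow C a (m + r) (cd C (Suc (m + r)) p (sR_pow C (Suc r) m \<beta>))"
    using dL_hi[OF Z cp(3)] by simp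
  also have "cd C (Suc (m + r)) p (sR_pow C (Suc r) m \<beta>) = sR_pow C r m \<beta>"
    using dR_hi[OF h(1) cp(2), of r] cp by simp
  finally show ?thesis by (simp add: boxp_def)
qed

lemma pibox_in: "\<beta> \<in> cG C m \<Longrightarrow> t \<le> m \<Longrightarrow> N = m + r + a \<Longrightarrow>
  cact C N (cinv C N (boxp C a m r \<beta>)) (a + t) = a + cact C m (cinv C m \<beta>) t"
proof -
  assume h: "\<beta> \<in> cG C m" "t \<le> m" "N = m + r + a"
  have B: "boxp C a m r \<beta> \<in> cG C N" using h boxp_cl by blast
  have pb: "cact C N (boxp C a m r \<beta>) = boxp Sym a m r (cact C m \<beta>)" using h pi_boxp by blast
  have BS: "boxp Sym a m r (cact C m \<beta>) \<in> Bij {..N}" using pb B pi_Bij by metis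
  have pt: "pinv m (cact C m \<beta>) t \<le> m" using h pinv_le pi_Bij by blast
  have v: "boxp Sym a m r (cact C m \<beta>) (a + pinv m (cact C m \<beta>) t) = a + t"
    using h pt by (simp add: boxpS_app app_pinv pi_Bij)
  have e: "cact C N (cinv C N (boxp C a m r \<beta>)) = pinv N (boxp Sym a m r (cact C m \<beta>))"
    by (simp add: pi_inv[OF B] pb)
  have le: "a + pinv m (cact C m \<beta>) t \<le> N" using h pt by simp
  show ?thesis
    unfolding e pinv_eqI[OF BS le v] by (simp add: pi_inv h(1))
qed

lemma pibox_out: "\<beta> \<in> cG C m \<Longrightarrow> N = m + r + a \<Longrightarrow> x \<le> N \<Longrightarrow> x < a \<or> a + m < x \<Longrightarrow>
  cact C N (cinv C N (boxp C a m r \<beta>)) x = x"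
proof -
  assume h: "\<beta> \<in> cG C m" "N = m + r + a" "x \<le> N" "x < a \<or> a + m < x"
  have B: "boxp C a m r \<beta> \<in> cG C N" using h boxp_cl by blast
  have pb: "cact C N (boxp C a m r \<beta>) = boxp Sym a m r (cact C m \<beta>)" using h pi_boxp by blast
  have BS: "boxp Sym a m r (cact C m \<beta>) \<in> Bij {..N}" using pb B pi_Bij by metis
  have v: "boxp Sym a m r (cact C m \<beta>) x = x"
    using h by (auto simp: boxpS_app)
  have e: "cact C N (cinv C N (boxp C a m r \<beta>)) = pinv N (boxp Sym a m r (cact C m \<beta>))"
    by (simp add: pi_inv[OF B] pb)
  show ?thesis
    unfolding e by (rule pinv_eqI[OF BS h(3) v])
qed

subsection \<open>The operad structure on G\<close>

lemma opc_unitL: "\<beta> \<in> cG C m \<Longrightarrow> opc C 0 m 0 (cone C 0) \<beta> = \<beta>"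
  unfolding opc_def using spow_one[of 0 0 m] by (simp add: boxp_def r_one')

lemma opc_unitR: "\<alpha> \<in> cG C n \<Longrightarrow> i \<le> n \<Longrightarrow> opc C n 0 i \<alpha> (cone C 0) = \<alpha>"
  unfolding opc_def using boxp_one[of n 0 "n - i" i] by (simp add: l_one')

lemma opc_funct: "\<alpha> \<in> cG C n \<Longrightarrow> \<alpha>' \<in> cG C n \<Longrightarrow> \<beta> \<in> cG C m \<Longrightarrow> \<beta>' \<in> cG C m \<Longrightarrow> i \<le> n \<Longrightarrow>
  opc C n m i (cmul C n \<alpha> \<alpha>') (cmul C m \<beta> \<beta>') =
  cmul C (n + m) (opc C n m i \<alpha> \<beta>) (opc C n m (cact C n (cinv C n \<alpha>) i) \<alpha>' \<beta>')"
proof -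
  assume h: "\<alpha> \<in> cG C n" "\<alpha>' \<in> cG C n" "\<beta> \<in> cG C m" "\<beta>' \<in> cG C m" "i \<le> n"
  define c where "c = cact C n (cinv C n \<alpha>) i"
  have c: "c \<le> n" unfolding c_def using h by (simp add: pi_inv pinv_le pi_Bij)
  have B1: "boxp C i m (n - i) \<beta> \<in> cG C (n + m)" using h by (intro boxp_cl) auto
  have B2: "boxp C i m (n - i) \<beta>' \<in> cG C (n + m)" using h by (intro boxp_cl) auto
  have B3: "boxp C c m (n - c) \<beta>' \<in> cG C (n + m)" using h c by (intro boxp_cl) auto
  have S1: "s_pow C m n i \<alpha> \<in> cG C (n + m)" using h spow_cl by blast
  have S2: "s_pow C m n c \<alpha>' \<in> cG C (n + m)" using h c spow_cl by blast
  have "opc C n m i (cmul C n \<alpha> \<alpha>') (cmul C m \<beta> \<beta>') =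
    cmul C (n + m) (cmul C (n + m) (boxp C i m (n - i) \<beta>) (boxp C i m (n - i) \<beta>'))
      (cmul C (n + m) (s_pow C m n i \<alpha>) (s_pow C m n c \<alpha>'))"
  proof -
    have bm: "boxp C i m (n - i) (cmul C m \<beta> \<beta>') = cmul C (n + m) (boxp C i m (n - i) \<beta>) (boxp C i m (n - i) \<beta>')"
      by (rule boxp_mul) (use h in auto)
    show ?thesis unfolding opc_def c_def using h by (simp add: bm spow_mul)
  qed
  also have "\<dots> = cmul C (n + m) (boxp C i m (n - i) \<beta>)
      (cmul C (n + m) (cmul C (n + m) (boxp C i m (n - i) \<beta>') (s_pow C m n i \<alpha>)) (s_pow C m n c \<alpha>'))"
    using B1 B2 S1 S2 by (simp add: mul_assoc mul_cl)
  also have "cmul C (n + m) (boxp C i m (n - i) \<beta>') (s_pow C m n i \<alpha>) =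
     cmul C (n + m) (s_pow C m n i \<alpha>) (boxp C c m (n - c) \<beta>')"
    unfolding c_def using ax_op[OF h(1) h(4) h(5)] .
  also have "cmul C (n + m) (boxp C i m (n - i) \<beta>)
      (cmul C (n + m) (cmul C (n + m) (s_pow C m n i \<alpha>) (boxp C c m (n - c) \<beta>')) (s_pow C m n c \<alpha>'))
     = cmul C (n + m) (cmul C (n + m) (boxp C i m (n - i) \<beta>) (s_pow C m n i \<alpha>))
        (cmul C (n + m) (boxp C c m (n - c) \<beta>') (s_pow C m n c \<alpha>'))"
    using B1 B3 S1 S2 by (simp add: mul_assoc mul_cl)
  finally show ?thesis unfolding opc_def c_def .
qed

lemma box_box: "\<gamma> \<in> cG C n \<Longrightarrow> M = n + s + b \<Longrightarrow>
  boxp C a M r (boxp C b n s \<gamma>) = boxp C (a + b) n (s + r) \<gamma>"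
proof -
  assume h: "\<gamma> \<in> cG C n" "M = n + s + b"
  have Z: "sR_pow C s n \<gamma> \<in> cG C (n + s)" using h Rpow_cl by blast
  have "boxp C a M r (boxp C b n s \<gamma>) = sL_pow C a (M + r) (sR_pow C r (n + s + b) (sL_pow C b (n + s) (sR_pow C s n \<gamma>)))"
    unfolding boxp_def h(2) ..
  also have "\<dots> = sL_pow C a (M + r) (sL_pow C b (n + s + r) (sR_pow C r (n + s) (sR_pow C s n \<gamma>)))"
    using RL[OF Z, of r b] by simp
  also have "\<dots> = sL_pow C a (M + r) (sL_pow C b (n + s + r) (sR_pow C (s + r) n \<gamma>))"
    by (simp add: Rpow_add)
  also have "M + r = n + s + r + b" using h(2) by simp
  also have "sL_pow C a (n + s + r + b) (sL_pow C b (n + s + r) (sR_pow C (s + r) n \<gamma>)) = sL_pow C (b + a) (n + s + r) (sR_pow C (s + r) n \<gamma>)"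
    by (rule Lpow_add[symmetric])
  finally have "boxp C a M r (boxp C b n s \<gamma>) = sL_pow C (b + a) (n + s + r) (sR_pow C (s + r) n \<gamma>)" .
  then show ?thesis by (simp only: boxp_def add.commute[of a b] add.assoc)
qed

lemma mon_comm: "x \<in> cG C N1 \<Longrightarrow> y \<in> cG C M2 \<Longrightarrow>
  cmul C (N1 + M2 + 1) (sR_pow C (M2 + 1) N1 x) (sL_pow C (N1 + 1) M2 y) =
  cmul C (N1 + M2 + 1) (sL_pow C (N1 + 1) M2 y) (sR_pow C (M2 + 1) N1 x)"
proof -
  assume h: "x \<in> cG C N1" "y \<in> cG C M2"
  have d1: "N1 + (M2 + 1) = N1 + M2 + 1" "M2 + (N1 + 1) = N1 + M2 + 1" by simp_all
  have X: "sR_pow C (M2 + 1) N1 x \<in> cG C (N1 + M2 + 1)" using Rpow_cl[OF h(1), of "M2 + 1"] by (simp only: d1)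
  have Y: "sL_pow C (N1 + 1) M2 y \<in> cG C (N1 + M2 + 1)" using Lpow_cl[OF h(2), of "N1 + 1"] by (simp only: d1)
  have o1: "sR_pow C (M2 + 1) N1 (cone C N1) = cone C (N1 + M2 + 1)" using Rpow_one[of "M2 + 1" N1] by (simp only: d1)
  have o2: "sL_pow C (N1 + 1) M2 (cone C M2) = cone C (N1 + M2 + 1)" using Lpow_one[of "N1 + 1" M2] by (simp only: d1)
  have "cmul C (N1 + M2 + 1) (sR_pow C (M2 + 1) N1 (cmul C N1 (cone C N1) x)) (sL_pow C (N1 + 1) M2 (cmul C M2 y (cone C M2))) =
       cmul C (N1 + M2 + 1)
         (cmul C (N1 + M2 + 1) (sR_pow C (M2 + 1) N1 (cone C N1)) (sL_pow C (N1 + 1) M2 y))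
         (cmul C (N1 + M2 + 1) (sR_pow C (M2 + 1) N1 x) (sL_pow C (N1 + 1) M2 (cone C M2)))"
    by (rule ax_mon[OF one_cl h(1) h(2) one_cl])
  then show ?thesis by (simp only: o1 o2 l_one'[OF h(1)] r_one'[OF h(2)] l_one'[OF Y] r_one'[OF X])
qed

lemma box_comm: "\<beta> \<in> cG C m \<Longrightarrow> \<gamma> \<in> cG C n \<Longrightarrow> a < b \<Longrightarrow> b \<le> l \<Longrightarrow> N = l + m + n \<Longrightarrow>
  cmul C N (boxp C (b + m) n (l - b) \<gamma>) (boxp C a m (l + n - a) \<beta>) =
  cmul C N (boxp C a m (l + n - a) \<beta>) (boxp C (b + m) n (l - b) \<gamma>)"
proof -
  assume h: "\<beta> \<in> cG C m" "\<gamma> \<in> cG C n" "a < b" "b \<le> l" "N = l + m + n"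
  define t where "t = b - a - 1"
  define r where "r = l - b"
  have tr: "b = a + Suc t" "l = a + Suc t + r" unfolding t_def r_def using h by auto
  have x: "boxp C a m t \<beta> \<in> cG C (a + m + t)" using h by (intro boxp_cl) auto
  have y: "sR_pow C r n \<gamma> \<in> cG C (n + r)" using h Rpow_cl by blast
  have Z: "sR_pow C t m \<beta> \<in> cG C (m + t)" using h Rpow_cl by blast
  have e1: "sR_pow C (n + r + 1) (a + m + t) (boxp C a m t \<beta>) = boxp C a m (l + n - a) \<beta>"
  proof -
    have q0: "a + m + t = m + t + a" by simp
    have "sR_pow C (n + r + 1) (a + m + t) (boxp C a m t \<beta>) =
       sR_pow C (n + r + 1) (m + t + a) (sL_pow C a (m + t) (sR_pow C t m \<beta>))"
      unfolding boxp_def by (simp only: q0)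
    also have "\<dots> = sL_pow C a (m + t + (n + r + 1)) (sR_pow C (n + r + 1) (m + t) (sR_pow C t m \<beta>))"
      by (rule RL[OF Z])
    also have "\<dots> = sL_pow C a (m + t + (n + r + 1)) (sR_pow C (t + (n + r + 1)) m \<beta>)"
      by (simp only: Rpow_add)
    also have q: "l + n - a = t + (n + r + 1)" using tr by simp
    have "sL_pow C a (m + t + (n + r + 1)) (sR_pow C (t + (n + r + 1)) m \<beta>) = boxp C a m (l + n - a) \<beta>"
      unfolding boxp_def q by (simp only: add.assoc)
    finally show ?thesis .
  qed
  have e2: "sL_pow C (a + m + t + 1) (n + r) (sR_pow C r n \<gamma>) = boxp C (b + m) n (l - b) \<gamma>"
  proof -
    have q1: "b + m = a + m + t + 1" "l - b = r" using tr by simp_all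
    show ?thesis unfolding boxp_def q1 ..
  qed
  have mc: "cmul C (a + m + t + (n + r) + 1) (boxp C a m (l + n - a) \<beta>) (boxp C (b + m) n (l - b) \<gamma>) =
     cmul C (a + m + t + (n + r) + 1) (boxp C (b + m) n (l - b) \<gamma>) (boxp C a m (l + n - a) \<beta>)"
    using mon_comm[OF x y] unfolding e1 e2 .
  have Neq: "N = a + m + t + (n + r) + 1" using h tr by simp
  show ?thesis unfolding Neq using mc[symmetric] .
qed

lemma opc_assoc: "\<alpha> \<in> cG C l \<Longrightarrow> \<beta> \<in> cG C m \<Longrightarrow> \<gamma> \<in> cG C n \<Longrightarrow> a \<le> l \<Longrightarrow> b \<le> m \<Longrightarrow>
  opc C (l + m) n (a + b) (opc C l m a \<alpha> \<beta>) \<gamma> = opc C l (m + n) a \<alpha> (opc C m n b \<beta> \<gamma>)"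
proof -
  assume h: "\<alpha> \<in> cG C l" "\<beta> \<in> cG C m" "\<gamma> \<in> cG C n" "a \<le> l" "b \<le> m"
  define r where "r = l - a"
  define N where "N = l + m + n"
  have N: "l + m + n = N" "l + (m + n) = N" unfolding N_def by simp_all
  define X where "X = boxp C a m r \<beta>"
  define Y where "Y = s_pow C m l a \<alpha>"
  have X: "X \<in> cG C (l + m)" unfolding X_def r_def using h by (intro boxp_cl) auto
  have Y: "Y \<in> cG C (l + m)" unfolding Y_def using h spow_cl by blast
  define b' where "b' = cact C m (cinv C m \<beta>) b"
  have b': "b' \<le> m" unfolding b'_def using h by (simp add: pi_inv pinv_le pi_Bij)
  have c: "cact C (l + m) (cinv C (l + m) X) (a + b) = a + b'"
    unfolding X_def b'_def r_def using h by (intro pibox_in) auto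
  have e1: "s_pow C n (l + m) (a + b) (cmul C (l + m) X Y) =
      cmul C N (s_pow C n (l + m) (a + b) X) (s_pow C n (l + m) (a + b') Y)"
    using spow_mul[OF _ X Y, of "a + b" n] h c N by simp
  have e2: "s_pow C n (l + m) (a + b) X = boxp C a (m + n) r (s_pow C n m b \<beta>)"
  proof -
    have eq: "l + m = m + r + a" unfolding r_def using h by simp
    show ?thesis unfolding X_def eq by (rule s_box[OF h(2) h(5)])
  qed
  have e3: "s_pow C n (l + m) (a + b') Y = s_pow C (m + n) l a \<alpha>"
    unfolding Y_def by (rule ss_same[OF h(1) h(4) b'])
  have e4: "boxp C (a + b) n (l + m - (a + b)) \<gamma> = boxp C a (m + n) r (boxp C b n (m - b) \<gamma>)"
    using box_box[OF h(3), of "m + n" "m - b" b a r] h unfolding r_def by (simp add: ac_simps)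
  have P: "boxp C a (m + n) r (boxp C b n (m - b) \<gamma>) \<in> cG C N"
    using h unfolding r_def N_def by (intro boxp_cl) auto
  have Q: "boxp C a (m + n) r (s_pow C n m b \<beta>) \<in> cG C N"
    using h unfolding r_def N_def by (intro boxp_cl spow_cl) auto
  have R: "s_pow C (m + n) l a \<alpha> \<in> cG C N" using h spow_cl N by metis
  have "opc C (l + m) n (a + b) (opc C l m a \<alpha> \<beta>) \<gamma> =
     cmul C N (boxp C a (m + n) r (boxp C b n (m - b) \<gamma>))
       (cmul C N (boxp C a (m + n) r (s_pow C n m b \<beta>)) (s_pow C (m + n) l a \<alpha>))"
    unfolding opc_def X_def[symmetric] Y_def[symmetric] r_def[symmetric] N e1 e2 e3 e4 ..
  also have "\<dots> = cmul C N (cmul C N (boxp C a (m + n) r (boxp C b n (m - b) \<gamma>))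
       (boxp C a (m + n) r (s_pow C n m b \<beta>))) (s_pow C (m + n) l a \<alpha>)"
    using P Q R by (simp add: mul_assoc)
  also have "cmul C N (boxp C a (m + n) r (boxp C b n (m - b) \<gamma>)) (boxp C a (m + n) r (s_pow C n m b \<beta>))
     = boxp C a (m + n) r (opc C m n b \<beta> \<gamma>)"
    unfolding opc_def using h unfolding N_def r_def
    by (intro boxp_mul[symmetric] boxp_cl spow_cl) auto
  finally show ?thesis unfolding opc_def r_def N by simp
qed

lemma opc_comm: "\<alpha> \<in> cG C l \<Longrightarrow> \<beta> \<in> cG C m \<Longrightarrow> \<gamma> \<in> cG C n \<Longrightarrow> a < b \<Longrightarrow> b \<le> l \<Longrightarrow>
  opc C (l + m) n (b + m) (opc C l m a \<alpha> \<beta>) \<gamma> = opc C (l + n) m a (opc C l n b \<alpha> \<gamma>) \<beta>"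
proof -
  assume h: "\<alpha> \<in> cG C l" "\<beta> \<in> cG C m" "\<gamma> \<in> cG C n" "a < b" "b \<le> l"
  define N where "N = l + m + n"
  have N: "l + m + n = N" "l + n + m = N" unfolding N_def by simp_all
  define X where "X = boxp C a m (l - a) \<beta>"
  define Y where "Y = s_pow C m l a \<alpha>"
  have X: "X \<in> cG C (l + m)" unfolding X_def using h by (intro boxp_cl) auto
  have Y: "Y \<in> cG C (l + m)" unfolding Y_def using h spow_cl by simp
  define X' where "X' = boxp C b n (l - b) \<gamma>"
  define Y' where "Y' = s_pow C n l b \<alpha>"
  have X': "X' \<in> cG C (l + n)" unfolding X'_def using h by (intro boxp_cl) auto
  have Y': "Y' \<in> cG C (l + n)" unfolding Y'_def using h spow_cl by simp
  have c1: "cact C (l + m) (cinv C (l + m) X) (b + m) = b + m"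
    unfolding X_def using h by (intro pibox_out) auto
  have c2: "cact C (l + n) (cinv C (l + n) X') a = a"
    unfolding X'_def using h by (intro pibox_out) auto
  have e1: "s_pow C n (l + m) (b + m) (cmul C (l + m) X Y) =
      cmul C N (s_pow C n (l + m) (b + m) X) (s_pow C n (l + m) (b + m) Y)"
    using spow_mul[OF _ X Y, of "b + m" n] h c1 N by simp
  have e2: "s_pow C n (l + m) (b + m) X = boxp C a m (l + n - a) \<beta>"
  proof -
    have Z: "sR_pow C (l - a) m \<beta> \<in> cG C (m + (l - a))" using h Rpow_cl by blast
    have q: "l + m = m + (l - a) + a" "b + m = a + (b + m - a)" using h by simp_all
    have "s_pow C n (l + m) (b + m) X = sL_pow C a (m + (l - a) + n) (s_pow C n (m + (l - a)) (b + m - a) (sR_pow C (l - a) m \<beta>))"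
      unfolding X_def boxp_def q(1) apply (subst q(2)) by (rule sLn[OF Z]) (use h in simp)
    also have "s_pow C n (m + (l - a)) (b + m - a) (sR_pow C (l - a) m \<beta>) = sR_pow C (l - a + n) m \<beta>"
      by (rule sRtopn) (use h in auto)
    also have "l - a + n = l + n - a" using h by simp
    also have "m + (l - a) + n = m + (l + n - a)" using h by simp
    finally show ?thesis unfolding boxp_def .
  qed
  have e3: "s_pow C n (l + m) (b + m) Y = s_pow C m (l + n) a Y'"
    unfolding Y_def Y'_def using h by (intro ss_comm) auto
  have f1: "s_pow C m (l + n) a (cmul C (l + n) X' Y') =
      cmul C N (s_pow C m (l + n) a X') (s_pow C m (l + n) a Y')"
    using spow_mul[OF _ X' Y', of a m] h c2 N by simp
  have f2: "s_pow C m (l + n) a X' = boxp C (b + m) n (l - b) \<gamma>"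
  proof -
    have Z: "sR_pow C (l - b) n \<gamma> \<in> cG C (n + (l - b))" using h Rpow_cl by blast
    have q: "l + n = n + (l - b) + b" using h by simp
    show ?thesis unfolding X'_def boxp_def q using sLlon[OF Z h(4), of m] by (simp add: add.commute)
  qed
  have P: "boxp C (b + m) n (l - b) \<gamma> \<in> cG C N" unfolding N_def using h by (intro boxp_cl) auto
  have Q: "boxp C a m (l + n - a) \<beta> \<in> cG C N" unfolding N_def using h by (intro boxp_cl) auto
  have R: "s_pow C m (l + n) a Y' \<in> cG C N" using spow_cl[OF _ Y', of a m] h N by simp
  have bc: "cmul C N (boxp C (b + m) n (l - b) \<gamma>) (boxp C a m (l + n - a) \<beta>) =
    cmul C N (boxp C a m (l + n - a) \<beta>) (boxp C (b + m) n (l - b) \<gamma>)"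
    using box_comm[OF h(2) h(3) h(4) h(5)] N_def by simp
  have "opc C (l + m) n (b + m) (opc C l m a \<alpha> \<beta>) \<gamma> =
     cmul C N (boxp C (b + m) n (l - b) \<gamma>) (cmul C N (boxp C a m (l + n - a) \<beta>) (s_pow C m (l + n) a Y'))"
  proof -
    have q: "l + m - (b + m) = l - b" by simp
    show ?thesis unfolding opc_def X_def[symmetric] Y_def[symmetric] N e1 e2 e3 q ..
  qed
  also have "\<dots> = cmul C N (boxp C a m (l + n - a) \<beta>) (cmul C N (boxp C (b + m) n (l - b) \<gamma>) (s_pow C m (l + n) a Y'))"
    using P Q R bc by (simp add: mul_assoc[symmetric])
  also have "\<dots> = opc C (l + n) m a (opc C l n b \<alpha> \<gamma>) \<beta>"
    unfolding opc_def X'_def[symmetric] Y'_def[symmetric] N f1 f2 ..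
  finally show ?thesis .
qed

lemma face_opc_in: "\<alpha> \<in> cG C l \<Longrightarrow> \<beta> \<in> cG C (Suc m) \<Longrightarrow> a \<le> l \<Longrightarrow> b \<le> Suc m \<Longrightarrow>
  cd C (l + Suc m) (a + b) (opc C l (Suc m) a \<alpha> \<beta>) = opc C l m a \<alpha> (cd C (Suc m) b \<beta>)"
proof -
  assume h: "\<alpha> \<in> cG C l" "\<beta> \<in> cG C (Suc m)" "a \<le> l" "b \<le> Suc m"
  define X where "X = boxp C a (Suc m) (l - a) \<beta>"
  define Y where "Y = s_pow C (Suc m) l a \<alpha>"
  have X: "X \<in> cG C (Suc (l + m))" unfolding X_def using h by (intro boxp_cl) auto
  have Y: "Y \<in> cG C (Suc (l + m))" unfolding Y_def using h spow_cl[of a l \<alpha> "Suc m"] by simp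
  define b' where "b' = cact C (Suc m) (cinv C (Suc m) \<beta>) b"
  have b': "b' \<le> Suc m" unfolding b'_def using h by (simp add: pi_inv pinv_le pi_Bij)
  have c: "cact C (Suc (l + m)) (cinv C (Suc (l + m)) X) (a + b) = a + b'"
    unfolding X_def b'_def using h by (intro pibox_in) auto
  have e1: "cd C (Suc (l + m)) (a + b) X = boxp C a m (l - a) (cd C (Suc m) b \<beta>)"
  proof -
    have q: "Suc (l + m) = Suc m + (l - a) + a" using h by simp
    show ?thesis unfolding X_def q by (rule dbox_in[OF h(2) h(4)])
  qed
  have e2: "cd C (Suc (l + m)) (a + b') Y = s_pow C m l a \<alpha>"
    unfolding Y_def using d_spow_in[OF h(1) h(3) b'] by simp
  have "cd C (l + Suc m) (a + b) (opc C l (Suc m) a \<alpha> \<beta>) = cd C (Suc (l + m)) (a + b) (cmul C (Suc (l + m)) X Y)"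
    unfolding opc_def X_def Y_def by simp
  also have "\<dots> = cmul C (l + m) (cd C (Suc (l + m)) (a + b) X) (cd C (Suc (l + m)) (a + b') Y)"
    using d_mul[OF _ X Y, of "a + b"] c h by simp
  also have "\<dots> = opc C l m a \<alpha> (cd C (Suc m) b \<beta>)" unfolding e1 e2 opc_def ..
  finally show ?thesis .
qed

lemma face_opc_lo: "\<alpha> \<in> cG C (Suc l) \<Longrightarrow> \<gamma> \<in> cG C n \<Longrightarrow> c \<le> b \<Longrightarrow> b \<le> l \<Longrightarrow>
  cd C (Suc l + n) c (opc C (Suc l) n (Suc b) \<alpha> \<gamma>) = opc C l n b (cd C (Suc l) c \<alpha>) \<gamma>"
proof -
  assume h: "\<alpha> \<in> cG C (Suc l)" "\<gamma> \<in> cG C n" "c \<le> b" "b \<le> l"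
  define X where "X = boxp C (Suc b) n (l - b) \<gamma>"
  define Y where "Y = s_pow C n (Suc l) (Suc b) \<alpha>"
  have X: "X \<in> cG C (Suc (l + n))" unfolding X_def using h by (intro boxp_cl) auto
  have Y: "Y \<in> cG C (Suc (l + n))" unfolding Y_def using h spow_cl[of "Suc b" "Suc l" \<alpha> n] by simp
  have c: "cact C (Suc (l + n)) (cinv C (Suc (l + n)) X) c = c"
    unfolding X_def using h by (intro pibox_out) auto
  have e1: "cd C (Suc (l + n)) c X = boxp C b n (l - b) \<gamma>"
  proof -
    have q: "Suc (l + n) = n + (l - b) + Suc b" using h by simp
    show ?thesis unfolding X_def q using dbox_lo[OF h(2), of c "Suc b" "l - b"] h by simp
  qed
  have e2: "cd C (Suc (l + n)) c Y = s_pow C n l b (cd C (Suc l) c \<alpha>)"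
    unfolding Y_def using d_spow_lo[OF h(1), of c "Suc b" n] h by simp
  have "cd C (Suc l + n) c (opc C (Suc l) n (Suc b) \<alpha> \<gamma>) = cd C (Suc (l + n)) c (cmul C (Suc (l + n)) X Y)"
    unfolding opc_def X_def Y_def by simp
  also have "\<dots> = cmul C (l + n) (cd C (Suc (l + n)) c X) (cd C (Suc (l + n)) c Y)"
    using d_mul[OF _ X Y, of c] c h by simp
  also have "\<dots> = opc C l n b (cd C (Suc l) c \<alpha>) \<gamma>" unfolding e1 e2 opc_def ..
  finally show ?thesis .
qed

lemma face_opc_hi: "\<alpha> \<in> cG C (Suc l) \<Longrightarrow> \<gamma> \<in> cG C n \<Longrightarrow> b < c \<Longrightarrow> c \<le> Suc l \<Longrightarrow>
  cd C (Suc l + n) (c + n) (opc C (Suc l) n b \<alpha> \<gamma>) = opc C l n b (cd C (Suc l) c \<alpha>) \<gamma>"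
proof -
  assume h: "\<alpha> \<in> cG C (Suc l)" "\<gamma> \<in> cG C n" "b < c" "c \<le> Suc l"
  define X where "X = boxp C b n (Suc (l - b)) \<gamma>"
  define Y where "Y = s_pow C n (Suc l) b \<alpha>"
  have q0: "Suc l - b = Suc (l - b)" using h by simp
  have X: "X \<in> cG C (Suc (l + n))" unfolding X_def using h by (intro boxp_cl) auto
  have Y: "Y \<in> cG C (Suc (l + n))" unfolding Y_def using h spow_cl[of b "Suc l" \<alpha> n] by simp
  have c: "cact C (Suc (l + n)) (cinv C (Suc (l + n)) X) (c + n) = c + n"
    unfolding X_def using h by (intro pibox_out) auto
  have e1: "cd C (Suc (l + n)) (c + n) X = boxp C b n (l - b) \<gamma>"
  proof -
    have q: "Suc (l + n) = n + Suc (l - b) + b" using h by simp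
    show ?thesis unfolding X_def q using dbox_hi[OF h(2), of b "c + n" "l - b"] h by simp
  qed
  have e2: "cd C (Suc (l + n)) (c + n) Y = s_pow C n l b (cd C (Suc l) c \<alpha>)"
    unfolding Y_def using d_spow_hi[OF h(1), of b c n] h by simp
  have "cd C (Suc l + n) (c + n) (opc C (Suc l) n b \<alpha> \<gamma>) = cd C (Suc (l + n)) (c + n) (cmul C (Suc (l + n)) X Y)"
    unfolding opc_def X_def Y_def q0 by simp
  also have "\<dots> = cmul C (l + n) (cd C (Suc (l + n)) (c + n) X) (cd C (Suc (l + n)) (c + n) Y)"
    using d_mul[OF _ X Y, of "c + n"] c h by simp
  also have "\<dots> = opc C l n b (cd C (Suc l) c \<alpha>) \<gamma>" unfolding e1 e2 opc_def ..
  finally show ?thesis .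
qed

subsection \<open>Transferred identities in Sym\<close>

lemma pi_inv_app: "g \<in> cG C n \<Longrightarrow> pinv n (cact C n (cinv C n g)) = cact C n g"
  by (simp add: pi_inv pinv_pinv pi_Bij)

lemma faceS_mul: "\<sigma> \<in> Bij {..Suc n} \<Longrightarrow> \<tau> \<in> Bij {..Suc n} \<Longrightarrow> j \<le> Suc n \<Longrightarrow>
  sym_face (Suc n) j (mult (BijGroup {..Suc n}) \<sigma> \<tau>) =
  mult (BijGroup {..n}) (sym_face (Suc n) j \<sigma>) (sym_face (Suc n) (pinv (Suc n) \<sigma> j) \<tau>)"
proof -
  assume h: "\<sigma> \<in> Bij {..Suc n}" "\<tau> \<in> Bij {..Suc n}" "j \<le> Suc n"
  obtain g where g: "g \<in> cG C (Suc n)" "cact C (Suc n) g = \<sigma>" using surj h by blast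
  obtain k where k: "k \<in> cG C (Suc n)" "cact C (Suc n) k = \<tau>" using surj h by blast
  have q: "cact C (Suc n) (cinv C (Suc n) g) j \<le> Suc n" using g h by (simp add: pi_inv pinv_le pi_Bij)
  have "sym_face (Suc n) j (mult (BijGroup {..Suc n}) \<sigma> \<tau>) = cact C n (cd C (Suc n) j (cmul C (Suc n) g k))"
    using g k h by (simp add: pi_d pi_mul mul_cl)
  also have "\<dots> = mult (BijGroup {..n}) (cact C n (cd C (Suc n) j g)) (cact C n (cd C (Suc n) (cact C (Suc n) (cinv C (Suc n) g) j) k))"
    using g k h q by (simp add: d_mul pi_mul d_cl)
  also have "\<dots> = mult (BijGroup {..n}) (sym_face (Suc n) j \<sigma>) (sym_face (Suc n) (pinv (Suc n) \<sigma> j) \<tau>)"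
    using g k h q by (simp add: pi_d pi_inv)
  finally show ?thesis .
qed

lemma faceS_dd: "\<sigma> \<in> Bij {..Suc (Suc n)} \<Longrightarrow> i < j \<Longrightarrow> j \<le> Suc (Suc n) \<Longrightarrow>
  sym_face (Suc n) i (sym_face (Suc (Suc n)) j \<sigma>) = sym_face (Suc n) (j - 1) (sym_face (Suc (Suc n)) i \<sigma>)"
proof -
  assume h: "\<sigma> \<in> Bij {..Suc (Suc n)}" "i < j" "j \<le> Suc (Suc n)"
  obtain g where g: "g \<in> cG C (Suc (Suc n))" "cact C (Suc (Suc n)) g = \<sigma>" using surj h by blast
  have "sym_face (Suc n) i (sym_face (Suc (Suc n)) j \<sigma>) = cact C n (cd C (Suc n) i (cd C (Suc (Suc n)) j g))"
    using g h by (simp add: pi_d d_cl)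
  also have "\<dots> = cact C n (cd C (Suc n) (j - 1) (cd C (Suc (Suc n)) i g))" using dd g h by simp
  also have "\<dots> = sym_face (Suc n) (j - 1) (sym_face (Suc (Suc n)) i \<sigma>)"
    using g h by (simp add: pi_d d_cl)
  finally show ?thesis .
qed

lemma opcS_assoc: "\<sigma> \<in> Bij {..l} \<Longrightarrow> \<tau> \<in> Bij {..m} \<Longrightarrow> \<rho> \<in> Bij {..n} \<Longrightarrow> a \<le> l \<Longrightarrow> b \<le> m \<Longrightarrow>
  opc Sym (l + m) n (a + b) (opc Sym l m a \<sigma> \<tau>) \<rho> = opc Sym l (m + n) a \<sigma> (opc Sym m n b \<tau> \<rho>)"
proof -
  assume h: "\<sigma> \<in> Bij {..l}" "\<tau> \<in> Bij {..m}" "\<rho> \<in> Bij {..n}" "a \<le> l" "b \<le> m"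
  obtain x where x: "x \<in> cG C l" "cact C l x = \<sigma>" using surj h by blast
  obtain y where y: "y \<in> cG C m" "cact C m y = \<tau>" using surj h by blast
  obtain z where z: "z \<in> cG C n" "cact C n z = \<rho>" using surj h by blast
  have "opc Sym (l + m) n (a + b) (opc Sym l m a \<sigma> \<tau>) \<rho> = cact C (l + m + n) (opc C (l + m) n (a + b) (opc C l m a x y) z)"
    using x y z h by (simp add: pi_opc opc_cl)
  also have "\<dots> = cact C (l + (m + n)) (opc C l (m + n) a x (opc C m n b y z))"
    using opc_assoc[OF x(1) y(1) z(1) h(4) h(5)] by (simp add: add.assoc)
  also have "\<dots> = opc Sym l (m + n) a \<sigma> (opc Sym m n b \<tau> \<rho>)"
    using x y z h by (simp add: pi_opc opc_cl)
  finally show ?thesis .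
qed

lemma opcS_comm: "\<sigma> \<in> Bij {..l} \<Longrightarrow> \<tau> \<in> Bij {..m} \<Longrightarrow> \<rho> \<in> Bij {..n} \<Longrightarrow> a < b \<Longrightarrow> b \<le> l \<Longrightarrow>
  opc Sym (l + m) n (b + m) (opc Sym l m a \<sigma> \<tau>) \<rho> = opc Sym (l + n) m a (opc Sym l n b \<sigma> \<rho>) \<tau>"
proof -
  assume h: "\<sigma> \<in> Bij {..l}" "\<tau> \<in> Bij {..m}" "\<rho> \<in> Bij {..n}" "a < b" "b \<le> l"
  obtain x where x: "x \<in> cG C l" "cact C l x = \<sigma>" using surj h by blast
  obtain y where y: "y \<in> cG C m" "cact C m y = \<tau>" using surj h by blast
  obtain z where z: "z \<in> cG C n" "cact C n z = \<rho>" using surj h by blast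
  have "opc Sym (l + m) n (b + m) (opc Sym l m a \<sigma> \<tau>) \<rho> = cact C (l + m + n) (opc C (l + m) n (b + m) (opc C l m a x y) z)"
    using x y z h by (simp add: pi_opc opc_cl)
  also have "\<dots> = cact C (l + n + m) (opc C (l + n) m a (opc C l n b x z) y)"
    using opc_comm[OF x(1) y(1) z(1) h(4) h(5)] by (simp add: ac_simps)
  also have "\<dots> = opc Sym (l + n) m a (opc Sym l n b \<sigma> \<rho>) \<tau>"
    using x y z h by (simp add: pi_opc opc_cl)
  finally show ?thesis .
qed

lemma opcS_funct: "\<sigma> \<in> Bij {..n} \<Longrightarrow> \<sigma>' \<in> Bij {..n} \<Longrightarrow> \<tau> \<in> Bij {..m} \<Longrightarrow> \<tau>' \<in> Bij {..m} \<Longrightarrow> i \<le> n \<Longrightarrow>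
  opc Sym n m i (mult (BijGroup {..n}) \<sigma> \<sigma>') (mult (BijGroup {..m}) \<tau> \<tau>') =
  mult (BijGroup {..n + m}) (opc Sym n m i \<sigma> \<tau>) (opc Sym n m (pinv n \<sigma> i) \<sigma>' \<tau>')"
proof -
  assume h: "\<sigma> \<in> Bij {..n}" "\<sigma>' \<in> Bij {..n}" "\<tau> \<in> Bij {..m}" "\<tau>' \<in> Bij {..m}" "i \<le> n"
  obtain x where x: "x \<in> cG C n" "cact C n x = \<sigma>" using surj h by blast
  obtain x' where x': "x' \<in> cG C n" "cact C n x' = \<sigma>'" using surj h by blast
  obtain y where y: "y \<in> cG C m" "cact C m y = \<tau>" using surj h by blast
  obtain y' where y': "y' \<in> cG C m" "cact C m y' = \<tau>'" using surj h by blast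
  have c: "cact C n (cinv C n x) i \<le> n" using x h by (simp add: pi_inv pinv_le pi_Bij)
  have "opc Sym n m i (mult (BijGroup {..n}) \<sigma> \<sigma>') (mult (BijGroup {..m}) \<tau> \<tau>') =
     cact C (n + m) (opc C n m i (cmul C n x x') (cmul C m y y'))"
    using x x' y y' h by (simp add: pi_opc pi_mul mul_cl)
  also have "\<dots> = cact C (n + m) (cmul C (n + m) (opc C n m i x y) (opc C n m (cact C n (cinv C n x) i) x' y'))"
    using opc_funct[OF x(1) x'(1) y(1) y'(1) h(5)] by simp
  also have "\<dots> = mult (BijGroup {..n + m}) (opc Sym n m i \<sigma> \<tau>) (opc Sym n m (pinv n \<sigma> i) \<sigma>' \<tau>')"
    using x x' y y' h c by (simp add: pi_opc pi_mul opc_cl pi_inv)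
  finally show ?thesis .
qed

lemma opcS_face_in: "\<sigma> \<in> Bij {..l} \<Longrightarrow> \<tau> \<in> Bij {..Suc m} \<Longrightarrow> a \<le> l \<Longrightarrow> b \<le> Suc m \<Longrightarrow>
  sym_face (l + Suc m) (a + b) (opc Sym l (Suc m) a \<sigma> \<tau>) = opc Sym l m a \<sigma> (sym_face (Suc m) b \<tau>)"
proof -
  assume h: "\<sigma> \<in> Bij {..l}" "\<tau> \<in> Bij {..Suc m}" "a \<le> l" "b \<le> Suc m"
  obtain x where x: "x \<in> cG C l" "cact C l x = \<sigma>" using surj h by blast
  obtain y where y: "y \<in> cG C (Suc m)" "cact C (Suc m) y = \<tau>" using surj h by blast
  have O: "opc C l (Suc m) a x y \<in> cG C (Suc (l + m))" using opc_cl[OF h(3) x(1) y(1)] by simp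
  have "sym_face (l + Suc m) (a + b) (opc Sym l (Suc m) a \<sigma> \<tau>) = cact C (l + m) (cd C (Suc (l + m)) (a + b) (opc C l (Suc m) a x y))"
    using pi_d[OF _ O, of "a + b"] pi_opc[OF h(3) x(1) y(1)] x y h by simp
  also have "\<dots> = cact C (l + m) (opc C l m a x (cd C (Suc m) b y))"
    using face_opc_in[OF x(1) y(1) h(3) h(4)] by simp
  also have "\<dots> = opc Sym l m a \<sigma> (sym_face (Suc m) b \<tau>)"
    using x y h by (simp add: pi_opc d_cl pi_d)
  finally show ?thesis .
qed

lemma opcS_face_lo: "\<sigma> \<in> Bij {..Suc l} \<Longrightarrow> \<rho> \<in> Bij {..n} \<Longrightarrow> c \<le> b \<Longrightarrow> b \<le> l \<Longrightarrow>
  sym_face (Suc l + n) c (opc Sym (Suc l) n (Suc b) \<sigma> \<rho>) = opc Sym l n b (sym_face (Suc l) c \<sigma>) \<rho>"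
proof -
  assume h: "\<sigma> \<in> Bij {..Suc l}" "\<rho> \<in> Bij {..n}" "c \<le> b" "b \<le> l"
  obtain x where x: "x \<in> cG C (Suc l)" "cact C (Suc l) x = \<sigma>" using surj h by blast
  obtain z where z: "z \<in> cG C n" "cact C n z = \<rho>" using surj h by blast
  have b: "Suc b \<le> Suc l" using h by simp
  have O: "opc C (Suc l) n (Suc b) x z \<in> cG C (Suc (l + n))" using opc_cl[OF b x(1) z(1)] by simp
  have "sym_face (Suc l + n) c (opc Sym (Suc l) n (Suc b) \<sigma> \<rho>) = cact C (l + n) (cd C (Suc (l + n)) c (opc C (Suc l) n (Suc b) x z))"
    using pi_d[OF _ O, of c] pi_opc[OF b x(1) z(1)] x z h by simp
  also have "\<dots> = cact C (l + n) (opc C l n b (cd C (Suc l) c x) z)"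
    using face_opc_lo[OF x(1) z(1) h(3) h(4)] by simp
  also have "\<dots> = opc Sym l n b (sym_face (Suc l) c \<sigma>) \<rho>"
    using x z h by (simp add: pi_opc d_cl pi_d)
  finally show ?thesis .
qed

lemma opcS_face_hi: "\<sigma> \<in> Bij {..Suc l} \<Longrightarrow> \<rho> \<in> Bij {..n} \<Longrightarrow> b < c \<Longrightarrow> c \<le> Suc l \<Longrightarrow>
  sym_face (Suc l + n) (c + n) (opc Sym (Suc l) n b \<sigma> \<rho>) = opc Sym l n b (sym_face (Suc l) c \<sigma>) \<rho>"
proof -
  assume h: "\<sigma> \<in> Bij {..Suc l}" "\<rho> \<in> Bij {..n}" "b < c" "c \<le> Suc l"
  obtain x where x: "x \<in> cG C (Suc l)" "cact C (Suc l) x = \<sigma>" using surj h by blast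
  obtain z where z: "z \<in> cG C n" "cact C n z = \<rho>" using surj h by blast
  have b: "b \<le> Suc l" "b \<le> l" using h by simp_all
  have O: "opc C (Suc l) n b x z \<in> cG C (Suc (l + n))" using opc_cl[OF b(1) x(1) z(1)] by simp
  have "sym_face (Suc l + n) (c + n) (opc Sym (Suc l) n b \<sigma> \<rho>) = cact C (l + n) (cd C (Suc (l + n)) (c + n) (opc C (Suc l) n b x z))"
    using pi_d[OF _ O, of "c + n"] pi_opc[OF b(1) x(1) z(1)] x z h by simp
  also have "\<dots> = cact C (l + n) (opc C l n b (cd C (Suc l) c x) z)"
    using face_opc_hi[OF x(1) z(1) h(3) h(4)] by simp
  also have "\<dots> = opc Sym l n b (sym_face (Suc l) c \<sigma>) \<rho>"
    using x z h b by (simp add: pi_opc d_cl pi_d)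
  finally show ?thesis .
qed

lemma eS_Bij: "one (BijGroup {..0}) \<in> Bij {..0::nat}" by (rule bone_Bij)

lemma opcS_unitL: "\<tau> \<in> Bij {..m} \<Longrightarrow> opc Sym 0 m 0 (one (BijGroup {..0})) \<tau> = \<tau>"
proof -
  assume h: "\<tau> \<in> Bij {..m}"
  obtain y where y: "y \<in> cG C m" "cact C m y = \<tau>" using surj h by blast
  have e: "cact C (0 + m) (opc C 0 m 0 (cone C 0) y) = opc Sym 0 m 0 (cact C 0 (cone C 0)) (cact C m y)"
    by (rule pi_opc) (auto simp: one_cl y)
  show ?thesis using e opc_unitL[OF y(1)] y(2) unfolding pi_one by simp
qed

lemma opcS_unitR: "\<sigma> \<in> Bij {..n} \<Longrightarrow> i \<le> n \<Longrightarrow> opc Sym n 0 i \<sigma> (one (BijGroup {..0})) = \<sigma>"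
proof -
  assume h: "\<sigma> \<in> Bij {..n}" "i \<le> n"
  obtain x where x: "x \<in> cG C n" "cact C n x = \<sigma>" using surj h by blast
  have e: "cact C (n + 0) (opc C n 0 i x (cone C 0)) = opc Sym n 0 i (cact C n x) (cact C 0 (cone C 0))"
    by (rule pi_opc) (auto simp: one_cl x h)
  show ?thesis using e opc_unitR[OF x(1) h(2)] x(2) unfolding pi_one by simp
qed

subsection \<open>The action groupoids\<close>

lemma Gam:
  "oObj (Gamma C) n = Bij {..n}"
  "oMor (Gamma C) n = Bij {..n} \<times> cG C n"
  "osrc (Gamma C) n p = fst p"
  "otgt (Gamma C) n p = mult (BijGroup {..n}) (fst p) (pinv n (cact C n (snd p)))"
  "ocmp (Gamma C) n q p = (fst p, cmul C n (snd q) (snd p))"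
  "oid (Gamma C) n \<sigma> = (\<sigma>, cone C n)"
  "ofaceO (Gamma C) n j \<sigma> = sym_face n j \<sigma>"
  "ofaceM (Gamma C) n j p = (sym_face n j (fst p),
                  cinv C (n - 1) (cd C n (pinv n (fst p) j) (cinv C n (snd p))))"
  "ocircO (Gamma C) n m i \<sigma> \<tau> = opc Sym n m i \<sigma> \<tau>"
  "ocircM (Gamma C) n m i p q = (opc Sym n m i (fst p) (fst q),
                  cinv C (n + m) (opc C n m (pinv n (fst p) i) (cinv C n (snd p)) (cinv C m (snd q))))"
  by (simp_all add: Gamma_def)

lemma tgt_Bij: "\<sigma> \<in> Bij {..n} \<Longrightarrow> g \<in> cG C n \<Longrightarrow> mult (BijGroup {..n}) \<sigma> (pinv n (cact C n g)) \<in> Bij {..n}"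
  by (simp add: bmul_Bij pinv_Bij pi_Bij)

lemma G_groupoid: "is_groupoid (Gamma C) n"
  unfolding is_groupoid_def Gam
proof (intro conjI ballI impI)
  fix f assume f: "f \<in> Bij {..n} \<times> cG C n"
  then show "fst f \<in> Bij {..n}" by auto
  show "mult (BijGroup {..n}) (fst f) (pinv n (cact C n (snd f))) \<in> Bij {..n}" using f tgt_Bij by auto
next
  fix x assume x: "x \<in> Bij {..n}"
  show "(x, cone C n) \<in> Bij {..n} \<times> cG C n" using x one_cl by simp
  show "fst (x, cone C n) = x" by simp
  show "mult (BijGroup {..n}) (fst (x, cone C n)) (pinv n (cact C n (snd (x, cone C n)))) = x"
    using x by (simp add: pi_one pinv_one bmul_one_r)
next
  fix f g assume f: "f \<in> Bij {..n} \<times> cG C n" and g: "g \<in> Bij {..n} \<times> cG C n"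
    and fg: "mult (BijGroup {..n}) (fst f) (pinv n (cact C n (snd f))) = fst g"
  show "(fst f, cmul C n (snd g) (snd f)) \<in> Bij {..n} \<times> cG C n" using f g mul_cl by auto
  show "fst (fst f, cmul C n (snd g) (snd f)) = fst f" by simp
  show "mult (BijGroup {..n}) (fst (fst f, cmul C n (snd g) (snd f))) (pinv n (cact C n (snd (fst f, cmul C n (snd g) (snd f))))) =
    mult (BijGroup {..n}) (fst g) (pinv n (cact C n (snd g)))"
  proof -
    have s: "fst f \<in> Bij {..n}" "snd f \<in> cG C n" "snd g \<in> cG C n" using f g by auto
    show ?thesis
      using s by (simp add: fg[symmetric] pi_mul pinv_mul pi_Bij pinv_Bij bmul_assoc)
  qed
next
  fix f g h assume f: "f \<in> Bij {..n} \<times> cG C n" and g: "g \<in> Bij {..n} \<times> cG C n" and h: "h \<in> Bij {..n} \<times> cG C n"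
  show "(fst (fst f, cmul C n (snd g) (snd f)), cmul C n (snd h) (snd (fst f, cmul C n (snd g) (snd f)))) =
        (fst f, cmul C n (snd (fst g, cmul C n (snd h) (snd g))) (snd f))"
    using f g h mul_assoc[of "snd h" n "snd g" "snd f"] by (auto simp: mem_Times_iff)
next
  fix f assume f: "f \<in> Bij {..n} \<times> cG C n"
  show "(fst (fst f, cone C n), cmul C n (snd f) (snd (fst f, cone C n))) = f"
    using f by (simp add: r_one' mem_Times_iff)
  show "(fst f, cmul C n (snd (mult (BijGroup {..n}) (fst f) (pinv n (cact C n (snd f))), cone C n)) (snd f)) = f"
    using f by (simp add: l_one' mem_Times_iff)
next
  fix f assume f: "f \<in> Bij {..n} \<times> cG C n"
  define g where "g = (mult (BijGroup {..n}) (fst f) (pinv n (cact C n (snd f))), cinv C n (snd f))"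
  have s: "fst f \<in> Bij {..n}" "snd f \<in> cG C n" using f by auto
  show "\<exists>g\<in>Bij {..n} \<times> cG C n.
          fst g = mult (BijGroup {..n}) (fst f) (pinv n (cact C n (snd f))) \<and>
          mult (BijGroup {..n}) (fst g) (pinv n (cact C n (snd g))) = fst f \<and>
          (fst f, cmul C n (snd g) (snd f)) = (fst f, cone C n) \<and>
          (fst g, cmul C n (snd f) (snd g)) = (mult (BijGroup {..n}) (fst f) (pinv n (cact C n (snd f))), cone C n)"
  proof (rule bexI[of _ g], intro conjI)
    show "g \<in> Bij {..n} \<times> cG C n" unfolding g_def using s tgt_Bij inv_cl by auto
    show "fst g = mult (BijGroup {..n}) (fst f) (pinv n (cact C n (snd f)))" unfolding g_def by simp
    show "mult (BijGroup {..n}) (fst g) (pinv n (cact C n (snd g))) = fst f"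
      unfolding g_def using s by (simp add: pi_inv_app bmul_assoc pinv_Bij pi_Bij bmul_pinv_l bmul_one_r)
    show "(fst f, cmul C n (snd g) (snd f)) = (fst f, cone C n)" unfolding g_def using s by (simp add: l_inv')
    show "(fst g, cmul C n (snd f) (snd g)) = (mult (BijGroup {..n}) (fst f) (pinv n (cact C n (snd f))), cone C n)"
      unfolding g_def using s by (simp add: r_inv')
  qed
qed

lemma FF_tgt: "\<sigma> \<in> Bij {..Suc k} \<Longrightarrow> g \<in> cG C (Suc k) \<Longrightarrow> j \<le> Suc k \<Longrightarrow>
  mult (BijGroup {..k}) (sym_face (Suc k) j \<sigma>)
     (pinv k (cact C k (cinv C k (cd C (Suc k) (pinv (Suc k) \<sigma> j) (cinv C (Suc k) g))))) =
  sym_face (Suc k) j (mult (BijGroup {..Suc k}) \<sigma> (pinv (Suc k) (cact C (Suc k) g)))"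
proof -
  assume h: "\<sigma> \<in> Bij {..Suc k}" "g \<in> cG C (Suc k)" "j \<le> Suc k"
  have q: "pinv (Suc k) \<sigma> j \<le> Suc k" using h pinv_le by blast
  have X: "cd C (Suc k) (pinv (Suc k) \<sigma> j) (cinv C (Suc k) g) \<in> cG C k" using h q by (simp add: d_cl inv_cl)
  have "pinv k (cact C k (cinv C k (cd C (Suc k) (pinv (Suc k) \<sigma> j) (cinv C (Suc k) g)))) =
     sym_face (Suc k) (pinv (Suc k) \<sigma> j) (pinv (Suc k) (cact C (Suc k) g))"
    using h q X by (simp add: pi_d inv_cl pi_inv pinv_pinv faceS_Bij pinv_Bij pi_Bij)
  then show ?thesis using h by (simp add: faceS_mul pinv_Bij pi_Bij)
qed

lemma FF_cmp: "\<sigma> \<in> Bij {..Suc k} \<Longrightarrow> g \<in> cG C (Suc k) \<Longrightarrow> g' \<in> cG C (Suc k) \<Longrightarrow> j \<le> Suc k \<Longrightarrow>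
  cinv C k (cd C (Suc k) (pinv (Suc k) \<sigma> j) (cinv C (Suc k) (cmul C (Suc k) g' g))) =
  cmul C k (cinv C k (cd C (Suc k) (pinv (Suc k) (mult (BijGroup {..Suc k}) \<sigma> (pinv (Suc k) (cact C (Suc k) g))) j) (cinv C (Suc k) g')))
           (cinv C k (cd C (Suc k) (pinv (Suc k) \<sigma> j) (cinv C (Suc k) g)))"
proof -
  assume h: "\<sigma> \<in> Bij {..Suc k}" "g \<in> cG C (Suc k)" "g' \<in> cG C (Suc k)" "j \<le> Suc k"
  define q where "q = pinv (Suc k) \<sigma> j"
  have q: "q \<le> Suc k" unfolding q_def using h pinv_le by blast
  have q2: "pinv (Suc k) (mult (BijGroup {..Suc k}) \<sigma> (pinv (Suc k) (cact C (Suc k) g))) j = cact C (Suc k) g q"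
    unfolding q_def using h by (simp add: pinv_mul pinv_Bij pi_Bij pinv_pinv bmul_app)
  have q3: "cact C (Suc k) (cinv C (Suc k) (cinv C (Suc k) g)) q = cact C (Suc k) g q" using h by (simp add: inv_inv)
  have gq: "cact C (Suc k) g q \<le> Suc k" using h q Bij_le pi_Bij by blast
  have "cd C (Suc k) q (cinv C (Suc k) (cmul C (Suc k) g' g)) =
     cmul C k (cd C (Suc k) q (cinv C (Suc k) g)) (cd C (Suc k) (cact C (Suc k) g q) (cinv C (Suc k) g'))"
    using h q d_mul[OF q inv_cl[OF h(2)] inv_cl[OF h(3)]] by (simp add: inv_mul q3)
  then show ?thesis unfolding q2 q_def[symmetric]
    using h q gq by (simp add: inv_mul d_cl inv_cl)
qed

lemma FF_id: "q \<le> Suc k \<Longrightarrow> cinv C k (cd C (Suc k) q (cinv C (Suc k) (cone C (Suc k)))) = cone C k"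
  by (simp add: inv_one d_one)

lemma G_face_functor: "j \<le> Suc k \<Longrightarrow> face_functor (Gamma C) (Suc k) j"
  unfolding face_functor_def Gam
  by (auto simp: FF_tgt FF_cmp FF_id faceS_Bij d_cl inv_cl pinv_le)

lemma G_dd_obj: "2 \<le> n \<Longrightarrow> i < j \<Longrightarrow> j \<le> n \<Longrightarrow> x \<in> Bij {..n} \<Longrightarrow>
  sym_face (n - 1) i (sym_face n j x) = sym_face (n - 1) (j - 1) (sym_face n i x)"
proof -
  assume h: "2 \<le> n" "i < j" "j \<le> n" "x \<in> Bij {..n}"
  obtain k where k: "n = Suc (Suc k)" using h(1) by (metis add_2_eq_Suc le_Suc_ex)
  show ?thesis using faceS_dd[of x k i j] h k by simp
qed

lemma G_dd_mor: "2 \<le> n \<Longrightarrow> i < j \<Longrightarrow> j \<le> n \<Longrightarrow> \<sigma> \<in> Bij {..n} \<Longrightarrow> g \<in> cG C n \<Longrightarrow>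
  ofaceM (Gamma C) (n - 1) i (ofaceM (Gamma C) n j (\<sigma>, g)) = ofaceM (Gamma C) (n - 1) (j - 1) (ofaceM (Gamma C) n i (\<sigma>, g))"
proof -
  assume h: "2 \<le> n" "i < j" "j \<le> n" "\<sigma> \<in> Bij {..n}" "g \<in> cG C n"
  obtain k where k: "n = Suc (Suc k)" using h(1) by (metis add_2_eq_Suc le_Suc_ex)
  have s: "\<sigma> \<in> Bij {..Suc (Suc k)}" "g \<in> cG C (Suc (Suc k))" "i \<le> Suc (Suc k)" "j \<le> Suc (Suc k)"
    using h k by auto
  define p where "p = pinv (Suc (Suc k)) \<sigma> i"
  define q where "q = pinv (Suc (Suc k)) \<sigma> j"
  have pq: "p \<le> Suc (Suc k)" "q \<le> Suc (Suc k)" unfolding p_def q_def using s pinv_le by auto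
  have sp: "\<sigma> p = i" "\<sigma> q = j" unfolding p_def q_def using app_pinv[OF s(1) s(3)] app_pinv[OF s(1) s(4)] by auto
  have ne: "p \<noteq> q" using sp h(2) by auto
  have e1: "pinv (Suc k) (sym_face (Suc (Suc k)) j \<sigma>) i = (if p < q then p else p - 1)"
    using E4[OF s(1) s(3) s(4)] h(2) unfolding p_def q_def by simp
  have e2: "pinv (Suc k) (sym_face (Suc (Suc k)) i \<sigma>) (j - 1) = (if q < p then q else q - 1)"
    using E4[OF s(1) s(4) s(3)] h(2) unfolding p_def q_def by simp
  define x where "x = cinv C (Suc (Suc k)) g"
  have x: "x \<in> cG C (Suc (Suc k))" unfolding x_def using s inv_cl by blast
  have "cd C (Suc k) (if p < q then p else p - 1) (cd C (Suc (Suc k)) q x) =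
        cd C (Suc k) (if q < p then q else q - 1) (cd C (Suc (Suc k)) p x)"
  proof (cases "p < q")
    case True then show ?thesis using dd[OF True pq(2) x] by simp
  next
    case False
    then have "q < p" using ne by simp
    then show ?thesis using dd[OF \<open>q < p\<close> pq(1) x] False by simp
  qed
  then have morpart: "cinv C k (cd C (Suc k) (pinv (Suc k) (sym_face (Suc (Suc k)) j \<sigma>) i)
      (cinv C (Suc k) (cinv C (Suc k) (cd C (Suc (Suc k)) q x)))) =
    cinv C k (cd C (Suc k) (pinv (Suc k) (sym_face (Suc (Suc k)) i \<sigma>) (j - 1))
      (cinv C (Suc k) (cinv C (Suc k) (cd C (Suc (Suc k)) p x))))"
    unfolding e1 e2 using x pq by (simp add: inv_inv d_cl)
  have objpart: "sym_face (Suc k) i (sym_face (Suc (Suc k)) j \<sigma>) = sym_face (Suc k) (j - 1) (sym_face (Suc (Suc k)) i \<sigma>)"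
    using faceS_dd[OF s(1) h(2) s(4)] .
  show ?thesis unfolding Gam k using objpart morpart
    by (simp add: p_def q_def x_def)
qed

lemma CF_tgt: "\<sigma> \<in> Bij {..n} \<Longrightarrow> \<tau> \<in> Bij {..m} \<Longrightarrow> f \<in> cG C n \<Longrightarrow> g \<in> cG C m \<Longrightarrow> i \<le> n \<Longrightarrow>
  mult (BijGroup {..n + m}) (opc Sym n m i \<sigma> \<tau>)
    (pinv (n + m) (cact C (n + m) (cinv C (n + m) (opc C n m (pinv n \<sigma> i) (cinv C n f) (cinv C m g))))) =
  opc Sym n m i (mult (BijGroup {..n}) \<sigma> (pinv n (cact C n f))) (mult (BijGroup {..m}) \<tau> (pinv m (cact C m g)))"
proof -
  assume h: "\<sigma> \<in> Bij {..n}" "\<tau> \<in> Bij {..m}" "f \<in> cG C n" "g \<in> cG C m" "i \<le> n"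
  have a: "pinv n \<sigma> i \<le> n" using h pinv_le by blast
  have X: "opc C n m (pinv n \<sigma> i) (cinv C n f) (cinv C m g) \<in> cG C (n + m)" using h a by (simp add: opc_cl inv_cl)
  have "pinv (n + m) (cact C (n + m) (cinv C (n + m) (opc C n m (pinv n \<sigma> i) (cinv C n f) (cinv C m g)))) =
     opc Sym n m (pinv n \<sigma> i) (pinv n (cact C n f)) (pinv m (cact C m g))"
    using h a X by (simp add: pi_inv pinv_pinv pi_Bij pi_opc inv_cl opcS_Bij pinv_Bij)
  then show ?thesis using h by (simp add: opcS_funct pinv_Bij pi_Bij)
qed

lemma CF_cmp: "\<sigma> \<in> Bij {..n} \<Longrightarrow> x \<in> cG C n \<Longrightarrow> x' \<in> cG C n \<Longrightarrow> y \<in> cG C m \<Longrightarrow> y' \<in> cG C m \<Longrightarrow> i \<le> n \<Longrightarrow>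
  cinv C (n + m) (opc C n m (pinv n \<sigma> i) (cinv C n (cmul C n x' x)) (cinv C m (cmul C m y' y))) =
  cmul C (n + m) (cinv C (n + m) (opc C n m (pinv n (mult (BijGroup {..n}) \<sigma> (pinv n (cact C n x))) i) (cinv C n x') (cinv C m y')))
     (cinv C (n + m) (opc C n m (pinv n \<sigma> i) (cinv C n x) (cinv C m y)))"
proof -
  assume h: "\<sigma> \<in> Bij {..n}" "x \<in> cG C n" "x' \<in> cG C n" "y \<in> cG C m" "y' \<in> cG C m" "i \<le> n"
  define a where "a = pinv n \<sigma> i"
  have a: "a \<le> n" unfolding a_def using h pinv_le by blast
  have q2: "pinv n (mult (BijGroup {..n}) \<sigma> (pinv n (cact C n x))) i = cact C n x a"
    unfolding a_def using h by (simp add: pinv_mul pinv_Bij pi_Bij pinv_pinv bmul_app)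
  have q3: "cact C n (cinv C n (cinv C n x)) a = cact C n x a" using h by (simp add: inv_inv)
  have xa: "cact C n x a \<le> n" using h a Bij_le pi_Bij by blast
  have "opc C n m a (cinv C n (cmul C n x' x)) (cinv C m (cmul C m y' y)) =
     cmul C (n + m) (opc C n m a (cinv C n x) (cinv C m y)) (opc C n m (cact C n x a) (cinv C n x') (cinv C m y'))"
    using h a opc_funct[OF inv_cl[OF h(2)] inv_cl[OF h(3)] inv_cl[OF h(4)] inv_cl[OF h(5)] a] by (simp add: inv_mul q3)
  then show ?thesis unfolding q2 a_def[symmetric]
    using h a xa by (simp add: inv_mul opc_cl inv_cl)
qed

lemma CF_id: "a \<le> n \<Longrightarrow> cinv C (n + m) (opc C n m a (cinv C n (cone C n)) (cinv C m (cone C m))) = cone C (n + m)"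
proof -
  assume a: "a \<le> n"
  have "boxp C a m (n - a) (cone C m) = cone C (n + m)" using a by (intro boxp_one) auto
  then show ?thesis using a by (simp add: opc_def inv_one spow_one l_one' one_cl)
qed

lemma G_circ_functor: "i \<le> n \<Longrightarrow> circ_functor (Gamma C) n m i"
  unfolding circ_functor_def Gam
  by (auto simp: CF_tgt CF_cmp CF_id opcS_Bij opc_cl inv_cl pinv_le)

lemma G_unit: "\<exists>e \<in> oObj (Gamma C) 0.
       (\<forall>m. \<forall>y \<in> oObj (Gamma C) m. ocircO (Gamma C) 0 m 0 e y = y) \<and>
       (\<forall>m. \<forall>g \<in> oMor (Gamma C) m. ocircM (Gamma C) 0 m 0 (oid (Gamma C) 0 e) g = g) \<and>
       (\<forall>n i. \<forall>x \<in> oObj (Gamma C) n. i \<le> n \<longrightarrow> ocircO (Gamma C) n 0 i x e = x) \<and>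
       (\<forall>n i. \<forall>f \<in> oMor (Gamma C) n. i \<le> n \<longrightarrow> ocircM (Gamma C) n 0 i f (oid (Gamma C) 0 e) = f)"
proof -
  define e where "e = one (BijGroup {..0::nat})"
  have eB: "e \<in> Bij {..0}" unfolding e_def by (rule bone_Bij)
  have pe: "pinv 0 e 0 = 0" using pinv_le[OF eB, of 0] by simp
  have uL: "\<And>m \<tau>. \<tau> \<in> Bij {..m} \<Longrightarrow> opc Sym 0 m 0 e \<tau> = \<tau>" unfolding e_def by (rule opcS_unitL)
  have uR: "\<And>n i \<sigma>. \<sigma> \<in> Bij {..n} \<Longrightarrow> i \<le> n \<Longrightarrow> opc Sym n 0 i \<sigma> e = \<sigma>" unfolding e_def by (rule opcS_unitR)
  show ?thesis unfolding Gam
    by (rule bexI[OF _ eB]) (auto simp: uL uR pe inv_one opc_unitL opc_unitR inv_cl inv_inv pinv_le)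
qed

lemma G_assoc_obj: "\<sigma> \<in> Bij {..l} \<Longrightarrow> \<tau> \<in> Bij {..m} \<Longrightarrow> \<rho> \<in> Bij {..n} \<Longrightarrow> i \<le> l \<Longrightarrow> j \<le> m \<Longrightarrow>
  ocircO (Gamma C) (l + m) n (i + j) (ocircO (Gamma C) l m i \<sigma> \<tau>) \<rho> = ocircO (Gamma C) l (m + n) i \<sigma> (ocircO (Gamma C) m n j \<tau> \<rho>)"
  unfolding Gam by (rule opcS_assoc)

lemma G_assoc_mor: "\<sigma> \<in> Bij {..l} \<Longrightarrow> \<tau> \<in> Bij {..m} \<Longrightarrow> \<rho> \<in> Bij {..n} \<Longrightarrow>
  f \<in> cG C l \<Longrightarrow> g \<in> cG C m \<Longrightarrow> h \<in> cG C n \<Longrightarrow> i \<le> l \<Longrightarrow> j \<le> m \<Longrightarrow>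
  ocircM (Gamma C) (l + m) n (i + j) (ocircM (Gamma C) l m i (\<sigma>, f) (\<tau>, g)) (\<rho>, h) =
  ocircM (Gamma C) l (m + n) i (\<sigma>, f) (ocircM (Gamma C) m n j (\<tau>, g) (\<rho>, h))"
proof -
  assume A: "\<sigma> \<in> Bij {..l}" "\<tau> \<in> Bij {..m}" "\<rho> \<in> Bij {..n}" "f \<in> cG C l" "g \<in> cG C m" "h \<in> cG C n" "i \<le> l" "j \<le> m"
  define a where "a = pinv l \<sigma> i"
  define b where "b = pinv m \<tau> j"
  have ab: "a \<le> l" "b \<le> m" unfolding a_def b_def using A pinv_le by auto
  have F: "cinv C l f \<in> cG C l" "cinv C m g \<in> cG C m" "cinv C n h \<in> cG C n" using A inv_cl by auto
  have e1: "pinv (l + m) (opc Sym l m i \<sigma> \<tau>) (i + j) = a + b" unfolding a_def b_def using E1 A by blast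
  have O1: "opc C l m a (cinv C l f) (cinv C m g) \<in> cG C (l + m)" using opc_cl ab F by blast
  have O2: "opc C m n b (cinv C m g) (cinv C n h) \<in> cG C (m + n)" using opc_cl ab F by blast
  have key: "cinv C (l + m + n) (opc C (l + m) n (a + b) (opc C l m a (cinv C l f) (cinv C m g)) (cinv C n h)) =
    cinv C (l + (m + n)) (opc C l (m + n) a (cinv C l f) (opc C m n b (cinv C m g) (cinv C n h)))"
    using opc_assoc[OF F ab] by (simp add: add.assoc)
  show ?thesis unfolding Gam fst_conv snd_conv e1 a_def[symmetric] b_def[symmetric] inv_inv[OF O1] inv_inv[OF O2]
    using opcS_assoc[OF A(1-3) A(7-8)] key by simp
qed

lemma G_comm_obj: "\<sigma> \<in> Bij {..l} \<Longrightarrow> \<tau> \<in> Bij {..m} \<Longrightarrow> \<rho> \<in> Bij {..n} \<Longrightarrow> i < k \<Longrightarrow> k \<le> l \<Longrightarrow>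
  ocircO (Gamma C) (l + m) n (k + m) (ocircO (Gamma C) l m i \<sigma> \<tau>) \<rho> = ocircO (Gamma C) (l + n) m i (ocircO (Gamma C) l n k \<sigma> \<rho>) \<tau>"
  unfolding Gam by (rule opcS_comm)

lemma G_comm_mor: "\<sigma> \<in> Bij {..l} \<Longrightarrow> \<tau> \<in> Bij {..m} \<Longrightarrow> \<rho> \<in> Bij {..n} \<Longrightarrow>
  f \<in> cG C l \<Longrightarrow> g \<in> cG C m \<Longrightarrow> h \<in> cG C n \<Longrightarrow> i < k \<Longrightarrow> k \<le> l \<Longrightarrow>
  ocircM (Gamma C) (l + m) n (k + m) (ocircM (Gamma C) l m i (\<sigma>, f) (\<tau>, g)) (\<rho>, h) =
  ocircM (Gamma C) (l + n) m i (ocircM (Gamma C) l n k (\<sigma>, f) (\<rho>, h)) (\<tau>, g)"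
proof -
  assume A: "\<sigma> \<in> Bij {..l}" "\<tau> \<in> Bij {..m}" "\<rho> \<in> Bij {..n}" "f \<in> cG C l" "g \<in> cG C m" "h \<in> cG C n" "i < k" "k \<le> l"
  define a where "a = pinv l \<sigma> i"
  define q where "q = pinv l \<sigma> k"
  have aq: "a \<le> l" "q \<le> l" unfolding a_def q_def using A pinv_le by auto
  have sa: "\<sigma> a = i" "\<sigma> q = k" unfolding a_def q_def using A app_pinv by auto
  have ne: "a \<noteq> q" using sa A(7) by auto
  have F: "cinv C l f \<in> cG C l" "cinv C m g \<in> cG C m" "cinv C n h \<in> cG C n" using A inv_cl by auto
  have e2: "pinv (l + m) (opc Sym l m i \<sigma> \<tau>) (k + m) = (if q < a then q else q + m)"
    unfolding a_def q_def using E2 A by blast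
  have e3: "pinv (l + n) (opc Sym l n k \<sigma> \<rho>) i = (if a < q then a else a + n)"
    unfolding a_def q_def using E3 A by blast
  have O1: "opc C l m a (cinv C l f) (cinv C m g) \<in> cG C (l + m)" using opc_cl aq F by blast
  have O2: "opc C l n q (cinv C l f) (cinv C n h) \<in> cG C (l + n)" using opc_cl aq F by blast
  have dim: "l + n + m = l + m + n" by simp
  have key: "opc C (l + m) n (if q < a then q else q + m) (opc C l m a (cinv C l f) (cinv C m g)) (cinv C n h) =
    opc C (l + n) m (if a < q then a else a + n) (opc C l n q (cinv C l f) (cinv C n h)) (cinv C m g)"
  proof (cases "a < q")
    case True then show ?thesis using opc_comm[OF F(1) F(2) F(3) True aq(2)] by simp
  next
    case False
    then have "q < a" using ne by simp
    then show ?thesis using opc_comm[OF F(1) F(3) F(2) \<open>q < a\<close> aq(1)] False by simp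
  qed
  show ?thesis unfolding Gam fst_conv snd_conv e2 e3 a_def[symmetric] q_def[symmetric] inv_inv[OF O1] inv_inv[OF O2] dim
    using opcS_comm[OF A(1-3) A(7-8)] key by simp
qed

lemma G_f1_obj: "\<sigma> \<in> Bij {..l} \<Longrightarrow> \<tau> \<in> Bij {..m} \<Longrightarrow> 1 \<le> m \<Longrightarrow> i \<le> l \<Longrightarrow> j \<le> m \<Longrightarrow>
  ofaceO (Gamma C) (l + m) (i + j) (ocircO (Gamma C) l m i \<sigma> \<tau>) = ocircO (Gamma C) l (m - 1) i \<sigma> (ofaceO (Gamma C) m j \<tau>)"
proof -
  assume A: "\<sigma> \<in> Bij {..l}" "\<tau> \<in> Bij {..m}" "1 \<le> m" "i \<le> l" "j \<le> m"
  obtain m' where m: "m = Suc m'" using A(3) by (cases m) auto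
  show ?thesis unfolding Gam m using opcS_face_in[of \<sigma> l \<tau> m' i j] A m by simp
qed

lemma G_f1_mor: "\<sigma> \<in> Bij {..l} \<Longrightarrow> \<tau> \<in> Bij {..m} \<Longrightarrow> f \<in> cG C l \<Longrightarrow> g \<in> cG C m \<Longrightarrow>
  1 \<le> m \<Longrightarrow> i \<le> l \<Longrightarrow> j \<le> m \<Longrightarrow>
  ofaceM (Gamma C) (l + m) (i + j) (ocircM (Gamma C) l m i (\<sigma>, f) (\<tau>, g)) =
  ocircM (Gamma C) l (m - 1) i (\<sigma>, f) (ofaceM (Gamma C) m j (\<tau>, g))"
proof -
  assume A: "\<sigma> \<in> Bij {..l}" "\<tau> \<in> Bij {..m}" "f \<in> cG C l" "g \<in> cG C m" "1 \<le> m" "i \<le> l" "j \<le> m"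
  obtain m' where m: "m = Suc m'" using A(5) by (cases m) auto
  define a where "a = pinv l \<sigma> i"
  define b where "b = pinv m \<tau> j"
  have ab: "a \<le> l" "b \<le> Suc m'" unfolding a_def b_def using A pinv_le m by auto
  have F: "cinv C l f \<in> cG C l" "cinv C (Suc m') g \<in> cG C (Suc m')" using A inv_cl m by auto
  have e1: "pinv (l + m) (opc Sym l m i \<sigma> \<tau>) (i + j) = a + b" unfolding a_def b_def using E1 A by blast
  have O1: "opc C l (Suc m') a (cinv C l f) (cinv C (Suc m') g) \<in> cG C (l + Suc m')" using opc_cl ab F by blast
  have D: "cd C (Suc m') b (cinv C (Suc m') g) \<in> cG C m'" using d_cl ab F by blast
  have obj: "sym_face (l + m) (i + j) (opc Sym l m i \<sigma> \<tau>) = opc Sym l m' i \<sigma> (sym_face m j \<tau>)"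
    using opcS_face_in[of \<sigma> l \<tau> m' i j] A m by simp
  have key: "cd C (l + Suc m') (a + b) (opc C l (Suc m') a (cinv C l f) (cinv C (Suc m') g)) =
     opc C l m' a (cinv C l f) (cd C (Suc m') b (cinv C (Suc m') g))"
    by (rule face_opc_in[OF F ab])
  show ?thesis unfolding Gam fst_conv snd_conv e1 a_def[symmetric] b_def[symmetric] obj
    using key O1 D m by (simp add: inv_inv)
qed

lemma G_f2_obj: "\<sigma> \<in> Bij {..l} \<Longrightarrow> \<rho> \<in> Bij {..n} \<Longrightarrow> i < k \<Longrightarrow> k \<le> l \<Longrightarrow>
  ofaceO (Gamma C) (l + n) i (ocircO (Gamma C) l n k \<sigma> \<rho>) = ocircO (Gamma C) (l - 1) n (k - 1) (ofaceO (Gamma C) l i \<sigma>) \<rho>"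
proof -
  assume A: "\<sigma> \<in> Bij {..l}" "\<rho> \<in> Bij {..n}" "i < k" "k \<le> l"
  obtain l' where l: "l = Suc l'" using A by (cases l) auto
  obtain b where k: "k = Suc b" using A by (cases k) auto
  show ?thesis unfolding Gam l k using opcS_face_lo[of \<sigma> l' \<rho> n i b] A l k by simp
qed

lemma G_f2_mor: "\<sigma> \<in> Bij {..l} \<Longrightarrow> \<rho> \<in> Bij {..n} \<Longrightarrow> f \<in> cG C l \<Longrightarrow> h \<in> cG C n \<Longrightarrow> i < k \<Longrightarrow> k \<le> l \<Longrightarrow>
  ofaceM (Gamma C) (l + n) i (ocircM (Gamma C) l n k (\<sigma>, f) (\<rho>, h)) =
  ocircM (Gamma C) (l - 1) n (k - 1) (ofaceM (Gamma C) l i (\<sigma>, f)) (\<rho>, h)"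
proof -
  assume A: "\<sigma> \<in> Bij {..l}" "\<rho> \<in> Bij {..n}" "f \<in> cG C l" "h \<in> cG C n" "i < k" "k \<le> l"
  obtain l' where l: "l = Suc l'" using A by (cases l) auto
  define a where "a = pinv l \<sigma> i"
  define q where "q = pinv l \<sigma> k"
  have aq: "a \<le> Suc l'" "q \<le> Suc l'" unfolding a_def q_def using A pinv_le l by auto
  have sa: "\<sigma> a = i" "\<sigma> q = k" unfolding a_def q_def using A app_pinv by auto
  have ne: "a \<noteq> q" using sa A(5) by auto
  have F: "cinv C (Suc l') f \<in> cG C (Suc l')" "cinv C n h \<in> cG C n" using A inv_cl l by auto
  have e3: "pinv (l + n) (opc Sym l n k \<sigma> \<rho>) i = (if a < q then a else a + n)"
    unfolding a_def q_def using E3 A by blast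
  have e4: "pinv (l - 1) (sym_face l i \<sigma>) (k - 1) = (if q < a then q else q - 1)"
    using E4[of \<sigma> l' k i] A l unfolding a_def q_def by simp
  have O1: "opc C (Suc l') n q (cinv C (Suc l') f) (cinv C n h) \<in> cG C (Suc l' + n)" using opc_cl aq F by blast
  have D: "cd C (Suc l') a (cinv C (Suc l') f) \<in> cG C l'" using d_cl aq F by blast
  have obj: "sym_face (l + n) i (opc Sym l n k \<sigma> \<rho>) = opc Sym l' n (k - 1) (sym_face l i \<sigma>) \<rho>"
    using G_f2_obj[OF A(1) A(2) A(5) A(6)] l unfolding Gam by simp
  have key: "cd C (Suc l' + n) (if a < q then a else a + n) (opc C (Suc l') n q (cinv C (Suc l') f) (cinv C n h)) =
     opc C l' n (if q < a then q else q - 1) (cd C (Suc l') a (cinv C (Suc l') f)) (cinv C n h)"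
  proof (cases "a < q")
    case True
    then obtain b where b: "q = Suc b" by (cases q) auto
    have "a \<le> b" "b \<le> l'" using True b aq by auto
    then show ?thesis using face_opc_lo[OF F(1) F(2) \<open>a \<le> b\<close> \<open>b \<le> l'\<close>] True b by simp
  next
    case False
    then have "q < a" using ne by simp
    then show ?thesis using face_opc_hi[OF F(1) F(2) \<open>q < a\<close> aq(1)] False by simp
  qed
  show ?thesis unfolding Gam fst_conv snd_conv e3 e4 a_def[symmetric] q_def[symmetric] obj
    using key O1 D l by (simp add: inv_inv)
qed

lemma G_f3_obj: "\<sigma> \<in> Bij {..l} \<Longrightarrow> \<tau> \<in> Bij {..m} \<Longrightarrow> i < k \<Longrightarrow> k \<le> l \<Longrightarrow>
  ofaceO (Gamma C) (l + m) (k + m) (ocircO (Gamma C) l m i \<sigma> \<tau>) = ocircO (Gamma C) (l - 1) m i (ofaceO (Gamma C) l k \<sigma>) \<tau>"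
proof -
  assume A: "\<sigma> \<in> Bij {..l}" "\<tau> \<in> Bij {..m}" "i < k" "k \<le> l"
  obtain l' where l: "l = Suc l'" using A by (cases l) auto
  show ?thesis unfolding Gam l using opcS_face_hi[of \<sigma> l' \<tau> m i k] A l by simp
qed

lemma G_f3_mor: "\<sigma> \<in> Bij {..l} \<Longrightarrow> \<tau> \<in> Bij {..m} \<Longrightarrow> f \<in> cG C l \<Longrightarrow> g \<in> cG C m \<Longrightarrow> i < k \<Longrightarrow> k \<le> l \<Longrightarrow>
  ofaceM (Gamma C) (l + m) (k + m) (ocircM (Gamma C) l m i (\<sigma>, f) (\<tau>, g)) =
  ocircM (Gamma C) (l - 1) m i (ofaceM (Gamma C) l k (\<sigma>, f)) (\<tau>, g)"
proof -
  assume A: "\<sigma> \<in> Bij {..l}" "\<tau> \<in> Bij {..m}" "f \<in> cG C l" "g \<in> cG C m" "i < k" "k \<le> l"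
  obtain l' where l: "l = Suc l'" using A by (cases l) auto
  define a where "a = pinv l \<sigma> i"
  define q where "q = pinv l \<sigma> k"
  have aq: "a \<le> Suc l'" "q \<le> Suc l'" unfolding a_def q_def using A pinv_le l by auto
  have sa: "\<sigma> a = i" "\<sigma> q = k" unfolding a_def q_def using A app_pinv by auto
  have ne: "a \<noteq> q" using sa A(5) by auto
  have F: "cinv C (Suc l') f \<in> cG C (Suc l')" "cinv C m g \<in> cG C m" using A inv_cl l by auto
  have e2: "pinv (l + m) (opc Sym l m i \<sigma> \<tau>) (k + m) = (if q < a then q else q + m)"
    unfolding a_def q_def using E2 A by blast
  have e4: "pinv (l - 1) (sym_face l k \<sigma>) i = (if a < q then a else a - 1)"
    using E4[of \<sigma> l' i k] A l unfolding a_def q_def by simp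
  have O1: "opc C (Suc l') m a (cinv C (Suc l') f) (cinv C m g) \<in> cG C (Suc l' + m)" using opc_cl aq F by blast
  have D: "cd C (Suc l') q (cinv C (Suc l') f) \<in> cG C l'" using d_cl aq F by blast
  have obj: "sym_face (l + m) (k + m) (opc Sym l m i \<sigma> \<tau>) = opc Sym l' m i (sym_face l k \<sigma>) \<tau>"
    using G_f3_obj[OF A(1-2) A(5-6)] l unfolding Gam by simp
  have key: "cd C (Suc l' + m) (if q < a then q else q + m) (opc C (Suc l') m a (cinv C (Suc l') f) (cinv C m g)) =
     opc C l' m (if a < q then a else a - 1) (cd C (Suc l') q (cinv C (Suc l') f)) (cinv C m g)"
  proof (cases "q < a")
    case True
    then obtain b where b: "a = Suc b" by (cases a) auto
    have "q \<le> b" "b \<le> l'" using True b aq by auto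
    then show ?thesis using face_opc_lo[OF F(1) F(2) \<open>q \<le> b\<close> \<open>b \<le> l'\<close>] True b by simp
  next
    case False
    then have "a < q" using ne by simp
    then show ?thesis using face_opc_hi[OF F(1) F(2) \<open>a < q\<close> aq(2)] False by simp
  qed
  show ?thesis unfolding Gam fst_conv snd_conv e2 e4 a_def[symmetric] q_def[symmetric] obj
    using key O1 D l by (simp add: inv_inv)
qed


end

theorem theorem3p6:
  fixes C :: "'g csg"
  assumes "operadic_csg C"
  shows "shifted_operad_gpd (Gamma C)"
proof -
  interpret ocsg C by (rule ocsg.intro) (rule assms)
  show ?thesis unfolding shifted_operad_gpd_def
  proof (intro conjI)
    show "\<forall>n. is_groupoid (Gamma C) n" using G_groupoid by blast
    show "\<forall>n j. 1 \<le> n \<longrightarrow> j \<le> n \<longrightarrow> face_functor (Gamma C) n j"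
      using G_face_functor by (metis Suc_pred' less_eq_Suc_le Suc_le_eq One_nat_def)
    show "\<forall>n i j x. 2 \<le> n \<longrightarrow> i < j \<longrightarrow> j \<le> n \<longrightarrow> x \<in> oObj (Gamma C) n \<longrightarrow>
        ofaceO (Gamma C) (n - 1) i (ofaceO (Gamma C) n j x) = ofaceO (Gamma C) (n - 1) (j - 1) (ofaceO (Gamma C) n i x)"
      unfolding Gam using G_dd_obj by blast
    show "\<forall>n i j f. 2 \<le> n \<longrightarrow> i < j \<longrightarrow> j \<le> n \<longrightarrow> f \<in> oMor (Gamma C) n \<longrightarrow>
        ofaceM (Gamma C) (n - 1) i (ofaceM (Gamma C) n j f) = ofaceM (Gamma C) (n - 1) (j - 1) (ofaceM (Gamma C) n i f)"
      unfolding Gam(2) using G_dd_mor by auto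
    show "\<forall>n m i. i \<le> n \<longrightarrow> circ_functor (Gamma C) n m i" using G_circ_functor by blast
    show "\<exists>e \<in> oObj (Gamma C) 0.
       (\<forall>m. \<forall>y \<in> oObj (Gamma C) m. ocircO (Gamma C) 0 m 0 e y = y) \<and>
       (\<forall>m. \<forall>g \<in> oMor (Gamma C) m. ocircM (Gamma C) 0 m 0 (oid (Gamma C) 0 e) g = g) \<and>
       (\<forall>n i. \<forall>x \<in> oObj (Gamma C) n. i \<le> n \<longrightarrow> ocircO (Gamma C) n 0 i x e = x) \<and>
       (\<forall>n i. \<forall>f \<in> oMor (Gamma C) n. i \<le> n \<longrightarrow> ocircM (Gamma C) n 0 i f (oid (Gamma C) 0 e) = f)"
      by (rule G_unit)
    show "\<forall>l m n i j. \<forall>x \<in> oObj (Gamma C) l. \<forall>y \<in> oObj (Gamma C) m. \<forall>z \<in> oObj (Gamma C) n. i \<le> l \<longrightarrow> j \<le> m \<longrightarrow>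
        ocircO (Gamma C) (l + m) n (i + j) (ocircO (Gamma C) l m i x y) z =
        ocircO (Gamma C) l (m + n) i x (ocircO (Gamma C) m n j y z)"
      unfolding Gam(1) using G_assoc_obj by blast
    show "\<forall>l m n i j. \<forall>x \<in> oMor (Gamma C) l. \<forall>y \<in> oMor (Gamma C) m. \<forall>z \<in> oMor (Gamma C) n. i \<le> l \<longrightarrow> j \<le> m \<longrightarrow>
        ocircM (Gamma C) (l + m) n (i + j) (ocircM (Gamma C) l m i x y) z =
        ocircM (Gamma C) l (m + n) i x (ocircM (Gamma C) m n j y z)"
      unfolding Gam(2) using G_assoc_mor by auto
    show "\<forall>l m n i k. \<forall>x \<in> oObj (Gamma C) l. \<forall>y \<in> oObj (Gamma C) m. \<forall>z \<in> oObj (Gamma C) n. i < k \<longrightarrow> k \<le> l \<longrightarrow>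
        ocircO (Gamma C) (l + m) n (k + m) (ocircO (Gamma C) l m i x y) z =
        ocircO (Gamma C) (l + n) m i (ocircO (Gamma C) l n k x z) y"
      unfolding Gam(1) using G_comm_obj by blast
    show "\<forall>l m n i k. \<forall>x \<in> oMor (Gamma C) l. \<forall>y \<in> oMor (Gamma C) m. \<forall>z \<in> oMor (Gamma C) n. i < k \<longrightarrow> k \<le> l \<longrightarrow>
        ocircM (Gamma C) (l + m) n (k + m) (ocircM (Gamma C) l m i x y) z =
        ocircM (Gamma C) (l + n) m i (ocircM (Gamma C) l n k x z) y"
      unfolding Gam(2) using G_comm_mor by auto
    show "\<forall>l m i j. \<forall>x \<in> oObj (Gamma C) l. \<forall>y \<in> oObj (Gamma C) m. 1 \<le> m \<longrightarrow> i \<le> l \<longrightarrow> j \<le> m \<longrightarrow>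
        ofaceO (Gamma C) (l + m) (i + j) (ocircO (Gamma C) l m i x y) = ocircO (Gamma C) l (m - 1) i x (ofaceO (Gamma C) m j y)"
      unfolding Gam(1) using G_f1_obj by blast
    show "\<forall>l m i j. \<forall>x \<in> oMor (Gamma C) l. \<forall>y \<in> oMor (Gamma C) m. 1 \<le> m \<longrightarrow> i \<le> l \<longrightarrow> j \<le> m \<longrightarrow>
        ofaceM (Gamma C) (l + m) (i + j) (ocircM (Gamma C) l m i x y) = ocircM (Gamma C) l (m - 1) i x (ofaceM (Gamma C) m j y)"
      unfolding Gam(2) using G_f1_mor by auto
    show "\<forall>l n i k. \<forall>x \<in> oObj (Gamma C) l. \<forall>z \<in> oObj (Gamma C) n. i < k \<longrightarrow> k \<le> l \<longrightarrow>
        ofaceO (Gamma C) (l + n) i (ocircO (Gamma C) l n k x z) = ocircO (Gamma C) (l - 1) n (k - 1) (ofaceO (Gamma C) l i x) z"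
      unfolding Gam(1) using G_f2_obj by blast
    show "\<forall>l n i k. \<forall>x \<in> oMor (Gamma C) l. \<forall>z \<in> oMor (Gamma C) n. i < k \<longrightarrow> k \<le> l \<longrightarrow>
        ofaceM (Gamma C) (l + n) i (ocircM (Gamma C) l n k x z) = ocircM (Gamma C) (l - 1) n (k - 1) (ofaceM (Gamma C) l i x) z"
      unfolding Gam(2) using G_f2_mor by auto
    show "\<forall>l m i k. \<forall>x \<in> oObj (Gamma C) l. \<forall>y \<in> oObj (Gamma C) m. i < k \<longrightarrow> k \<le> l \<longrightarrow>
        ofaceO (Gamma C) (l + m) (k + m) (ocircO (Gamma C) l m i x y) = ocircO (Gamma C) (l - 1) m i (ofaceO (Gamma C) l k x) y"
      unfolding Gam(1) using G_f3_obj by blast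
    show "\<forall>l m i k. \<forall>x \<in> oMor (Gamma C) l. \<forall>y \<in> oMor (Gamma C) m. i < k \<longrightarrow> k \<le> l \<longrightarrow>
        ofaceM (Gamma C) (l + m) (k + m) (ocircM (Gamma C) l m i x y) = ocircM (Gamma C) (l - 1) m i (ofaceM (Gamma C) l k x) y"
      unfolding Gam(2) using G_f3_mor by auto
  qed
qed

end
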